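(* Let $R$ be a ring with a separated filtration $u:R\to\mathbb{Z}\cup\{\infty\}$ with respect to which $R$ is complete, and let $(\sigma,\delta)$ be a skew derivation on $R$ compatible with $u$. (i) The left $R$-module $R^b[[x;\sigma,\delta]]=\{\sum_{n\ge0}r_nx^n: r_n\in R,\ u(r_n)+\tfrac12n\to\infty\text{ as }n\to\infty\}$ is a ring, with multiplication given by extending the rule $xa=\sigma(a)x+\delta(a)$ ($a\in R$) to a continuous $R$-linear multiplication in a unique way. (ii) Define $f_u:R^b[[x;\sigma,\delta]]\to\tfrac12\mathbb{Z}\cup\{\infty\}$ by $f_u(\sum_{i\ge0}r_ix^i)=\inf_{i\ge0}\{u(r_i)+\tfrac12 i\}$, and identify $R$ with the subring of constant series. Then $f_u$ is a ring filtration with $f_u|_R=u$, $R^b[[x;\sigma,\delta]]$ is complete with respect to $f_u$, and the identity on $\mathrm{gr}_u(R)$ extends to an isomorphism of graded rings $\mathrm{gr}_{f_u}(R^b[[x;\sigma,\delta]])\to(\mathrm{gr}_u(R))[Z]$ mapping (the principal symbol of) $x$ to $Z$.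
   Context: A filtration satisfies $u(0)=\infty$, $u(x+y)\ge\min\{u(x),u(y)\}$, $u(xy)\ge u(x)+u(y)$; separated means $u(x)=\infty\iff x=0$; $\mathrm{gr}_u(R)=\bigoplus_\lambda F_\lambda R/F_{\lambda^+}R$ with $F_\lambda R=\{u\ge\lambda\}$, $F_{\lambda^+}R=\{u>\lambda\}$. A skew derivation is $(\sigma,\delta)$ with $\sigma$ an automorphism and $\delta$ additive with $\delta(ab)=\delta(a)b+\sigma(a)\delta(b)$; it is compatible with $u$ if $\deg_u(\sigma-\mathrm{id})>0$ and $\deg_u(\delta)>0$, where $\deg_u(d)=\inf_{x\ne0}\{u(d(x))-u(x)\}$. *)

theory Defs
  imports Complex_Main "HOL-Algebra.QuotRing" "HOL-Algebra.UnivPoly" "HOL-Library.Extended_Real"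
begin

text \<open>Ring filtration: v(0) = infinity, v(x+y) >= min, v(xy) >= v x + v y; we also
  require v(-x) = v x, so that the sets F_lambda are additive subgroups.\<close>
definition is_filtration :: "('a, 'm) ring_scheme \<Rightarrow> ('a \<Rightarrow> ereal) \<Rightarrow> bool" where
  "is_filtration A v \<longleftrightarrow>
     v \<zero>\<^bsub>A\<^esub> = \<infinity> \<and>
     (\<forall>x\<in>carrier A. \<forall>y\<in>carrier A. min (v x) (v y) \<le> v (x \<oplus>\<^bsub>A\<^esub> y)) \<and>
     (\<forall>x\<in>carrier A. \<forall>y\<in>carrier A. v x + v y \<le> v (x \<otimes>\<^bsub>A\<^esub> y)) \<and>
     (\<forall>x\<in>carrier A. v (\<ominus>\<^bsub>A\<^esub> x) = v x)"

definition separated :: "('a, 'm) ring_scheme \<Rightarrow> ('a \<Rightarrow> ereal) \<Rightarrow> bool" where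
  "separated A v \<longleftrightarrow> (\<forall>x\<in>carrier A. v x = \<infinity> \<longleftrightarrow> x = \<zero>\<^bsub>A\<^esub>)"

definition filt_converges :: "('a, 'm) ring_scheme \<Rightarrow> ('a \<Rightarrow> ereal) \<Rightarrow> (nat \<Rightarrow> 'a) \<Rightarrow> 'a \<Rightarrow> bool" where
  "filt_converges A v s l \<longleftrightarrow> ((\<lambda>n. v (s n \<ominus>\<^bsub>A\<^esub> l)) \<longlonglongrightarrow> \<infinity>)"

definition filt_cauchy :: "('a, 'm) ring_scheme \<Rightarrow> ('a \<Rightarrow> ereal) \<Rightarrow> (nat \<Rightarrow> 'a) \<Rightarrow> bool" where
  "filt_cauchy A v s \<longleftrightarrow>
     (\<forall>M::real. \<exists>N. \<forall>m\<ge>N. \<forall>n\<ge>N. ereal M \<le> v (s m \<ominus>\<^bsub>A\<^esub> s n))"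

definition filt_complete :: "('a, 'm) ring_scheme \<Rightarrow> ('a \<Rightarrow> ereal) \<Rightarrow> bool" where
  "filt_complete A v \<longleftrightarrow>
     (\<forall>s. range s \<subseteq> carrier A \<longrightarrow> filt_cauchy A v s \<longrightarrow>
          (\<exists>l\<in>carrier A. filt_converges A v s l))"

definition Fil :: "('a, 'm) ring_scheme \<Rightarrow> ('a \<Rightarrow> ereal) \<Rightarrow> real \<Rightarrow> 'a set" where
  "Fil A v lam = {x\<in>carrier A. ereal lam \<le> v x}"

definition Fil_plus :: "('a, 'm) ring_scheme \<Rightarrow> ('a \<Rightarrow> ereal) \<Rightarrow> real \<Rightarrow> 'a set" where
  "Fil_plus A v lam = {x\<in>carrier A. ereal lam < v x}"

definition gr_cls :: "('a, 'm) ring_scheme \<Rightarrow> ('a \<Rightarrow> ereal) \<Rightarrow> real \<Rightarrow> 'a \<Rightarrow> 'a set" where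
  "gr_cls A v lam r = (\<lambda>y. r \<oplus>\<^bsub>A\<^esub> y) ` Fil_plus A v lam"

definition gr_rep :: "'a set \<Rightarrow> 'a" where
  "gr_rep S = (SOME r. r \<in> S)"

text \<open>Elements of gr: families (g lambda)_lambda of classes, finitely many nonzero.\<close>
definition gr_supp :: "('a, 'm) ring_scheme \<Rightarrow> ('a \<Rightarrow> ereal) \<Rightarrow> (real \<Rightarrow> 'a set) \<Rightarrow> real set" where
  "gr_supp A v g = {lam. g lam \<noteq> Fil_plus A v lam}"

definition gr :: "('a, 'm) ring_scheme \<Rightarrow> ('a \<Rightarrow> ereal) \<Rightarrow> (real \<Rightarrow> 'a set) ring" where
  "gr A v = \<lparr>
     carrier = {g. (\<forall>lam. \<exists>r\<in>Fil A v lam. g lam = gr_cls A v lam r) \<and> finite (gr_supp A v g)},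
     mult = (\<lambda>g h lam. gr_cls A v lam
              (finsum A (\<lambda>mu. gr_rep (g mu) \<otimes>\<^bsub>A\<^esub> gr_rep (h (lam - mu))) (gr_supp A v g))),
     one = (\<lambda>lam. if lam = 0 then gr_cls A v 0 \<one>\<^bsub>A\<^esub> else Fil_plus A v lam),
     zero = (\<lambda>lam. Fil_plus A v lam),
     add = (\<lambda>g h lam. gr_cls A v lam (gr_rep (g lam) \<oplus>\<^bsub>A\<^esub> gr_rep (h lam))) \<rparr>"

definition gr_sym :: "('a, 'm) ring_scheme \<Rightarrow> ('a \<Rightarrow> ereal) \<Rightarrow> real \<Rightarrow> 'a \<Rightarrow> (real \<Rightarrow> 'a set)" where
  "gr_sym A v lam r = (\<lambda>mu. if mu = lam then gr_cls A v lam r else Fil_plus A v mu)"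

definition gr_hom :: "('a, 'm) ring_scheme \<Rightarrow> ('a \<Rightarrow> ereal) \<Rightarrow> real \<Rightarrow> (real \<Rightarrow> 'a set) set" where
  "gr_hom A v lam = {g\<in>carrier (gr A v). \<forall>mu. mu \<noteq> lam \<longrightarrow> g mu = Fil_plus A v mu}"

text \<open>Homogeneous elements of degree lam of the polynomial ring gr_v(A)[Z], where Z has degree 1/2.\<close>
definition grpoly_hom :: "('a, 'm) ring_scheme \<Rightarrow> ('a \<Rightarrow> ereal) \<Rightarrow> real \<Rightarrow> (nat \<Rightarrow> real \<Rightarrow> 'a set) set" where
  "grpoly_hom A v lam = {p\<in>carrier (UP (gr A v)). \<forall>i. p i \<in> gr_hom A v (lam - real i / 2)}"

definition ring_of :: "'a::ring_1 itself \<Rightarrow> 'a ring" where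
  "ring_of _ = \<lparr> carrier = UNIV, mult = (*), one = 1, zero = 0, add = (+) \<rparr>"

abbreviation RR :: "'a::ring_1 ring" where "RR \<equiv> ring_of TYPE('a)"

definition skew_derivation :: "('a::ring_1 \<Rightarrow> 'a) \<Rightarrow> ('a \<Rightarrow> 'a) \<Rightarrow> bool" where
  "skew_derivation \<sigma> \<delta> \<longleftrightarrow>
     bij \<sigma> \<and> (\<forall>a b. \<sigma> (a + b) = \<sigma> a + \<sigma> b) \<and> (\<forall>a b. \<sigma> (a * b) = \<sigma> a * \<sigma> b) \<and> \<sigma> 1 = 1 \<and>
     (\<forall>a b. \<delta> (a + b) = \<delta> a + \<delta> b) \<and> (\<forall>a b. \<delta> (a * b) = \<delta> a * b + \<sigma> a * \<delta> b)"

definition deg_u :: "('a::ring_1 \<Rightarrow> ereal) \<Rightarrow> ('a \<Rightarrow> 'a) \<Rightarrow> ereal" where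
  "deg_u u d = (INF x\<in>{x. x \<noteq> 0}. u (d x) - u x)"

definition compatible :: "('a::ring_1 \<Rightarrow> ereal) \<Rightarrow> ('a \<Rightarrow> 'a) \<Rightarrow> ('a \<Rightarrow> 'a) \<Rightarrow> bool" where
  "compatible u \<sigma> \<delta> \<longleftrightarrow> deg_u u (\<lambda>x. \<sigma> x - x) > 0 \<and> deg_u u \<delta> > 0"

text \<open>A series sum r_n x^n is represented by its coefficient sequence r.\<close>
definition bseries :: "('a::ring_1 \<Rightarrow> ereal) \<Rightarrow> (nat \<Rightarrow> 'a) set" where
  "bseries u = {r. ((\<lambda>n. u (r n) + ereal (real n / 2)) \<longlonglongrightarrow> \<infinity>)}"

definition f_u :: "('a::ring_1 \<Rightarrow> ereal) \<Rightarrow> (nat \<Rightarrow> 'a) \<Rightarrow> ereal" where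
  "f_u u r = (INF i. u (r i) + ereal (real i / 2))"

definition const_s :: "'a::ring_1 \<Rightarrow> nat \<Rightarrow> 'a" where
  "const_s a = (\<lambda>n. if n = 0 then a else 0)"

definition xpow :: "nat \<Rightarrow> nat \<Rightarrow> 'a::ring_1" where
  "xpow k = (\<lambda>n. if n = k then 1 else 0)"

definition lsmult :: "'a::ring_1 \<Rightarrow> (nat \<Rightarrow> 'a) \<Rightarrow> nat \<Rightarrow> 'a" where
  "lsmult a F = (\<lambda>n. a * F n)"

definition s_add :: "(nat \<Rightarrow> 'a::ring_1) \<Rightarrow> (nat \<Rightarrow> 'a) \<Rightarrow> nat \<Rightarrow> 'a" where
  "s_add F G = (\<lambda>n. F n + G n)"

definition s_conv :: "('a::ring_1 \<Rightarrow> ereal) \<Rightarrow> (nat \<Rightarrow> nat \<Rightarrow> 'a) \<Rightarrow> (nat \<Rightarrow> 'a) \<Rightarrow> bool" where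
  "s_conv u Fs F \<longleftrightarrow> ((\<lambda>k. f_u u (\<lambda>n. Fs k n - F n)) \<longlonglongrightarrow> \<infinity>)"

definition BRing :: "('a::ring_1 \<Rightarrow> ereal) \<Rightarrow> ((nat \<Rightarrow> 'a) \<Rightarrow> (nat \<Rightarrow> 'a) \<Rightarrow> (nat \<Rightarrow> 'a)) \<Rightarrow> (nat \<Rightarrow> 'a) ring" where
  "BRing u mul = \<lparr> carrier = bseries u, mult = mul, one = const_s 1, zero = (\<lambda>n. 0), add = s_add \<rparr>"

definition skew_mult_ok :: "('a::ring_1 \<Rightarrow> ereal) \<Rightarrow> ('a \<Rightarrow> 'a) \<Rightarrow> ('a \<Rightarrow> 'a) \<Rightarrow>
    ((nat \<Rightarrow> 'a) \<Rightarrow> (nat \<Rightarrow> 'a) \<Rightarrow> (nat \<Rightarrow> 'a)) \<Rightarrow> bool" where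
  "skew_mult_ok u \<sigma> \<delta> mul \<longleftrightarrow>
     ring (BRing u mul) \<and>
     (\<forall>a. \<forall>F\<in>bseries u. \<forall>G\<in>bseries u. mul (lsmult a F) G = lsmult a (mul F G)) \<and>
     (\<forall>a. \<forall>F\<in>bseries u. mul (const_s a) F = lsmult a F) \<and>
     (\<forall>a. mul (xpow 1) (const_s a) = s_add (lsmult (\<sigma> a) (xpow 1)) (const_s (\<delta> a))) \<and>
     (\<forall>n. mul (xpow n) (xpow 1) = xpow (Suc n)) \<and>
     (\<forall>Fs Gs F G. (\<forall>k. Fs k \<in> bseries u) \<longrightarrow> (\<forall>k. Gs k \<in> bseries u) \<longrightarrow>
         F \<in> bseries u \<longrightarrow> G \<in> bseries u \<longrightarrow> s_conv u Fs F \<longrightarrow> s_conv u Gs G \<longrightarrow>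
         s_conv u (\<lambda>k. mul (Fs k) (Gs k)) (mul F G))"

definition gr_incl :: "('a::ring_1 \<Rightarrow> ereal) \<Rightarrow> ((nat \<Rightarrow> 'a) \<Rightarrow> (nat \<Rightarrow> 'a) \<Rightarrow> (nat \<Rightarrow> 'a)) \<Rightarrow>
    (real \<Rightarrow> 'a set) \<Rightarrow> (real \<Rightarrow> (nat \<Rightarrow> 'a) set)" where
  "gr_incl u mul g = (\<lambda>lam. gr_cls (BRing u mul) (f_u u) lam (const_s (gr_rep (g lam))))"

end

theory Submission
  imports Defs
begin

locale skctx =
  fixes u :: "'a::ring_1 \<Rightarrow> ereal" and \<sigma> \<delta> :: "'a \<Rightarrow> 'a"
  assumes u0: "u 0 = \<infinity>"
  and uadd: "min (u x) (u y) \<le> u (x + y)"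
  and umul: "u x + u y \<le> u (x * y)"
  and uneg: "u (- x) = u x"
  and uint: "u x = \<infinity> \<or> (\<exists>k::int. u x = ereal (of_int k))"
  and u1: "u 1 = 0"
  and usep: "u x = \<infinity> \<Longrightarrow> x = 0"
  and ucompl: "\<And>s::nat \<Rightarrow> 'a. (\<forall>r::real. \<exists>N. \<forall>m\<ge>N. \<forall>n\<ge>N. ereal r \<le> u (s m - s n)) \<Longrightarrow>
      \<exists>l. \<forall>r::real. \<exists>N. \<forall>n\<ge>N. ereal r \<le> u (s n - l)"
  and sadd: "\<sigma> (x + y) = \<sigma> x + \<sigma> y"
  and smul: "\<sigma> (x * y) = \<sigma> x * \<sigma> y"
  and sone: "\<sigma> 1 = 1"
  and dadd: "\<delta> (x + y) = \<delta> x + \<delta> y"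
  and dmul: "\<delta> (x * y) = \<delta> x * y + \<sigma> x * \<delta> y"
  and sc: "ereal r \<le> u x \<Longrightarrow> ereal (r + 1) \<le> u (\<sigma> x - x)"
  and dc: "ereal r \<le> u x \<Longrightarrow> ereal (r + 1) \<le> u (\<delta> x)"
begin

definition vge :: "'a \<Rightarrow> real \<Rightarrow> bool" where "vge x r \<longleftrightarrow> ereal r \<le> u x"

lemma vge_0[simp]: "vge 0 r" by (simp add: vge_def u0)

lemma vge_add: "vge x r \<Longrightarrow> vge y r \<Longrightarrow> vge (x + y) r"
  unfolding vge_def using uadd[of x y] by (metis min.bounded_iff order_trans)

lemma vge_neg[simp]: "vge (- x) r \<longleftrightarrow> vge x r" by (simp add: vge_def uneg)

lemma vge_diff: "vge x r \<Longrightarrow> vge y r \<Longrightarrow> vge (x - y) r"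
  using vge_add[of x r "-y"] by simp

lemma vge_mono: "vge x r \<Longrightarrow> s \<le> r \<Longrightarrow> vge x s"
  unfolding vge_def by (meson ereal_less_eq(3) order_trans)

lemma vge_mul: "vge x r \<Longrightarrow> vge y s \<Longrightarrow> vge (x * y) (r + s)"
  unfolding vge_def using umul[of x y]
  by (metis add_mono order_trans plus_ereal.simps(1))

lemma vge_sum: "(\<And>i. i \<in> A \<Longrightarrow> vge (f i) r) \<Longrightarrow> vge (sum f A) r"
  by (induction A rule: infinite_finite_induct) (auto intro: vge_add)

lemma vge_zero_iff: "(\<forall>r. vge x r) \<longleftrightarrow> x = 0"
  unfolding vge_def
  apply (rule iffI)
   apply (rule usep, rule ereal_top, blast)
  by (simp add: u0)

lemma vge_ex: "\<exists>r. vge x r"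
  using uint[of x] unfolding vge_def by (metis ereal_less_eq(1) order_refl)

lemma vge_one: "vge 1 0" by (simp add: vge_def u1)

lemma vgt_iff: "ereal r < u x \<longleftrightarrow> vge x (of_int (\<lfloor>r\<rfloor> + 1))"
proof (cases "u x = \<infinity>")
  case True then show ?thesis by (simp add: vge_def)
next
  case False
  then obtain k :: int where k: "u x = ereal (of_int k)" using uint by blast
  have "r < of_int k \<longleftrightarrow> \<lfloor>r\<rfloor> < k" by (simp add: floor_less_iff)
  also have "\<dots> \<longleftrightarrow> of_int (\<lfloor>r\<rfloor> + 1) \<le> (of_int k :: real)"
    by (subst of_int_le_iff) linarith
  finally have "r < of_int k \<longleftrightarrow> of_int (\<lfloor>r\<rfloor> + 1) \<le> (of_int k :: real)" .
  then show ?thesis by (simp add: vge_def k)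
qed

lemma vgt_vge: "vge x (r + 1/2) \<Longrightarrow> ereal r < u x"
  unfolding vge_def by (rule less_le_trans[of _ "ereal (r + 1/2)"]) auto

lemma s0[simp]: "\<sigma> 0 = 0" using sadd[of 0 0] by simp
lemma d0[simp]: "\<delta> 0 = 0" using dadd[of 0 0] by simp
lemma sneg: "\<sigma> (- x) = - \<sigma> x"
proof -
  have "\<sigma> x + \<sigma> (-x) = 0" using sadd[of x "-x"] by simp
  then show ?thesis by (metis neg_eq_iff_add_eq_0)
qed
lemma dneg: "\<delta> (- x) = - \<delta> x"
proof -
  have "\<delta> x + \<delta> (-x) = 0" using dadd[of x "-x"] by simp
  then show ?thesis by (metis neg_eq_iff_add_eq_0)
qed
lemma sdiff: "\<sigma> (x - y) = \<sigma> x - \<sigma> y" using sadd[of x "-y"] sneg by simp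
lemma ddiff: "\<delta> (x - y) = \<delta> x - \<delta> y" using dadd[of x "-y"] dneg by simp
lemma d1[simp]: "\<delta> 1 = 0" using dmul[of 1 1] sone by simp
lemma ssum: "\<sigma> (sum f A) = (\<Sum>i\<in>A. \<sigma> (f i))"
  by (induction A rule: infinite_finite_induct) (auto simp: sadd)
lemma dsum: "\<delta> (sum f A) = (\<Sum>i\<in>A. \<delta> (f i))"
  by (induction A rule: infinite_finite_induct) (auto simp: dadd)

lemma vge_d: "vge x r \<Longrightarrow> vge (\<delta> x) (r + 1)" unfolding vge_def by (rule dc)
lemma vge_d': "vge x r \<Longrightarrow> vge (\<delta> x) r"
  using vge_d[of x r] vge_mono[of "\<delta> x" "r+1" r] by simp
lemma vge_sd: "vge x r \<Longrightarrow> vge (\<sigma> x - x) (r + 1)" unfolding vge_def by (rule sc)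
lemma vge_s: "vge x r \<Longrightarrow> vge (\<sigma> x) r"
proof -
  assume a: "vge x r"
  have "vge (\<sigma> x - x) r" using vge_sd[OF a] vge_mono by force
  from vge_add[OF this a] show ?thesis by simp
qed
lemma vge_spow_diff: "vge x r \<Longrightarrow> vge ((\<sigma>^^i) x - x) (r + 1)"
proof (induction i)
  case 0 then show ?case by simp
next
  case (Suc i)
  have "vge ((\<sigma>^^i) x) r" using Suc vge_add[of "(\<sigma>^^i) x - x" r x] vge_mono[of _ "r+1" r] by force
  then have "vge (\<sigma> ((\<sigma>^^i) x) - (\<sigma>^^i) x) (r+1)" by (rule vge_sd)
  from vge_add[OF this Suc.IH[OF Suc.prems]] show ?case by simp
qed

definition conv :: "(nat \<Rightarrow> 'a) \<Rightarrow> 'a \<Rightarrow> bool" where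
  "conv s l \<longleftrightarrow> (\<forall>r. \<exists>N. \<forall>n\<ge>N. vge (s n - l) r)"

definition tends0 :: "(nat \<Rightarrow> 'a) \<Rightarrow> bool" where
  "tends0 f \<longleftrightarrow> (\<forall>r. \<exists>N. \<forall>n\<ge>N. vge (f n) r)"

lemma conv_unique: "conv s l \<Longrightarrow> conv s l' \<Longrightarrow> l = l'"
proof -
  assume a: "conv s l" "conv s l'"
  have "vge (l' - l) r" for r
  proof -
    obtain N1 where "\<forall>n\<ge>N1. vge (s n - l) r" using a(1) conv_def by blast
    moreover obtain N2 where "\<forall>n\<ge>N2. vge (s n - l') r" using a(2) conv_def by blast
    ultimately have "vge (s (max N1 N2) - l) r" "vge (s (max N1 N2) - l') r" by auto
    from vge_diff[OF this] show ?thesis by simp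
  qed
  then show ?thesis using vge_zero_iff by force
qed

lemma conv_closed: "conv s l \<Longrightarrow> \<forall>n\<ge>N0. vge (s n) r \<Longrightarrow> vge l r"
proof -
  assume a: "conv s l" "\<forall>n\<ge>N0. vge (s n) r"
  obtain N where "\<forall>n\<ge>N. vge (s n - l) r" using a(1) conv_def by blast
  then have "vge (s (max N N0) - l) r" "vge (s (max N N0)) r" using a(2) by auto
  from vge_diff[OF this(2) this(1)] show ?thesis by simp
qed

lemma conv_add: "conv s l \<Longrightarrow> conv t m \<Longrightarrow> conv (\<lambda>n. s n + t n) (l + m)"
  unfolding conv_def
proof (intro allI)
  fix r assume a: "\<forall>r. \<exists>N. \<forall>n\<ge>N. vge (s n - l) r" "\<forall>r. \<exists>N. \<forall>n\<ge>N. vge (t n - m) r"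
  obtain N1 N2 where "\<forall>n\<ge>N1. vge (s n - l) r" "\<forall>n\<ge>N2. vge (t n - m) r" using a by blast
  then have "\<forall>n\<ge>max N1 N2. vge (s n + t n - (l + m)) r"
    using vge_add by (metis (no_types, lifting) add_diff_add max.boundedE)
  then show "\<exists>N. \<forall>n\<ge>N. vge (s n + t n - (l + m)) r" by blast
qed

lemma conv_neg: "conv s l \<Longrightarrow> conv (\<lambda>n. - s n) (- l)"
  unfolding conv_def by (metis minus_diff_eq minus_diff_minus vge_neg)

lemma conv_diff: "conv s l \<Longrightarrow> conv t m \<Longrightarrow> conv (\<lambda>n. s n - t n) (l - m)"
  using conv_add[of s l "\<lambda>n. - t n" "-m"] conv_neg[of t m] by simp

lemma conv_const: "conv (\<lambda>n. c) c" unfolding conv_def by simp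

lemma conv_lmult: "conv s l \<Longrightarrow> conv (\<lambda>n. a * s n) (a * l)"
  unfolding conv_def
proof (intro allI)
  fix r assume a: "\<forall>r. \<exists>N. \<forall>n\<ge>N. vge (s n - l) r"
  obtain c where c: "vge a c" using vge_ex by blast
  obtain N where N: "\<forall>n\<ge>N. vge (s n - l) (r - c)" using a by blast
  have "vge (a * (s n - l)) r" if "n \<ge> N" for n
  proof -
    have "vge (a * (s n - l)) (c + (r - c))" by (rule vge_mul) (use N that c in auto)
    then show ?thesis by simp
  qed
  then have "\<forall>n\<ge>N. vge (a * (s n - l)) r" by blast
  then show "\<exists>N. \<forall>n\<ge>N. vge (a * s n - a * l) r" by (auto simp: right_diff_distrib)
qed

lemma conv_rmult: "conv s l \<Longrightarrow> conv (\<lambda>n. s n * a) (l * a)"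
  unfolding conv_def
proof (intro allI)
  fix r assume a: "\<forall>r. \<exists>N. \<forall>n\<ge>N. vge (s n - l) r"
  obtain c where c: "vge a c" using vge_ex by blast
  obtain N where N: "\<forall>n\<ge>N. vge (s n - l) (r - c)" using a by blast
  have "vge ((s n - l) * a) r" if "n \<ge> N" for n
  proof -
    have "vge ((s n - l) * a) ((r - c) + c)" by (rule vge_mul) (use N that c in auto)
    then show ?thesis by simp
  qed
  then have "\<forall>n\<ge>N. vge ((s n - l) * a) r" by blast
  then show "\<exists>N. \<forall>n\<ge>N. vge (s n * a - l * a) r" by (auto simp: left_diff_distrib)
qed

lemma conv_s: "conv s l \<Longrightarrow> conv (\<lambda>n. \<sigma> (s n)) (\<sigma> l)"
  unfolding conv_def
proof (intro allI)
  fix r assume a: "\<forall>r. \<exists>N. \<forall>n\<ge>N. vge (s n - l) r"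
  obtain N where N: "\<forall>n\<ge>N. vge (s n - l) r" using a by blast
  have "vge (\<sigma> (s n) - \<sigma> l) r" if "n \<ge> N" for n using N that vge_s[of "s n - l" r] by (simp add: sdiff)
  then show "\<exists>N. \<forall>n\<ge>N. vge (\<sigma> (s n) - \<sigma> l) r" by blast
qed

lemma conv_d: "conv s l \<Longrightarrow> conv (\<lambda>n. \<delta> (s n)) (\<delta> l)"
  unfolding conv_def
proof (intro allI)
  fix r assume a: "\<forall>r. \<exists>N. \<forall>n\<ge>N. vge (s n - l) r"
  obtain N where "\<forall>n\<ge>N. vge (s n - l) r" using a by blast
  then have "\<forall>n\<ge>N. vge (\<delta> (s n - l)) r" using vge_d' by blast
  then show "\<exists>N. \<forall>n\<ge>N. vge (\<delta> (s n) - \<delta> l) r" by (auto simp: ddiff)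
qed

lemma conv_shift: "conv s l \<longleftrightarrow> conv (\<lambda>n. s (n + k)) l"
proof
  assume "conv s l"
  then show "conv (\<lambda>n. s (n + k)) l" unfolding conv_def by (meson le_add1 order_trans)
next
  assume a: "conv (\<lambda>n. s (n + k)) l"
  show "conv s l" unfolding conv_def
  proof
    fix r obtain N where N: "\<forall>n\<ge>N. vge (s (n + k) - l) r" using a unfolding conv_def by blast
    have "vge (s n - l) r" if "n \<ge> N + k" for n
      using N[rule_format, of "n - k"] that by simp
    then show "\<exists>N. \<forall>n\<ge>N. vge (s n - l) r" by blast
  qed
qed

definition hasS :: "(nat \<Rightarrow> 'a) \<Rightarrow> 'a \<Rightarrow> bool" where
  "hasS f l \<longleftrightarrow> conv (\<lambda>N. \<Sum>i<N. f i) l"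

definition rsum :: "(nat \<Rightarrow> 'a) \<Rightarrow> 'a" where
  "rsum f = (SOME l. hasS f l)"

lemma sum_interval_vge:
  fixes f :: "nat \<Rightarrow> 'a" and N m n :: nat
  assumes "\<forall>n\<ge>N. vge (f n) r" "N \<le> m" "m \<le> n"
  shows "vge ((\<Sum>i<n. f i) - (\<Sum>i<m. f i)) r"
proof -
  have "sum f {0..<m} + sum f {m..<n} = sum f {0..<n}"
    by (rule sum.atLeastLessThan_concat) (use assms in auto)
  then have "(\<Sum>i<n. f i) - (\<Sum>i<m. f i) = (\<Sum>i\<in>{m..<n}. f i)"
    by (simp add: atLeast0LessThan algebra_simps)
  then show ?thesis using assms by (auto intro!: vge_sum)
qed

lemma tends0_hasS: "tends0 f \<Longrightarrow> hasS f (rsum f)"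
proof -
  assume t: "tends0 f"
  have "\<exists>l. conv (\<lambda>N. \<Sum>i<N. f i) l"
    unfolding conv_def vge_def[symmetric]
  proof (rule ucompl[unfolded vge_def[symmetric]], intro allI)
    fix r
    obtain N where N: "\<forall>n\<ge>N. vge (f n) r" using t tends0_def by blast
    show "\<exists>N. \<forall>m\<ge>N. \<forall>n\<ge>N. vge ((\<Sum>i<m. f i) - (\<Sum>i<n. f i)) r"
    proof (intro exI allI impI)
      fix m n assume "N \<le> m" "N \<le> n"
      then show "vge ((\<Sum>i<m. f i) - (\<Sum>i<n. f i)) r"
        using sum_interval_vge[OF N] by (metis minus_diff_eq nat_le_linear vge_neg)
    qed
  qed
  then show ?thesis unfolding rsum_def hasS_def by (rule someI_ex)
qed

lemma hasS_rsum: "hasS f l \<Longrightarrow> rsum f = l"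
proof -
  assume h: "hasS f l"
  have "hasS f (rsum f)" unfolding rsum_def using h by (rule someI)
  then show ?thesis using h conv_unique unfolding hasS_def by blast
qed

lemma hasS_tends0_aux: "hasS f l \<Longrightarrow> tends0 f"
  unfolding hasS_def tends0_def conv_def
proof (intro allI)
  fix r assume a: "\<forall>r. \<exists>N. \<forall>n\<ge>N. vge ((\<Sum>i<n. f i) - l) r"
  obtain N where N: "\<forall>n\<ge>N. vge ((\<Sum>i<n. f i) - l) r" using a by blast
  have "vge (f n) r" if "n \<ge> N" for n
    using vge_diff[OF N[rule_format, of "Suc n"] N[rule_format, of n]] that by simp
  then show "\<exists>N. \<forall>n\<ge>N. vge (f n) r" by blast
qed

lemma tends0_add: "tends0 f \<Longrightarrow> tends0 g \<Longrightarrow> tends0 (\<lambda>n. f n + g n)"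
  unfolding tends0_def
proof (intro allI)
  fix r assume a: "\<forall>r. \<exists>N. \<forall>n\<ge>N. vge (f n) r" "\<forall>r. \<exists>N. \<forall>n\<ge>N. vge (g n) r"
  obtain N1 where N1: "\<forall>n\<ge>N1. vge (f n) r" using a by blast
  obtain N2 where N2: "\<forall>n\<ge>N2. vge (g n) r" using a by blast
  have "vge (f n + g n) r" if "n \<ge> max N1 N2" for n
    using N1 N2 that by (intro vge_add) auto
  then show "\<exists>N. \<forall>n\<ge>N. vge (f n + g n) r" by blast
qed
lemma tends0_neg: "tends0 f \<Longrightarrow> tends0 (\<lambda>n. - f n)"
  unfolding tends0_def by simp
lemma tends0_diff: "tends0 f \<Longrightarrow> tends0 g \<Longrightarrow> tends0 (\<lambda>n. f n - g n)"
  using tends0_add[of f "\<lambda>n. - g n"] tends0_neg[of g] by simp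
lemma tends0_lmult: "tends0 f \<Longrightarrow> tends0 (\<lambda>n. a * f n)"
  unfolding tends0_def
proof (intro allI)
  fix r assume a: "\<forall>r. \<exists>N. \<forall>n\<ge>N. vge (f n) r"
  obtain c where c: "vge a c" using vge_ex by blast
  obtain N where N: "\<forall>n\<ge>N. vge (f n) (r - c)" using a by blast
  have "vge (a * f n) r" if "n \<ge> N" for n
  proof -
    have "vge (a * f n) (c + (r - c))" by (rule vge_mul) (use N that c in auto)
    then show ?thesis by simp
  qed
  then show "\<exists>N. \<forall>n\<ge>N. vge (a * f n) r" by blast
qed
lemma tends0_rmult: "tends0 f \<Longrightarrow> tends0 (\<lambda>n. f n * a)"
  unfolding tends0_def
proof (intro allI)
  fix r assume a: "\<forall>r. \<exists>N. \<forall>n\<ge>N. vge (f n) r"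
  obtain c where c: "vge a c" using vge_ex by blast
  obtain N where N: "\<forall>n\<ge>N. vge (f n) (r - c)" using a by blast
  have "vge (f n * a) r" if "n \<ge> N" for n
  proof -
    have "vge (f n * a) ((r - c) + c)" by (rule vge_mul) (use N that c in auto)
    then show ?thesis by simp
  qed
  then show "\<exists>N. \<forall>n\<ge>N. vge (f n * a) r" by blast
qed
lemma tends0_s: "tends0 f \<Longrightarrow> tends0 (\<lambda>n. \<sigma> (f n))"
  unfolding tends0_def
proof (intro allI)
  fix r assume a: "\<forall>r. \<exists>N. \<forall>n\<ge>N. vge (f n) r"
  obtain N where N: "\<forall>n\<ge>N. vge (f n) r" using a by blast
  have "vge (\<sigma> (f n)) r" if "n \<ge> N" for n using N that vge_s by blast
  then show "\<exists>N. \<forall>n\<ge>N. vge (\<sigma> (f n)) r" by blast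
qed
lemma tends0_d: "tends0 f \<Longrightarrow> tends0 (\<lambda>n. \<delta> (f n))"
  unfolding tends0_def
proof (intro allI)
  fix r assume a: "\<forall>r. \<exists>N. \<forall>n\<ge>N. vge (f n) r"
  obtain N where N: "\<forall>n\<ge>N. vge (f n) r" using a by blast
  have "vge (\<delta> (f n)) r" if "n \<ge> N" for n using N that vge_d' by blast
  then show "\<exists>N. \<forall>n\<ge>N. vge (\<delta> (f n)) r" by blast
qed
lemma tends0_fin: "\<forall>n\<ge>N. f n = 0 \<Longrightarrow> tends0 f"
  unfolding tends0_def by (metis vge_0)

lemma rsum_add: "tends0 f \<Longrightarrow> tends0 g \<Longrightarrow> rsum (\<lambda>n. f n + g n) = rsum f + rsum g"
  apply (rule hasS_rsum) using conv_add[OF tends0_hasS[of f, unfolded hasS_def] tends0_hasS[of g, unfolded hasS_def]]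
  by (simp add: hasS_def sum.distrib)
lemma rsum_neg: "tends0 f \<Longrightarrow> rsum (\<lambda>n. - f n) = - rsum f"
  apply (rule hasS_rsum) using conv_neg[OF tends0_hasS[of f, unfolded hasS_def]]
  by (simp add: hasS_def sum_negf)
lemma rsum_diff: "tends0 f \<Longrightarrow> tends0 g \<Longrightarrow> rsum (\<lambda>n. f n - g n) = rsum f - rsum g"
  using rsum_add[of f "\<lambda>n. - g n"] rsum_neg[of g] tends0_neg[of g] by simp
lemma rsum_lmult: "tends0 f \<Longrightarrow> rsum (\<lambda>n. a * f n) = a * rsum f"
  apply (rule hasS_rsum) using conv_lmult[OF tends0_hasS[of f, unfolded hasS_def]]
  by (simp add: hasS_def sum_distrib_left)
lemma rsum_rmult: "tends0 f \<Longrightarrow> rsum (\<lambda>n. f n * a) = rsum f * a"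
  apply (rule hasS_rsum) using conv_rmult[OF tends0_hasS[of f, unfolded hasS_def]]
  by (simp add: hasS_def sum_distrib_right)
lemma rsum_s: "tends0 f \<Longrightarrow> rsum (\<lambda>n. \<sigma> (f n)) = \<sigma> (rsum f)"
  apply (rule hasS_rsum) using conv_s[OF tends0_hasS[of f, unfolded hasS_def]]
  by (simp add: hasS_def ssum)
lemma rsum_d: "tends0 f \<Longrightarrow> rsum (\<lambda>n. \<delta> (f n)) = \<delta> (rsum f)"
  apply (rule hasS_rsum) using conv_d[OF tends0_hasS[of f, unfolded hasS_def]]
  by (simp add: hasS_def dsum)
lemma rsum_fin: "\<forall>n\<ge>N. f n = 0 \<Longrightarrow> rsum f = (\<Sum>i<N. f i)"
proof (rule hasS_rsum, unfold hasS_def conv_def, intro allI exI allI impI)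
  fix r n assume a: "\<forall>n\<ge>N. f n = 0" "N \<le> n"
  have "sum f {0..<N} + sum f {N..<n} = sum f {0..<n}"
    by (rule sum.atLeastLessThan_concat) (use a in auto)
  then have "(\<Sum>i<n. f i) = (\<Sum>i<N. f i) + (\<Sum>i\<in>{N..<n}. f i)"
    by (simp add: atLeast0LessThan)
  also have "(\<Sum>i\<in>{N..<n}. f i) = 0" using a(1) by auto
  finally show "vge ((\<Sum>i<n. f i) - (\<Sum>i<N. f i)) r" by simp
qed
lemma rsum_closed: "tends0 f \<Longrightarrow> (\<And>i. vge (f i) r) \<Longrightarrow> vge (rsum f) r"
proof -
  assume t: "tends0 f" and b: "\<And>i. vge (f i) r"
  have "\<forall>n\<ge>0. vge (\<Sum>i<n. f i) r" using b by (simp add: vge_sum)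
  then show ?thesis by (rule conv_closed[OF tends0_hasS[OF t, unfolded hasS_def]])
qed
lemma rsum_tail: "tends0 f \<Longrightarrow> (\<And>i. i \<ge> N \<Longrightarrow> vge (f i) r) \<Longrightarrow> vge (rsum f - (\<Sum>i<N. f i)) r"
proof -
  assume t: "tends0 f" and b: "\<And>i. i \<ge> N \<Longrightarrow> vge (f i) r"
  have "conv (\<lambda>n. (\<Sum>i<n. f i) - (\<Sum>i<N. f i)) (rsum f - (\<Sum>i<N. f i))"
    using conv_diff[OF tends0_hasS[OF t, unfolded hasS_def] conv_const] by simp
  moreover have "\<forall>n\<ge>N. vge ((\<Sum>i<n. f i) - (\<Sum>i<N. f i)) r"
  proof (intro allI impI)
    fix n assume "N \<le> n"
    then show "vge ((\<Sum>i<n. f i) - (\<Sum>i<N. f i)) r"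
      using sum_interval_vge[of N f r N n] b by blast
  qed
  ultimately show ?thesis by (rule conv_closed)
qed
lemma rsum_shift: "tends0 f \<Longrightarrow> rsum f = f 0 + rsum (\<lambda>i. f (Suc i))"
proof -
  assume t: "tends0 f"
  have t2: "tends0 (\<lambda>i. f (Suc i))" using t unfolding tends0_def by (meson le_SucI)
  have "hasS f (f 0 + rsum (\<lambda>i. f (Suc i)))"
    unfolding hasS_def
    apply (subst conv_shift[where k=1])
    using conv_add[OF conv_const[of "f 0"] tends0_hasS[OF t2, unfolded hasS_def]]
    by (simp del: sum.lessThan_Suc add: sum.lessThan_Suc_shift)
  then show ?thesis by (rule hasS_rsum)
qed
lemma rsum_cong: "(\<And>i. f i = g i) \<Longrightarrow> rsum f = rsum g" by (metis ext)

end

context skctx begin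

definition Xo :: "(nat \<Rightarrow> 'a) \<Rightarrow> nat \<Rightarrow> 'a" where
  "Xo s = (\<lambda>n. (case n of 0 \<Rightarrow> 0 | Suc m \<Rightarrow> \<sigma> (s m)) + \<delta> (s n))"

lemma Xo_0[simp]: "Xo s 0 = \<delta> (s 0)" by (simp add: Xo_def)
lemma Xo_Suc[simp]: "Xo s (Suc n) = \<sigma> (s n) + \<delta> (s (Suc n))" by (simp add: Xo_def)

definition sge :: "(nat \<Rightarrow> 'a) \<Rightarrow> real \<Rightarrow> bool" where
  "sge F r \<longleftrightarrow> (\<forall>i. vge (F i) (r - real i / 2))"

definition tsge :: "nat \<Rightarrow> (nat \<Rightarrow> 'a) \<Rightarrow> real \<Rightarrow> bool" where
  "tsge N F r \<longleftrightarrow> (\<forall>i\<ge>N. vge (F i) (r - real i / 2))"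

definition bser :: "(nat \<Rightarrow> 'a) \<Rightarrow> bool" where
  "bser F \<longleftrightarrow> (\<forall>r. \<exists>N. tsge N F r)"

definition Lop :: "(nat \<Rightarrow> 'a) \<Rightarrow> (nat \<Rightarrow> 'a) \<Rightarrow> nat \<Rightarrow> 'a" where
  "Lop F G = (\<lambda>n. rsum (\<lambda>i. F i * (Xo^^i) G n))"

definition Tr :: "nat \<Rightarrow> (nat \<Rightarrow> 'a) \<Rightarrow> (nat \<Rightarrow> 'a) \<Rightarrow> nat \<Rightarrow> 'a" where
  "Tr N F G = (\<lambda>n. \<Sum>i<N. F i * (Xo^^i) G n)"

lemma sge_tsge: "sge F r \<Longrightarrow> tsge N F r" unfolding sge_def tsge_def by blast
lemma tsge0: "tsge 0 F r \<longleftrightarrow> sge F r" unfolding sge_def tsge_def by blast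

lemma sge_mono: "sge F r \<Longrightarrow> s \<le> r \<Longrightarrow> sge F s"
  unfolding sge_def using vge_mono by (metis diff_right_mono)
lemma sge_add: "sge F r \<Longrightarrow> sge G r \<Longrightarrow> sge (\<lambda>n. F n + G n) r"
  unfolding sge_def using vge_add by blast
lemma sge_neg: "sge (\<lambda>n. - F n) r \<longleftrightarrow> sge F r"
  unfolding sge_def by simp
lemma sge_diff: "sge F r \<Longrightarrow> sge G r \<Longrightarrow> sge (\<lambda>n. F n - G n) r"
  unfolding sge_def using vge_diff by blast
lemma sge_zero[simp]: "sge (\<lambda>n. 0) r" unfolding sge_def by simp
lemma sge_lmult: "vge a c \<Longrightarrow> sge F r \<Longrightarrow> sge (\<lambda>n. a * F n) (c + r)"
  unfolding sge_def
proof
  fix i assume "vge a c" "\<forall>i. vge (F i) (r - real i / 2)"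
  then have "vge (a * F i) (c + (r - real i / 2))" using vge_mul by blast
  then show "vge (a * F i) (c + r - real i / 2)" by (simp add: algebra_simps)
qed
lemma sge_zero_iff: "(\<forall>r. sge F r) \<longleftrightarrow> (\<forall>n. F n = 0)"
proof
  assume a: "\<forall>r. sge F r"
  show "\<forall>n. F n = 0"
  proof
    fix n
    have "vge (F n) r" for r
    proof -
      have "vge (F n) (r + real n / 2 - real n / 2)" using a unfolding sge_def by blast
      then show ?thesis by simp
    qed
    then show "F n = 0" using vge_zero_iff by blast
  qed
qed (simp add: sge_def)

lemma tsge_add: "tsge N F r \<Longrightarrow> tsge N G r \<Longrightarrow> tsge N (\<lambda>n. F n + G n) r"
  unfolding tsge_def using vge_add by blast
lemma tsge_mono: "tsge N F r \<Longrightarrow> N \<le> M \<Longrightarrow> s \<le> r \<Longrightarrow> tsge M F s"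
  unfolding tsge_def using vge_mono by (metis diff_right_mono order_trans)

lemma bser_add: "bser F \<Longrightarrow> bser G \<Longrightarrow> bser (\<lambda>n. F n + G n)"
  unfolding bser_def
proof
  fix r assume a: "\<forall>r. \<exists>N. tsge N F r" "\<forall>r. \<exists>N. tsge N G r"
  obtain N1 N2 where "tsge N1 F r" "tsge N2 G r" using a by blast
  then have "tsge (max N1 N2) F r" "tsge (max N1 N2) G r" using tsge_mono by auto
  then show "\<exists>N. tsge N (\<lambda>n. F n + G n) r" using tsge_add by blast
qed
lemma bser_neg: "bser F \<Longrightarrow> bser (\<lambda>n. - F n)"
  unfolding bser_def tsge_def by simp
lemma bser_diff: "bser F \<Longrightarrow> bser G \<Longrightarrow> bser (\<lambda>n. F n - G n)"
  using bser_add[of F "\<lambda>n. - G n"] bser_neg[of G] by simp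
lemma bser_lmult: "bser F \<Longrightarrow> bser (\<lambda>n. a * F n)"
  unfolding bser_def
proof
  fix r assume a: "\<forall>r. \<exists>N. tsge N F r"
  obtain c where c: "vge a c" using vge_ex by blast
  obtain N where N: "tsge N F (r - c)" using a by blast
  have "vge (a * F i) (r - real i / 2)" if "i \<ge> N" for i
  proof -
    have "vge (a * F i) (c + (r - c - real i / 2))" using N that c unfolding tsge_def
      by (intro vge_mul) auto
    then show ?thesis by simp
  qed
  then show "\<exists>N. tsge N (\<lambda>n. a * F n) r" unfolding tsge_def by blast
qed
lemma bser_fin: "\<forall>n\<ge>N. F n = 0 \<Longrightarrow> bser F"
  unfolding bser_def tsge_def by (metis vge_0)
lemma bser_zero[simp]: "bser (\<lambda>n. 0)" by (rule bser_fin) simp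

lemma bser_sge: "bser F \<Longrightarrow> \<exists>r. sge F r"
proof -
  assume b: "bser F"
  obtain N where N: "tsge N F 0" using b bser_def by blast
  have "\<exists>r. \<forall>i<M. vge (F i) (r - real i / 2)" for M
  proof (induction M)
    case 0 then show ?case by simp
  next
    case (Suc M)
    then obtain r where r: "\<forall>i<M. vge (F i) (r - real i / 2)" by blast
    obtain c where c: "vge (F M) c" using vge_ex by blast
    have "\<forall>i<Suc M. vge (F i) (min r (c + real M / 2) - real i / 2)"
    proof (intro allI impI)
      fix i assume "i < Suc M"
      then consider "i < M" | "i = M" by linarith
      then show "vge (F i) (min r (c + real M / 2) - real i / 2)"
      proof cases
        case 1 then have "vge (F i) (r - real i / 2)" using r by blast
        then show ?thesis by (rule vge_mono) simp
      next
        case 2 then have "vge (F i) (c + real M / 2 - real i / 2)" using c by simp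
        then show ?thesis by (rule vge_mono) simp
      qed
    qed
    then show ?case by blast
  qed
  then obtain r where r: "\<forall>i<N. vge (F i) (r - real i / 2)" by blast
  have "sge F (min r 0)" unfolding sge_def
  proof
    fix i show "vge (F i) (min r 0 - real i / 2)"
    proof (cases "i < N")
      case True then have "vge (F i) (r - real i / 2)" using r by blast
      then show ?thesis by (rule vge_mono) simp
    next
      case False then have "vge (F i) (0 - real i / 2)" using N unfolding tsge_def by simp
      then show ?thesis by (rule vge_mono) simp
    qed
  qed
  then show ?thesis by blast
qed

lemma bser_approx: "(\<And>r. \<exists>H. bser H \<and> sge (\<lambda>n. F n - H n) r) \<Longrightarrow> bser F"
  unfolding bser_def
proof
  fix r assume a: "\<And>r. \<exists>H. (\<forall>r. \<exists>N. tsge N H r) \<and> sge (\<lambda>n. F n - H n) r"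
  obtain H where H: "\<forall>r. \<exists>N. tsge N H r" "sge (\<lambda>n. F n - H n) r" using a by blast
  obtain N where N: "tsge N H r" using H by blast
  have "tsge N (\<lambda>n. (F n - H n) + H n) r" using tsge_add[OF sge_tsge[OF H(2)] N] .
  then show "\<exists>N. tsge N F r" by auto
qed

lemma Xo_add: "Xo (\<lambda>n. F n + G n) = (\<lambda>n. Xo F n + Xo G n)"
  unfolding Xo_def by (auto simp: sadd dadd split: nat.split)
lemma Xo_neg: "Xo (\<lambda>n. - F n) = (\<lambda>n. - Xo F n)"
  unfolding Xo_def by (auto simp: sneg dneg split: nat.split)
lemma Xo_diff: "Xo (\<lambda>n. F n - G n) = (\<lambda>n. Xo F n - Xo G n)"
  unfolding Xo_def by (auto simp: sdiff ddiff split: nat.split)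
lemma Xo_zero[simp]: "Xo (\<lambda>n. 0) = (\<lambda>n. 0)"
  unfolding Xo_def by (auto split: nat.split)
lemma Xo_lmult: "Xo (\<lambda>n. a * F n) = (\<lambda>n. \<sigma> a * Xo F n + \<delta> a * F n)"
  unfolding Xo_def by (auto simp: smul dmul algebra_simps split: nat.split)
lemma Xopow_add: "(Xo^^i) (\<lambda>n. F n + G n) = (\<lambda>n. (Xo^^i) F n + (Xo^^i) G n)"
  by (induction i) (auto simp: Xo_add)
lemma Xopow_neg: "(Xo^^i) (\<lambda>n. - F n) = (\<lambda>n. - (Xo^^i) F n)"
  by (induction i) (auto simp: Xo_neg)
lemma Xopow_diff: "(Xo^^i) (\<lambda>n. F n - G n) = (\<lambda>n. (Xo^^i) F n - (Xo^^i) G n)"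
  by (induction i) (auto simp: Xo_diff)
lemma Xopow_zero[simp]: "(Xo^^i) (\<lambda>n. 0) = (\<lambda>n. 0)"
  by (induction i) auto

lemma Xo_xpow: "Xo (xpow k) = xpow (Suc k)"
  unfolding Xo_def xpow_def by (auto simp: sone split: nat.split)
lemma Xopow_xpow: "(Xo^^i) (xpow k) = xpow (i + k)"
  by (induction i) (auto simp: Xo_xpow)

lemma sge_Xo: "sge F r \<Longrightarrow> sge (Xo F) (r + 1/2)"
  unfolding sge_def
proof
  fix i assume a: "\<forall>i. vge (F i) (r - real i / 2)"
  show "vge (Xo F i) (r + 1 / 2 - real i / 2)"
  proof (cases i)
    case 0
    have "vge (\<delta> (F 0)) (r - real 0 / 2 + 1)" by (rule vge_d) (use a in blast)
    then have "vge (\<delta> (F 0)) (r + 1 / 2 - real i / 2)" using 0 by (auto elim: vge_mono)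
    then show ?thesis using 0 by simp
  next
    case (Suc m)
    have "vge (\<sigma> (F m)) (r - real m / 2)" using vge_s a by blast
    moreover have "r - real m / 2 = r + 1 / 2 - real i / 2" using Suc by (simp add: field_simps)
    ultimately have 1: "vge (\<sigma> (F m)) (r + 1 / 2 - real i / 2)" by simp
    have "vge (\<delta> (F i)) (r - real i / 2 + 1)" using vge_d a by blast
    then have 2: "vge (\<delta> (F i)) (r + 1 / 2 - real i / 2)" using vge_mono by fastforce
    show ?thesis using Suc vge_add[OF 1 2] by simp
  qed
qed

lemma sge_Xopow: "sge F r \<Longrightarrow> sge ((Xo^^i) F) (r + real i / 2)"
proof (induction i)
  case 0 then show ?case by simp
next
  case (Suc i)
  have "sge (Xo ((Xo^^i) F)) (r + real i / 2 + 1/2)" by (rule sge_Xo[OF Suc.IH[OF Suc.prems]])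
  moreover have "r + real i / 2 + 1/2 = r + real (Suc i) / 2" by (simp add: add_divide_distrib)
  ultimately show ?case by simp
qed

lemma tsge_Xo: "tsge N F r \<Longrightarrow> tsge (Suc N) (Xo F) r"
  unfolding tsge_def
proof (intro allI impI)
  fix i assume a: "\<forall>i\<ge>N. vge (F i) (r - real i / 2)" and i: "Suc N \<le> i"
  then obtain m where m: "i = Suc m" "m \<ge> N" by (metis Suc_le_D Suc_le_mono)
  have "vge (\<sigma> (F m)) (r - real m / 2)" using vge_s a m by blast
  then have 1: "vge (\<sigma> (F m)) (r - real i / 2)" using m vge_mono by fastforce
  have "vge (\<delta> (F i)) (r - real i / 2 + 1)" using vge_d a i by auto
  then have 2: "vge (\<delta> (F i)) (r - real i / 2)" using vge_mono by fastforce
  show "vge (Xo F i) (r - real i / 2)" using m vge_add[OF 1 2] by simp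
qed

lemma bser_Xo: "bser F \<Longrightarrow> bser (Xo F)"
  unfolding bser_def using tsge_Xo by blast
lemma bser_Xopow: "bser F \<Longrightarrow> bser ((Xo^^i) F)"
  by (induction i) (auto simp: bser_Xo)

end

context skctx begin

lemma term_vge:
  assumes "vge (F i) (a - real i / 2)" "sge G b"
  shows "vge (F i * (Xo^^i) G n) (a + b - real n / 2)"
proof -
  have "vge ((Xo^^i) G n) (b + real i / 2 - real n / 2)"
    using sge_Xopow[OF assms(2), of i] unfolding sge_def by blast
  from vge_mul[OF assms(1) this] show ?thesis by (simp add: algebra_simps)
qed

lemma Lop_tends0: assumes "bser F" "bser G" shows "tends0 (\<lambda>i. F i * (Xo^^i) G n)"
  unfolding tends0_def
proof
  fix r
  obtain b where b: "sge G b" using bser_sge[OF assms(2)] by blast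
  obtain N where N: "tsge N F (r - b + real n / 2)" using assms(1) bser_def by blast
  have "vge (F i * (Xo^^i) G n) r" if "i \<ge> N" for i
  proof -
    have "vge (F i) ((r - b + real n / 2) - real i / 2)" using N that tsge_def by blast
    from term_vge[of F i "r - b + real n / 2" G b n] this b show ?thesis by simp
  qed
  then show "\<exists>N. \<forall>i\<ge>N. vge (F i * (Xo^^i) G n) r" by blast
qed

lemma sge_Lop: assumes "sge F a" "sge G b" "bser F" "bser G" shows "sge (Lop F G) (a + b)"
  unfolding sge_def Lop_def
proof
  fix n
  show "vge (rsum (\<lambda>i. F i * (Xo ^^ i) G n)) (a + b - real n / 2)"
    by (rule rsum_closed[OF Lop_tends0[OF assms(3,4)]])
       (rule term_vge[OF _ assms(2)], use assms(1) sge_def in blast)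
qed

lemma Lop_tail: assumes "tsge N F a" "sge G b" "bser F" "bser G"
  shows "sge (\<lambda>n. Lop F G n - Tr N F G n) (a + b)"
  unfolding sge_def Lop_def Tr_def
proof
  fix n
  show "vge (rsum (\<lambda>i. F i * (Xo ^^ i) G n) - (\<Sum>i<N. F i * (Xo ^^ i) G n)) (a + b - real n / 2)"
    by (rule rsum_tail[OF Lop_tends0[OF assms(3,4)]])
       (rule term_vge[OF _ assms(2)], use assms(1) tsge_def in blast)
qed

lemma bser_s: "bser F \<Longrightarrow> bser (\<lambda>i. \<sigma> (F i))"
  unfolding bser_def tsge_def using vge_s by blast
lemma bser_d: "bser F \<Longrightarrow> bser (\<lambda>i. \<delta> (F i))"
  unfolding bser_def tsge_def using vge_d' by blast

lemma Lop_add1: "bser F \<Longrightarrow> bser F' \<Longrightarrow> bser G \<Longrightarrow>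
   Lop (\<lambda>n. F n + F' n) G = (\<lambda>n. Lop F G n + Lop F' G n)"
  unfolding Lop_def
  by (auto simp: distrib_right rsum_add[OF Lop_tends0 Lop_tends0])
lemma Lop_neg1: "bser F \<Longrightarrow> bser G \<Longrightarrow> Lop (\<lambda>n. - F n) G = (\<lambda>n. - Lop F G n)"
  unfolding Lop_def by (auto simp: rsum_neg[OF Lop_tends0])
lemma Lop_diff1: "bser F \<Longrightarrow> bser F' \<Longrightarrow> bser G \<Longrightarrow>
   Lop (\<lambda>n. F n - F' n) G = (\<lambda>n. Lop F G n - Lop F' G n)"
  unfolding Lop_def
  by (auto simp: left_diff_distrib rsum_diff[OF Lop_tends0 Lop_tends0])
lemma Lop_lmult1: "bser F \<Longrightarrow> bser G \<Longrightarrow> Lop (\<lambda>n. a * F n) G = (\<lambda>n. a * Lop F G n)"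
  unfolding Lop_def by (auto simp: mult.assoc rsum_lmult[OF Lop_tends0])
lemma Lop_add2: "bser F \<Longrightarrow> bser G \<Longrightarrow> bser G' \<Longrightarrow>
   Lop F (\<lambda>n. G n + G' n) = (\<lambda>n. Lop F G n + Lop F G' n)"
  unfolding Lop_def
  by (auto simp: Xopow_add distrib_left rsum_add[OF Lop_tends0 Lop_tends0])
lemma Lop_neg2: "bser F \<Longrightarrow> bser G \<Longrightarrow> Lop F (\<lambda>n. - G n) = (\<lambda>n. - Lop F G n)"
  unfolding Lop_def by (auto simp: Xopow_neg rsum_neg[OF Lop_tends0])
lemma Lop_diff2: "bser F \<Longrightarrow> bser G \<Longrightarrow> bser G' \<Longrightarrow>
   Lop F (\<lambda>n. G n - G' n) = (\<lambda>n. Lop F G n - Lop F G' n)"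
  unfolding Lop_def
  by (auto simp: Xopow_diff right_diff_distrib rsum_diff[OF Lop_tends0 Lop_tends0])

lemma Lop_fin: "\<forall>i\<ge>N. F i = 0 \<Longrightarrow> Lop F G = Tr N F G"
  unfolding Lop_def Tr_def by (rule ext, rule rsum_fin) simp

lemma Lop_const: "Lop (const_s a) G = (\<lambda>n. a * G n)"
  by (subst Lop_fin[of 1]) (auto simp: const_s_def Tr_def)

lemma Lop_xpow: "Lop (xpow k) G = (Xo^^k) G"
proof -
  have "Lop (xpow k) G = Tr (Suc k) (xpow k) G" by (rule Lop_fin) (simp add: xpow_def)
  also have "\<dots> = (Xo^^k) G" unfolding Tr_def xpow_def
    by (auto simp: if_distrib cong: if_cong)
  finally show ?thesis .
qed

lemma xpow_0: "xpow 0 = const_s 1" unfolding xpow_def const_s_def by auto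

lemma Lop_one2: "Lop F (xpow 0) = F"
proof
  fix n
  have "Lop F (xpow 0) n = rsum (\<lambda>i. F i * xpow i n)" unfolding Lop_def by (simp add: Xopow_xpow)
  also have "\<dots> = (\<Sum>i<Suc n. F i * xpow i n)" by (rule rsum_fin) (simp add: xpow_def)
  also have "\<dots> = F n" by (simp add: xpow_def if_distrib cong: if_cong)
  finally show "Lop F (xpow 0) n = F n" .
qed

lemma bser_Tr: "bser F \<Longrightarrow> bser G \<Longrightarrow> bser (Tr N F G)"
proof (induction N)
  case 0 then show ?case unfolding Tr_def by simp
next
  case (Suc N)
  have "Tr (Suc N) F G = (\<lambda>n. Tr N F G n + F N * (Xo^^N) G n)" unfolding Tr_def by simp
  moreover have "bser (\<lambda>n. F N * (Xo^^N) G n)" by (rule bser_lmult[OF bser_Xopow[OF Suc.prems(2)]])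
  ultimately show ?case using bser_add[OF Suc.IH[OF Suc.prems]] by simp
qed

lemma bser_Lop: assumes "bser F" "bser G" shows "bser (Lop F G)"
proof (rule bser_approx)
  fix r
  obtain b where b: "sge G b" using bser_sge[OF assms(2)] by blast
  obtain N where N: "tsge N F (r - b)" using assms(1) bser_def by blast
  have "sge (\<lambda>n. Lop F G n - Tr N F G n) (r - b + b)" by (rule Lop_tail[OF N b assms])
  then show "\<exists>H. bser H \<and> sge (\<lambda>n. Lop F G n - H n) r" using bser_Tr[OF assms] by auto
qed

lemma tends0_shiftD: "tends0 (\<lambda>i. f (Suc i)) \<Longrightarrow> tends0 f"
  unfolding tends0_def by (metis Suc_le_D Suc_le_mono)

lemma Xo_Lop: assumes F: "bser F" and G: "bser G" shows "Xo (Lop F G) = Lop (Xo F) G"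
proof
  fix n
  define Y where "Y i = (Xo^^i) G" for i
  have YS: "Y (Suc i) = Xo (Y i)" for i unfolding Y_def by simp
  have t: "tends0 (\<lambda>i. F i * Y i m)" for m unfolding Y_def by (rule Lop_tends0[OF F G])
  have ts: "tends0 (\<lambda>i. \<sigma> (F i) * Y (Suc i) n)"
    unfolding Y_def funpow_Suc_right o_def by (rule Lop_tends0[OF bser_s[OF F] bser_Xo[OF G]])
  have td: "tends0 (\<lambda>i. \<delta> (F i) * Y i n)"
    unfolding Y_def by (rule Lop_tends0[OF bser_d[OF F] G])
  have tc: "tends0 (\<lambda>i. (case i of 0 \<Rightarrow> 0 | Suc m \<Rightarrow> \<sigma> (F m)) * Y i n)"
    by (rule tends0_shiftD) (simp add: ts)
  have A: "Xo (Lop F G) n = rsum (\<lambda>i. Xo (\<lambda>m. F i * Y i m) n)"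
  proof (cases n)
    case 0
    then show ?thesis unfolding Lop_def Y_def by (simp add: rsum_d[OF t[unfolded Y_def]])
  next
    case (Suc k)
    have "Xo (Lop F G) n = \<sigma> (rsum (\<lambda>i. F i * Y i k)) + \<delta> (rsum (\<lambda>i. F i * Y i n))"
      unfolding Lop_def Y_def Suc by simp
    also have "\<dots> = rsum (\<lambda>i. \<sigma> (F i * Y i k)) + rsum (\<lambda>i. \<delta> (F i * Y i n))"
      by (simp add: rsum_s[OF t] rsum_d[OF t])
    also have "\<dots> = rsum (\<lambda>i. \<sigma> (F i * Y i k) + \<delta> (F i * Y i n))"
      by (rule rsum_add[symmetric]) (auto intro: tends0_s tends0_d t)
    finally show ?thesis unfolding Suc by simp
  qed
  also have "\<dots> = rsum (\<lambda>i. \<sigma> (F i) * Y (Suc i) n + \<delta> (F i) * Y i n)"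
    by (simp add: Xo_lmult YS)
  also have "\<dots> = rsum (\<lambda>i. \<sigma> (F i) * Y (Suc i) n) + rsum (\<lambda>i. \<delta> (F i) * Y i n)"
    by (rule rsum_add[OF ts td])
  also have "rsum (\<lambda>i. \<sigma> (F i) * Y (Suc i) n) =
      rsum (\<lambda>i. (case i of 0 \<Rightarrow> 0 | Suc m \<Rightarrow> \<sigma> (F m)) * Y i n)"
    by (subst rsum_shift[of "\<lambda>i. (case i of 0 \<Rightarrow> 0 | Suc m \<Rightarrow> \<sigma> (F m)) * Y i n"])
       (use tc in auto)
  also have "rsum (\<lambda>i. (case i of 0 \<Rightarrow> 0 | Suc m \<Rightarrow> \<sigma> (F m)) * Y i n) + rsum (\<lambda>i. \<delta> (F i) * Y i n)
      = rsum (\<lambda>i. Xo F i * Y i n)"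
    unfolding Xo_def distrib_right
    by (rule rsum_add[symmetric, OF tc td])
  also have "\<dots> = Lop (Xo F) G n" unfolding Lop_def Y_def by simp
  finally show "Xo (Lop F G) n = Lop (Xo F) G n" .
qed

lemma Lop_Xopow: "bser G \<Longrightarrow> bser H \<Longrightarrow> Lop ((Xo^^i) G) H = (Xo^^i) (Lop G H)"
proof (induction i)
  case 0 then show ?case by simp
next
  case (Suc i)
  have "Lop ((Xo^^Suc i) G) H = Lop (Xo ((Xo^^i) G)) H" by simp
  also have "\<dots> = Xo (Lop ((Xo^^i) G) H)" by (rule Xo_Lop[OF bser_Xopow[OF Suc.prems(1)] Suc.prems(2), symmetric])
  finally show ?case using Suc by simp
qed

lemma Lop_Tr: assumes "bser F" "bser G" "bser H" shows "Lop (Tr N F G) H = Tr N F (Lop G H)"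
proof (induction N)
  case 0
  have "rsum (\<lambda>i. 0) = 0" using rsum_fin[of 0 "\<lambda>i. 0"] by simp
  then show ?case unfolding Lop_def Tr_def by simp
next
  case (Suc N)
  have "Lop (Tr (Suc N) F G) H = Lop (\<lambda>n. Tr N F G n + F N * (Xo^^N) G n) H"
    unfolding Tr_def by simp
  also have "\<dots> = (\<lambda>n. Lop (Tr N F G) H n + Lop (\<lambda>n. F N * (Xo^^N) G n) H n)"
    by (rule Lop_add1[OF bser_Tr[OF assms(1,2)] bser_lmult[OF bser_Xopow[OF assms(2)]] assms(3)])
  finally have e: "Lop (Tr (Suc N) F G) H = (\<lambda>n. Lop (Tr N F G) H n + Lop (\<lambda>n. F N * (Xo^^N) G n) H n)" .
  have "Lop (\<lambda>n. F N * (Xo^^N) G n) H = (\<lambda>n. F N * Lop ((Xo^^N) G) H n)"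
    by (rule Lop_lmult1[OF bser_Xopow[OF assms(2)] assms(3)])
  also have "\<dots> = (\<lambda>n. F N * (Xo^^N) (Lop G H) n)" by (simp add: Lop_Xopow[OF assms(2,3)])
  finally have e2: "Lop (\<lambda>n. F N * (Xo^^N) G n) H = (\<lambda>n. F N * (Xo^^N) (Lop G H) n)" .
  show ?case unfolding e e2 Suc.IH unfolding Tr_def by simp
qed

lemma Lop_assoc: assumes F: "bser F" and G: "bser G" and H: "bser H"
  shows "Lop (Lop F G) H = Lop F (Lop G H)"
proof -
  obtain b where b: "sge G b" using bser_sge[OF G] by blast
  obtain c where c: "sge H c" using bser_sge[OF H] by blast
  have GH: "bser (Lop G H)" using bser_Lop[OF G H] .
  have bGH: "sge (Lop G H) (b + c)" using sge_Lop[OF b c G H] .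
  have "sge (\<lambda>n. Lop (Lop F G) H n - Lop F (Lop G H) n) r" for r
  proof -
    obtain N where N: "tsge N F (r - b - c)" using F unfolding bser_def by blast
    have 1: "sge (\<lambda>n. Lop F G n - Tr N F G n) (r - b - c + b)" by (rule Lop_tail[OF N b F G])
    have 2: "sge (Lop (\<lambda>n. Lop F G n - Tr N F G n) H) (r - b - c + b + c)"
      by (rule sge_Lop[OF 1 c bser_diff[OF bser_Lop[OF F G] bser_Tr[OF F G]] H])
    have eq: "Lop (\<lambda>n. Lop F G n - Tr N F G n) H = (\<lambda>n. Lop (Lop F G) H n - Tr N F (Lop G H) n)"
      by (simp only: Lop_diff1[OF bser_Lop[OF F G] bser_Tr[OF F G] H] Lop_Tr[OF F G H])
    have rr: "r - b - c + b + c = r" by simp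
    have h2: "sge (\<lambda>n. Lop (Lop F G) H n - Tr N F (Lop G H) n) r" using 2 unfolding eq rr .
    have 3: "sge (\<lambda>n. Lop F (Lop G H) n - Tr N F (Lop G H) n) (r - b - c + (b + c))"
      by (rule Lop_tail[OF N bGH F GH])
    have rr2: "r - b - c + (b + c) = r" by simp
    have "sge (\<lambda>n. (Lop (Lop F G) H n - Tr N F (Lop G H) n) - (Lop F (Lop G H) n - Tr N F (Lop G H) n)) r"
      by (rule sge_diff[OF h2 3[unfolded rr2]])
    moreover have "(\<lambda>n. (Lop (Lop F G) H n - Tr N F (Lop G H) n) - (Lop F (Lop G H) n - Tr N F (Lop G H) n))
       = (\<lambda>n. Lop (Lop F G) H n - Lop F (Lop G H) n)" by (rule ext) (simp add: algebra_simps)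
    ultimately show ?thesis by simp
  qed
  then have "\<forall>r. sge (\<lambda>n. Lop (Lop F G) H n - Lop F (Lop G H) n) r" by blast
  then have "\<forall>n. Lop (Lop F G) H n - Lop F (Lop G H) n = 0" by (rule iffD1[OF sge_zero_iff])
  then show ?thesis by (simp add: fun_eq_iff)
qed

end

lemma BRing_simps[simp]: "carrier (BRing u mul) = bseries u" "mult (BRing u mul) = mul"
  "one (BRing u mul) = const_s 1" "zero (BRing u mul) = (\<lambda>n. 0)" "add (BRing u mul) = s_add"
  by (simp_all add: BRing_def)

lemma ereal_le_add_iff: "ereal r \<le> x + ereal c \<longleftrightarrow> ereal (r - c) \<le> x"
  by (cases x) auto

context skctx begin

lemma vge_shift: "vge x (r - c) \<longleftrightarrow> ereal r \<le> u x + ereal c"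
  unfolding vge_def by (simp add: ereal_le_add_iff)

lemma bseries_iff: "F \<in> bseries u \<longleftrightarrow> bser F"
proof
  assume "F \<in> bseries u"
  then have a: "\<forall>r. \<exists>N. \<forall>n\<ge>N. ereal r < u (F n) + ereal (real n / 2)"
    unfolding bseries_def tendsto_PInfty eventually_sequentially by simp
  show "bser F" unfolding bser_def tsge_def
  proof
    fix r obtain N where "\<forall>n\<ge>N. ereal r < u (F n) + ereal (real n / 2)" using a by blast
    then have "\<forall>n\<ge>N. vge (F n) (r - real n / 2)" unfolding vge_shift using less_imp_le by blast
    then show "\<exists>N. \<forall>i\<ge>N. vge (F i) (r - real i / 2)" by blast
  qed
next
  assume b: "bser F"
  have "\<exists>N. \<forall>n\<ge>N. ereal r < u (F n) + ereal (real n / 2)" for r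
  proof -
    obtain N where "tsge N F (r + 1)" using b bser_def by blast
    then have "\<forall>n\<ge>N. ereal (r + 1) \<le> u (F n) + ereal (real n / 2)"
      unfolding tsge_def vge_shift by blast
    moreover have "ereal r < ereal (r + 1)" by simp
    ultimately show ?thesis using less_le_trans by blast
  qed
  then show "F \<in> bseries u"
    unfolding bseries_def tendsto_PInfty eventually_sequentially by simp
qed

lemma f_u_ge: "ereal r \<le> f_u u F \<longleftrightarrow> sge F r"
  unfolding f_u_def le_INF_iff sge_def vge_shift by simp

lemma s_conv_iff: "s_conv u Fs F \<longleftrightarrow> (\<forall>r. \<exists>N. \<forall>k\<ge>N. sge (\<lambda>n. Fs k n - F n) r)"
proof
  assume "s_conv u Fs F"
  then have a: "\<forall>r. \<exists>N. \<forall>k\<ge>N. ereal r < f_u u (\<lambda>n. Fs k n - F n)"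
    unfolding s_conv_def tendsto_PInfty eventually_sequentially by simp
  show "\<forall>r. \<exists>N. \<forall>k\<ge>N. sge (\<lambda>n. Fs k n - F n) r"
    using a less_imp_le f_u_ge by metis
next
  assume a: "\<forall>r. \<exists>N. \<forall>k\<ge>N. sge (\<lambda>n. Fs k n - F n) r"
  have "\<exists>N. \<forall>k\<ge>N. ereal r < f_u u (\<lambda>n. Fs k n - F n)" for r
  proof -
    obtain N where "\<forall>k\<ge>N. sge (\<lambda>n. Fs k n - F n) (r + 1)" using a by blast
    then have "\<forall>k\<ge>N. ereal (r + 1) \<le> f_u u (\<lambda>n. Fs k n - F n)" using f_u_ge by blast
    moreover have "ereal r < ereal (r + 1)" by simp
    ultimately show ?thesis using less_le_trans by blast
  qed
  then show "s_conv u Fs F" unfolding s_conv_def tendsto_PInfty eventually_sequentially by simp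
qed

lemma s_conv_unique: "s_conv u Fs A \<Longrightarrow> s_conv u Fs B \<Longrightarrow> A = B"
proof -
  assume a: "s_conv u Fs A" "s_conv u Fs B"
  have "sge (\<lambda>n. B n - A n) r" for r
  proof -
    obtain N1 where N1: "\<forall>k\<ge>N1. sge (\<lambda>n. Fs k n - A n) r" using a(1) s_conv_iff by blast
    obtain N2 where N2: "\<forall>k\<ge>N2. sge (\<lambda>n. Fs k n - B n) r" using a(2) s_conv_iff by blast
    have "sge (\<lambda>n. (Fs (max N1 N2) n - A n) - (Fs (max N1 N2) n - B n)) r"
      by (rule sge_diff) (use N1 N2 in auto)
    then show ?thesis by simp
  qed
  then have "\<forall>r. sge (\<lambda>n. B n - A n) r" by blast
  then have "\<forall>n. B n - A n = 0" by (rule iffD1[OF sge_zero_iff])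
  then show ?thesis by (simp add: fun_eq_iff)
qed

lemma bser_const: "bser (const_s a)" by (rule bser_fin[of 1]) (simp add: const_s_def)
lemma bser_xpow: "bser (xpow k)" by (rule bser_fin[of "Suc k"]) (simp add: xpow_def)

lemma ring_Lop: "ring (BRing u Lop)"
proof (rule ringI)
  show "abelian_group (BRing u Lop)"
    apply (rule abelian_groupI)
         apply (simp_all add: bseries_iff s_add_def bser_add add_ac)
    subgoal for x by (rule bexI[of _ "\<lambda>n. - x n"]) (simp_all add: bser_neg bseries_iff)
    done
next
  show "monoid (BRing u Lop)"
    apply (rule monoidI)
        apply (simp_all add: bseries_iff bser_Lop bser_const Lop_assoc Lop_const)
    subgoal for x using Lop_one2[of x] by (simp add: xpow_0)
    done
next
  fix x y z assume "x \<in> carrier (BRing u Lop)" "y \<in> carrier (BRing u Lop)" "z \<in> carrier (BRing u Lop)"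
  then have b: "bser x" "bser y" "bser z" by (simp_all add: bseries_iff)
  show "(x \<oplus>\<^bsub>BRing u Lop\<^esub> y) \<otimes>\<^bsub>BRing u Lop\<^esub> z =
     x \<otimes>\<^bsub>BRing u Lop\<^esub> z \<oplus>\<^bsub>BRing u Lop\<^esub> y \<otimes>\<^bsub>BRing u Lop\<^esub> z"
    using b by (simp add: s_add_def Lop_add1)
  show "z \<otimes>\<^bsub>BRing u Lop\<^esub> (x \<oplus>\<^bsub>BRing u Lop\<^esub> y) =
     z \<otimes>\<^bsub>BRing u Lop\<^esub> x \<oplus>\<^bsub>BRing u Lop\<^esub> z \<otimes>\<^bsub>BRing u Lop\<^esub> y"
    using b by (simp add: s_add_def Lop_add2)
qed

lemma Lop_cont:
  assumes Fs: "\<forall>k. bser (Fs k)" and Gs: "\<forall>k. bser (Gs k)" and F: "bser F" and G: "bser G"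
    and cF: "s_conv u Fs F" and cG: "s_conv u Gs G"
  shows "s_conv u (\<lambda>k. Lop (Fs k) (Gs k)) (Lop F G)"
  unfolding s_conv_iff
proof
  fix r
  obtain bF where bF: "sge F bF" using bser_sge[OF F] by blast
  obtain bG where bG: "sge G bG" using bser_sge[OF G] by blast
  obtain N0 where N0: "\<forall>k\<ge>N0. sge (\<lambda>n. Gs k n - G n) 0" using cG s_conv_iff by blast
  define c where "c = min 0 bG"
  obtain N1 where N1: "\<forall>k\<ge>N1. sge (\<lambda>n. Fs k n - F n) (r - c)" using cF s_conv_iff by blast
  obtain N2 where N2: "\<forall>k\<ge>N2. sge (\<lambda>n. Gs k n - G n) (r - bF)" using cG s_conv_iff by blast
  have "sge (\<lambda>n. Lop (Fs k) (Gs k) n - Lop F G n) r" if k: "k \<ge> max N0 (max N1 N2)" for k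
  proof -
    have gk: "sge (Gs k) c"
    proof -
      have "sge (\<lambda>n. (Gs k n - G n) + G n) c"
        using N0 k bG by (intro sge_add) (auto simp: c_def intro: sge_mono)
      then show ?thesis by simp
    qed
    have 1: "sge (Lop (\<lambda>n. Fs k n - F n) (Gs k)) (r - c + c)"
      by (rule sge_Lop[OF _ gk]) (use N1 k Fs Gs F bser_diff in auto)
    have 2: "sge (Lop F (\<lambda>n. Gs k n - G n)) (bF + (r - bF))"
      by (rule sge_Lop[OF bF]) (use N2 k Gs G F bser_diff in auto)
    have e1: "Lop (\<lambda>n. Fs k n - F n) (Gs k) = (\<lambda>n. Lop (Fs k) (Gs k) n - Lop F (Gs k) n)"
      by (rule Lop_diff1) (use Fs Gs F in auto)
    have e2: "Lop F (\<lambda>n. Gs k n - G n) = (\<lambda>n. Lop F (Gs k) n - Lop F G n)"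
      by (rule Lop_diff2) (use Fs Gs G F in auto)
    have "sge (\<lambda>n. (Lop (Fs k) (Gs k) n - Lop F (Gs k) n) + (Lop F (Gs k) n - Lop F G n)) r"
      using 1 2 unfolding e1 e2 by (intro sge_add) auto
    then show ?thesis by simp
  qed
  then show "\<exists>N. \<forall>k\<ge>N. sge (\<lambda>n. Lop (Fs k) (Gs k) n - Lop F G n) r" by blast
qed

lemma Xo_const: "Xo (const_s a) = s_add (lsmult (\<sigma> a) (xpow 1)) (const_s (\<delta> a))"
  by (rule ext) (auto simp: Xo_def const_s_def xpow_def s_add_def lsmult_def split: nat.split)

lemma Lop_ok: "skew_mult_ok u \<sigma> \<delta> Lop"
  unfolding skew_mult_ok_def
proof (intro conjI allI ballI impI)
  show "ring (BRing u Lop)" by (rule ring_Lop)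
next
  fix a F G assume "F \<in> bseries u" "G \<in> bseries u"
  then show "Lop (lsmult a F) G = lsmult a (Lop F G)"
    unfolding lsmult_def bseries_iff by (rule Lop_lmult1)
next
  fix a F show "Lop (const_s a) F = lsmult a F" by (simp add: Lop_const lsmult_def)
next
  fix a show "Lop (xpow 1) (const_s a) = s_add (lsmult (\<sigma> a) (xpow 1)) (const_s (\<delta> a))"
    by (simp add: Lop_xpow Xo_const)
next
  fix n show "Lop (xpow n) (xpow 1) = xpow (Suc n)" by (simp add: Lop_xpow Xopow_xpow)
next
  fix Fs Gs F G
  assume "\<forall>k. Fs k \<in> bseries u" "\<forall>k. Gs k \<in> bseries u" "F \<in> bseries u" "G \<in> bseries u"
    "s_conv u Fs F" "s_conv u Gs G"
  then show "s_conv u (\<lambda>k. Lop (Fs k) (Gs k)) (Lop F G)"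
    unfolding bseries_iff by (intro Lop_cont) auto
qed

end

lemma ereal_sum_le:
  fixes x y z :: ereal
  assumes "x \<noteq> -\<infinity>" "y \<noteq> -\<infinity>" "\<And>a b. ereal a \<le> x \<Longrightarrow> ereal b \<le> y \<Longrightarrow> ereal (a + b) \<le> z"
  shows "x + y \<le> z"
proof -
  obtain a0 where a0: "ereal a0 \<le> x" using assms(1) by (cases x) auto
  obtain b0 where b0: "ereal b0 \<le> y" using assms(2) by (cases y) auto
  show ?thesis
  proof (cases "x = \<infinity> \<or> y = \<infinity>")
    case True
    have "ereal B \<le> z" for B
    proof (cases "x = \<infinity>")
      case True
      then have "ereal (B - b0) \<le> x" by simp
      from assms(3)[OF this b0] show ?thesis by simp
    next
      case False
      then have "y = \<infinity>" using \<open>x = \<infinity> \<or> y = \<infinity>\<close> by simp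
      then have "ereal (B - a0) \<le> y" by simp
      from assms(3)[OF a0 this] show ?thesis by simp
    qed
    then have "z = \<infinity>" using ereal_top by blast
    then show ?thesis by simp
  next
    case False
    then obtain a b where "x = ereal a" "y = ereal b" using assms(1,2) by (cases x; cases y) auto
    then show ?thesis using assms(3)[of a b] by simp
  qed
qed

context skctx begin

definition trunc :: "nat \<Rightarrow> (nat \<Rightarrow> 'a) \<Rightarrow> nat \<Rightarrow> 'a" where
  "trunc N G = (\<lambda>n. if n < N then G n else 0)"

lemma trunc_Suc: "trunc (Suc N) G = s_add (trunc N G) (lsmult (G N) (xpow N))"
  by (rule ext) (auto simp: trunc_def s_add_def lsmult_def xpow_def less_Suc_eq)
lemma trunc_0: "trunc 0 G = (\<lambda>n. 0)" by (simp add: trunc_def)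
lemma bser_trunc: "bser (trunc N G)" by (rule bser_fin[of N]) (simp add: trunc_def)
lemma bser_lsmult: "bser F \<Longrightarrow> bser (lsmult a F)" unfolding lsmult_def by (rule bser_lmult)

lemma trunc_conv: assumes "bser G" shows "s_conv u (\<lambda>k. trunc k G) G"
  unfolding s_conv_iff
proof
  fix r obtain N where N: "tsge N G r" using assms bser_def by blast
  have "sge (\<lambda>n. trunc k G n - G n) r" if "k \<ge> N" for k
    unfolding sge_def trunc_def using N that unfolding tsge_def by auto
  then show "\<exists>N. \<forall>k\<ge>N. sge (\<lambda>n. trunc k G n - G n) r" by blast
qed

lemma Tr_conv: assumes "bser F" "bser G" shows "s_conv u (\<lambda>k. Tr k F G) (Lop F G)"
  unfolding s_conv_iff
proof
  fix r
  obtain b where b: "sge G b" using bser_sge[OF assms(2)] by blast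
  obtain N where N: "tsge N F (r - b)" using assms(1) bser_def by blast
  have "sge (\<lambda>n. Tr k F G n - Lop F G n) r" if "k \<ge> N" for k
  proof -
    have "sge (\<lambda>n. Lop F G n - Tr k F G n) (r - b + b)"
      by (rule Lop_tail[OF _ b assms]) (use N that tsge_mono in blast)
    then show ?thesis using sge_neg[of "\<lambda>n. Lop F G n - Tr k F G n" r] by simp
  qed
  then show "\<exists>N. \<forall>k\<ge>N. sge (\<lambda>n. Tr k F G n - Lop F G n) r" by blast
qed

lemma Xo_conv: assumes "s_conv u Gs G" shows "s_conv u (\<lambda>k. Xo (Gs k)) (Xo G)"
  unfolding s_conv_iff
proof
  fix r obtain N where N: "\<forall>k\<ge>N. sge (\<lambda>n. Gs k n - G n) r" using assms s_conv_iff by blast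
  have "sge (\<lambda>n. Xo (Gs k) n - Xo G n) r" if "k \<ge> N" for k
  proof -
    have "sge (Xo (\<lambda>n. Gs k n - G n)) (r + 1/2)" by (rule sge_Xo) (use N that in blast)
    then show ?thesis by (simp add: Xo_diff sge_mono)
  qed
  then show "\<exists>N. \<forall>k\<ge>N. sge (\<lambda>n. Xo (Gs k) n - Xo G n) r" by blast
qed

lemma s_conv_const: "s_conv u (\<lambda>k. G) G" unfolding s_conv_iff by simp

declare One_nat_def [simp del]

lemma ok_eq_Lop:
  assumes ok: "skew_mult_ok u \<sigma> \<delta> mul" and F: "bser F" and G: "bser G"
  shows "mul F G = Lop F G"
proof -
  have bs: "bseries u = {F. bser F}" by (auto simp: bseries_iff)
  have R: "ring (BRing u mul)" using ok skew_mult_ok_def by blast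
  interpret R: ring "BRing u mul" by (rule R)
  have lsm: "\<And>a F G. bser F \<Longrightarrow> bser G \<Longrightarrow> mul (lsmult a F) G = lsmult a (mul F G)"
    using ok unfolding skew_mult_ok_def bs by blast
  have cst: "\<And>a F. bser F \<Longrightarrow> mul (const_s a) F = lsmult a F"
    using ok unfolding skew_mult_ok_def bs by blast
  have xa: "\<And>a. mul (xpow 1) (const_s a) = s_add (lsmult (\<sigma> a) (xpow 1)) (const_s (\<delta> a))"
    using ok unfolding skew_mult_ok_def by blast
  have xx: "\<And>n. mul (xpow n) (xpow 1) = xpow (Suc n)"
    using ok unfolding skew_mult_ok_def by blast
  have cont: "\<And>Fs Gs F G. (\<forall>k. bser (Fs k)) \<Longrightarrow> (\<forall>k. bser (Gs k)) \<Longrightarrow> bser F \<Longrightarrow> bser G \<Longrightarrow>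
      s_conv u Fs F \<Longrightarrow> s_conv u Gs G \<Longrightarrow> s_conv u (\<lambda>k. mul (Fs k) (Gs k)) (mul F G)"
    using ok unfolding skew_mult_ok_def bs by blast
  have closed: "\<And>x y. bser x \<Longrightarrow> bser y \<Longrightarrow> bser (mul x y)"
    using R.m_closed by (simp add: bseries_iff)
  have assoc: "\<And>x y z. bser x \<Longrightarrow> bser y \<Longrightarrow> bser z \<Longrightarrow> mul (mul x y) z = mul x (mul y z)"
    using R.m_assoc by (simp add: bseries_iff)
  have ldistr: "\<And>x y z. bser x \<Longrightarrow> bser y \<Longrightarrow> bser z \<Longrightarrow> mul (s_add x y) z = s_add (mul x z) (mul y z)"
    using R.l_distr by (simp add: bseries_iff)
  have rdistr: "\<And>x y z. bser x \<Longrightarrow> bser y \<Longrightarrow> bser z \<Longrightarrow> mul z (s_add x y) = s_add (mul z x) (mul z y)"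
    using R.r_distr by (simp add: bseries_iff)
  have rone: "\<And>x. bser x \<Longrightarrow> mul x (xpow 0) = x"
    using R.r_one by (simp add: bseries_iff xpow_0)
  have lone: "\<And>x. bser x \<Longrightarrow> mul (xpow 0) x = x"
    using R.l_one by (simp add: bseries_iff xpow_0)
  have lnull: "\<And>x. bser x \<Longrightarrow> mul (\<lambda>n. 0) x = (\<lambda>n. 0)"
    using R.l_null by (simp add: bseries_iff)
  have bx: "\<And>k. bser (xpow k)" by (rule bser_xpow)
  have U1: "mul (xpow 1) (xpow k) = xpow (Suc k)" for k
  proof (induction k)
    case 0 then show ?case using rone[OF bx] by (simp add: One_nat_def)
  next
    case (Suc k)
    have "mul (xpow 1) (xpow (Suc k)) = mul (xpow 1) (mul (xpow k) (xpow 1))" by (simp only: xx)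
    also have "\<dots> = mul (mul (xpow 1) (xpow k)) (xpow 1)" by (simp add: assoc bx)
    also have "\<dots> = xpow (Suc (Suc k))" by (simp only: Suc.IH xx)
    finally show ?case .
  qed
  have U2: "mul (xpow 1) (lsmult a (xpow k)) = Xo (lsmult a (xpow k))" for a k
  proof -
    have "mul (xpow 1) (lsmult a (xpow k)) = mul (xpow 1) (mul (const_s a) (xpow k))"
      by (simp add: cst bx)
    also have "\<dots> = mul (mul (xpow 1) (const_s a)) (xpow k)" by (simp add: assoc bx bser_const)
    also have "\<dots> = s_add (mul (lsmult (\<sigma> a) (xpow 1)) (xpow k)) (mul (const_s (\<delta> a)) (xpow k))"
      unfolding xa by (rule ldistr) (simp_all add: bx bser_lsmult bser_const)
    also have "\<dots> = s_add (lsmult (\<sigma> a) (xpow (Suc k))) (lsmult (\<delta> a) (xpow k))"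
      by (simp add: lsm cst bx U1)
    also have "\<dots> = Xo (lsmult a (xpow k))"
      unfolding lsmult_def s_add_def Xo_lmult Xo_xpow by simp
    finally show ?thesis .
  qed
  have U3: "mul (xpow 1) (trunc N G) = Xo (trunc N G)" for N G
  proof (induction N)
    case 0 then show ?case using R.r_null[of "xpow 1"] by (simp add: trunc_0 bseries_iff bx)
  next
    case (Suc N)
    have "mul (xpow 1) (trunc (Suc N) G) =
        s_add (mul (xpow 1) (trunc N G)) (mul (xpow 1) (lsmult (G N) (xpow N)))"
      unfolding trunc_Suc by (rule rdistr) (simp_all add: bser_trunc bser_lsmult bx)
    also have "\<dots> = s_add (Xo (trunc N G)) (Xo (lsmult (G N) (xpow N)))" by (simp add: Suc U2)
    also have "\<dots> = Xo (trunc (Suc N) G)" unfolding trunc_Suc s_add_def by (simp add: Xo_add)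
    finally show ?case .
  qed
  have U4: "mul (xpow 1) G = Xo G" if G: "bser G" for G
  proof -
    have "s_conv u (\<lambda>k. mul (xpow 1) (trunc k G)) (mul (xpow 1) G)"
      by (rule cont) (simp_all add: bx bser_trunc G s_conv_const trunc_conv)
    moreover have "s_conv u (\<lambda>k. mul (xpow 1) (trunc k G)) (Xo G)"
      unfolding U3 by (rule Xo_conv[OF trunc_conv[OF G]])
    ultimately show ?thesis by (rule s_conv_unique)
  qed
  have U5: "mul (xpow n) G = (Xo^^n) G" if G: "bser G" for n G
    using G
  proof (induction n arbitrary: G)
    case 0 then show ?case using lone by simp
  next
    case (Suc n)
    have "mul (xpow (Suc n)) G = mul (mul (xpow n) (xpow 1)) G" by (simp only: xx)
    also have "\<dots> = mul (xpow n) (mul (xpow 1) G)" by (simp add: assoc bx Suc.prems)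
    also have "\<dots> = mul (xpow n) (Xo G)" by (simp add: U4 Suc.prems)
    also have "\<dots> = (Xo^^n) (Xo G)" by (rule Suc.IH) (rule bser_Xo[OF Suc.prems])
    finally show ?case by (simp only: funpow_Suc_right o_def)
  qed
  have U6: "mul (trunc N F) G = Tr N F G" for N
  proof (induction N)
    case 0 then show ?case by (simp add: trunc_0 lnull G Tr_def)
  next
    case (Suc N)
    have "mul (trunc (Suc N) F) G = s_add (mul (trunc N F) G) (mul (lsmult (F N) (xpow N)) G)"
      unfolding trunc_Suc by (rule ldistr) (simp_all add: bser_trunc bser_lsmult bx G)
    also have "\<dots> = s_add (Tr N F G) (lsmult (F N) ((Xo^^N) G))" by (simp add: Suc lsm bx G U5)
    also have "\<dots> = Tr (Suc N) F G" by (simp add: Tr_def s_add_def lsmult_def)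
    finally show ?case .
  qed
  have "s_conv u (\<lambda>k. mul (trunc k F) G) (mul F G)"
    by (rule cont) (simp_all add: bser_trunc F G s_conv_const trunc_conv)
  moreover have "s_conv u (\<lambda>k. mul (trunc k F) G) (Lop F G)"
    unfolding U6 by (rule Tr_conv[OF F G])
  ultimately show ?thesis by (rule s_conv_unique)
qed

declare One_nat_def [simp]

end

context skctx begin

lemma B_ainv: assumes "ring (BRing u mul)" "bser F" shows "\<ominus>\<^bsub>BRing u mul\<^esub> F = (\<lambda>n. - F n)"
proof -
  interpret R: ring "BRing u mul" by (rule assms(1))
  show ?thesis
    by (rule R.minus_equality) (use assms(2) in \<open>auto simp: s_add_def bseries_iff intro: bser_neg\<close>)
qed

lemma B_aminus: assumes "ring (BRing u mul)" "bser F" "bser G"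
  shows "F \<ominus>\<^bsub>BRing u mul\<^esub> G = (\<lambda>n. F n - G n)"
  unfolding a_minus_def B_ainv[OF assms(1,3)] by (simp add: s_add_def)

lemma f_u_zero: "f_u u (\<lambda>n. 0) = \<infinity>"
  unfolding f_u_def by (simp add: u0)

lemma f_u_neg: "f_u u (\<lambda>n. - F n) = f_u u F"
  unfolding f_u_def by (simp add: uneg)

lemma f_u_add: "min (f_u u F) (f_u u G) \<le> f_u u (\<lambda>n. F n + G n)"
  unfolding f_u_def
proof (rule INF_greatest)
  fix i :: nat
  have 1: "min (INF i. u (F i) + ereal (real i / 2)) (INF i. u (G i) + ereal (real i / 2))
      \<le> u (F i) + ereal (real i / 2)" by (meson INF_lower UNIV_I min.coboundedI1)
  have 2: "min (INF i. u (F i) + ereal (real i / 2)) (INF i. u (G i) + ereal (real i / 2))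
      \<le> u (G i) + ereal (real i / 2)" by (meson INF_lower UNIV_I min.coboundedI2)
  have "u (F i) \<le> u (F i + G i) \<or> u (G i) \<le> u (F i + G i)" using uadd[of "F i" "G i"]
    by (simp add: min_le_iff_disj)
  then show "min (INF i. u (F i) + ereal (real i / 2)) (INF i. u (G i) + ereal (real i / 2))
      \<le> u (F i + G i) + ereal (real i / 2)"
  proof
    assume "u (F i) \<le> u (F i + G i)"
    then have "u (F i) + ereal (real i / 2) \<le> u (F i + G i) + ereal (real i / 2)" by (rule add_right_mono)
    then show ?thesis using 1 by (rule order_trans[rotated])
  next
    assume "u (G i) \<le> u (F i + G i)"
    then have "u (G i) + ereal (real i / 2) \<le> u (F i + G i) + ereal (real i / 2)" by (rule add_right_mono)
    then show ?thesis using 2 by (rule order_trans[rotated])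
  qed
qed

lemma f_u_notminf: "bser F \<Longrightarrow> f_u u F \<noteq> -\<infinity>"
proof -
  assume "bser F"
  then obtain b where "sge F b" using bser_sge by blast
  then have "ereal b \<le> f_u u F" using f_u_ge by blast
  then show ?thesis by auto
qed

lemma f_u_mul: assumes "bser F" "bser G" shows "f_u u F + f_u u G \<le> f_u u (Lop F G)"
proof (rule ereal_sum_le[OF f_u_notminf[OF assms(1)] f_u_notminf[OF assms(2)]])
  fix a b assume "ereal a \<le> f_u u F" "ereal b \<le> f_u u G"
  then have "sge F a" "sge G b" using f_u_ge by blast+
  then have "sge (Lop F G) (a + b)" using sge_Lop assms by blast
  then show "ereal (a + b) \<le> f_u u (Lop F G)" using f_u_ge by blast
qed

lemma f_u_const: "f_u u (const_s a) = u a"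
proof (rule antisym)
  show "f_u u (const_s a) \<le> u a" unfolding f_u_def
    using INF_lower[of 0 UNIV "\<lambda>i. u (const_s a i) + ereal (real i / 2)"] by (simp add: const_s_def)
  show "u a \<le> f_u u (const_s a)" unfolding f_u_def
    by (rule INF_greatest) (auto simp: const_s_def u0)
qed

lemma f_u_values: assumes "bser F" shows "f_u u F = \<infinity> \<or> (\<exists>k::int. f_u u F = ereal (of_int k / 2))"
proof -
  define g where "g i = u (F i) + ereal (real i / 2)" for i
  have fg: "f_u u F = (INF i. g i)" unfolding f_u_def g_def by simp
  show ?thesis
  proof (cases "\<forall>i. g i = \<infinity>")
    case True then show ?thesis unfolding fg by simp
  next
    case False
    then obtain i0 where i0: "g i0 \<noteq> \<infinity>" by blast
    then obtain c where c: "g i0 = ereal c" using uint[of "F i0"] unfolding g_def by auto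
    obtain M where M: "tsge M F (c + 1)" using assms bser_def by blast
    define M' where "M' = max M (Suc i0)"
    define m where "m = Min (g ` {..<M'})"
    have i0M: "i0 \<in> {..<M'}" by (simp add: M'_def)
    have fin: "finite (g ` {..<M'})" "g ` {..<M'} \<noteq> {}" using i0M by auto
    have "m \<in> g ` {..<M'}" unfolding m_def using Min_in[OF fin] .
    then obtain j where j: "m = g j" by blast
    have le: "m \<le> g i" for i
    proof (cases "i < M'")
      case True then show ?thesis unfolding m_def using fin by (auto intro: Min_le)
    next
      case False
      then have "vge (F i) (c + 1 - real i / 2)" using M unfolding tsge_def M'_def by auto
      then have "ereal (c + 1) \<le> g i" unfolding g_def vge_shift .
      moreover have "m \<le> g i0" unfolding m_def using fin i0M by (auto intro: Min_le)
      moreover have "g i0 \<le> ereal (c + 1)" using c by simp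
      ultimately show ?thesis by (meson order_trans)
    qed
    have "f_u u F = m" unfolding fg
    proof (rule antisym)
      show "(INF i. g i) \<le> m" unfolding j by (rule INF_lower) simp
      show "m \<le> (INF i. g i)" by (rule INF_greatest) (rule le)
    qed
    then have fe: "f_u u F = u (F j) + ereal (real j / 2)" using j g_def by simp
    show ?thesis
    proof (cases "u (F j) = \<infinity>")
      case True then show ?thesis using fe by simp
    next
      case False
      then obtain k :: int where k: "u (F j) = ereal (of_int k)" using uint by blast
      have "f_u u F = ereal (of_int (2 * k + int j) / 2)" using fe k by (simp add: field_simps)
      then show ?thesis by blast
    qed
  qed
qed

lemma filt_B: assumes R: "ring (BRing u mul)" and eq: "\<And>F G. bser F \<Longrightarrow> bser G \<Longrightarrow> mul F G = Lop F G"
  shows "is_filtration (BRing u mul) (f_u u)"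
  unfolding is_filtration_def
proof (intro conjI ballI)
  show "f_u u \<zero>\<^bsub>BRing u mul\<^esub> = \<infinity>" by (simp add: f_u_zero)
next
  fix x y assume "x \<in> carrier (BRing u mul)" "y \<in> carrier (BRing u mul)"
  then show "min (f_u u x) (f_u u y) \<le> f_u u (x \<oplus>\<^bsub>BRing u mul\<^esub> y)"
    using f_u_add by (simp add: s_add_def)
next
  fix x y assume "x \<in> carrier (BRing u mul)" "y \<in> carrier (BRing u mul)"
  then have "bser x" "bser y" by (simp_all add: bseries_iff)
  then show "f_u u x + f_u u y \<le> f_u u (x \<otimes>\<^bsub>BRing u mul\<^esub> y)"
    using f_u_mul eq by simp
next
  fix x assume "x \<in> carrier (BRing u mul)"
  then have "bser x" by (simp add: bseries_iff)
  then show "f_u u (\<ominus>\<^bsub>BRing u mul\<^esub> x) = f_u u x" using B_ainv[OF R] f_u_neg by simp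
qed

lemma compl_B: assumes R: "ring (BRing u mul)" shows "filt_complete (BRing u mul) (f_u u)"
  unfolding filt_complete_def
proof (intro allI impI)
  fix s assume rs: "range s \<subseteq> carrier (BRing u mul)" and cs: "filt_cauchy (BRing u mul) (f_u u) s"
  have bs: "bser (s k)" for k
  proof -
    have "s k \<in> bseries u" using rs by auto
    then show ?thesis by (simp add: bseries_iff)
  qed
  have cau: "\<forall>r. \<exists>N. \<forall>m\<ge>N. \<forall>n\<ge>N. sge (\<lambda>i. s m i - s n i) r"
    using cs unfolding filt_cauchy_def B_aminus[OF R bs bs] f_u_ge by blast
  have "\<exists>l. conv (\<lambda>m. s m i) l" for i
    unfolding conv_def
  proof (rule ucompl[of "\<lambda>m. s m i", unfolded vge_def[symmetric]], intro allI)
    fix r obtain N where N: "\<forall>m\<ge>N. \<forall>n\<ge>N. sge (\<lambda>i. s m i - s n i) (r + real i / 2)" using cau by blast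
    show "\<exists>N. \<forall>m\<ge>N. \<forall>n\<ge>N. vge (s m i - s n i) r"
      using N unfolding sge_def by (metis add_diff_cancel_right')
  qed
  then obtain l where l: "\<And>i. conv (\<lambda>m. s m i) (l i)" by metis
  have near: "\<forall>r. \<exists>N. \<forall>m\<ge>N. sge (\<lambda>i. s m i - l i) r"
  proof
    fix r obtain N where N: "\<forall>m\<ge>N. \<forall>n\<ge>N. sge (\<lambda>i. s m i - s n i) r" using cau by blast
    have "sge (\<lambda>i. s m i - l i) r" if m: "m \<ge> N" for m
      unfolding sge_def
    proof
      fix i
      have "conv (\<lambda>n. s m i - s n i) (s m i - l i)" by (rule conv_diff[OF conv_const l])
      then show "vge (s m i - l i) (r - real i / 2)"
        by (rule conv_closed[of _ _ N]) (use N m in \<open>auto simp: sge_def\<close>)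
    qed
    then show "\<exists>N. \<forall>m\<ge>N. sge (\<lambda>i. s m i - l i) r" by blast
  qed
  have bl: "bser l"
  proof (rule bser_approx)
    fix r obtain N where N: "\<forall>m\<ge>N. sge (\<lambda>i. s m i - l i) r" using near by blast
    then have "sge (\<lambda>i. s N i - l i) r" by blast
    then have "sge (\<lambda>i. l i - s N i) r" using sge_neg[of "\<lambda>i. s N i - l i" r] by simp
    then show "\<exists>H. bser H \<and> sge (\<lambda>n. l n - H n) r" using bs by auto
  qed
  show "\<exists>l\<in>carrier (BRing u mul). filt_converges (BRing u mul) (f_u u) s l"
  proof (intro bexI)
    show "l \<in> carrier (BRing u mul)" using bl by (simp add: bseries_iff)
    show "filt_converges (BRing u mul) (f_u u) s l"
      unfolding filt_converges_def B_aminus[OF R bs bl] tendsto_PInfty eventually_sequentially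
    proof
      fix r obtain N where N: "\<forall>m\<ge>N. sge (\<lambda>i. s m i - l i) (r + 1)" using near by blast
      have "ereal r < f_u u (\<lambda>i. s m i - l i)" if "m \<ge> N" for m
      proof -
        have "ereal (r + 1) \<le> f_u u (\<lambda>i. s m i - l i)" using N that f_u_ge by blast
        then show ?thesis by (rule less_le_trans[rotated]) simp
      qed
      then show "\<exists>N. \<forall>n\<ge>N. ereal r < f_u u (\<lambda>i. s n i - l i)" by blast
    qed
  qed
qed

end

lemma ereal_add_strict: "ereal a < x \<Longrightarrow> ereal b \<le> y \<Longrightarrow> ereal (a + b) < x + y"
  by (cases x; cases y) auto

context
  fixes A :: "('a, 'm) ring_scheme" (structure) and v :: "'a \<Rightarrow> ereal"
  assumes R: "ring A" and Fv: "is_filtration A v"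
begin

interpretation ring A by (rule R)

lemma v0: "v \<zero> = \<infinity>" using Fv unfolding is_filtration_def by blast
lemma vadd: "x \<in> carrier A \<Longrightarrow> y \<in> carrier A \<Longrightarrow> min (v x) (v y) \<le> v (x \<oplus> y)"
  using Fv unfolding is_filtration_def by blast
lemma vmul: "x \<in> carrier A \<Longrightarrow> y \<in> carrier A \<Longrightarrow> v x + v y \<le> v (x \<otimes> y)"
  using Fv unfolding is_filtration_def by blast
lemma vneg: "x \<in> carrier A \<Longrightarrow> v (\<ominus> x) = v x"
  using Fv unfolding is_filtration_def by blast

lemma Fp_sub: "Fil_plus A v lam \<subseteq> carrier A" unfolding Fil_plus_def by auto
lemma Fp_zero: "\<zero> \<in> Fil_plus A v lam" unfolding Fil_plus_def by (simp add: v0)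
lemma Fp_add: "x \<in> Fil_plus A v lam \<Longrightarrow> y \<in> Fil_plus A v lam \<Longrightarrow> x \<oplus> y \<in> Fil_plus A v lam"
  unfolding Fil_plus_def
proof (clarsimp)
  assume "x \<in> carrier A" "ereal lam < v x" "y \<in> carrier A" "ereal lam < v y"
  then have "ereal lam < min (v x) (v y)" by simp
  then show "ereal lam < v (x \<oplus> y)" by (rule less_le_trans) (rule vadd; fact)
qed
lemma Fp_neg: "x \<in> Fil_plus A v lam \<Longrightarrow> \<ominus> x \<in> Fil_plus A v lam"
  unfolding Fil_plus_def by (simp add: vneg)
lemma Fp_diff: "x \<in> Fil_plus A v lam \<Longrightarrow> y \<in> Fil_plus A v lam \<Longrightarrow> x \<ominus> y \<in> Fil_plus A v lam"
  unfolding a_minus_def by (intro Fp_add Fp_neg)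
lemma Fp_Fil: "Fil_plus A v lam \<subseteq> Fil A v lam"
  unfolding Fil_plus_def Fil_def by auto
lemma Fil_sub: "Fil A v lam \<subseteq> carrier A" unfolding Fil_def by auto
lemma Fil_zero: "\<zero> \<in> Fil A v lam" unfolding Fil_def by (simp add: v0)
lemma Fil_add: "x \<in> Fil A v lam \<Longrightarrow> y \<in> Fil A v lam \<Longrightarrow> x \<oplus> y \<in> Fil A v lam"
  unfolding Fil_def
proof (clarsimp)
  assume "x \<in> carrier A" "ereal lam \<le> v x" "y \<in> carrier A" "ereal lam \<le> v y"
  then have "ereal lam \<le> min (v x) (v y)" by simp
  then show "ereal lam \<le> v (x \<oplus> y)" by (rule order_trans) (rule vadd; fact)
qed
lemma Fil_neg: "x \<in> Fil A v lam \<Longrightarrow> \<ominus> x \<in> Fil A v lam"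
  unfolding Fil_def by (simp add: vneg)
lemma Fil_diff: "x \<in> Fil A v lam \<Longrightarrow> y \<in> Fil A v lam \<Longrightarrow> x \<ominus> y \<in> Fil A v lam"
  unfolding a_minus_def by (intro Fil_add Fil_neg)

lemma Fp_mul1: assumes "x \<in> Fil_plus A v a" "y \<in> Fil A v b" shows "x \<otimes> y \<in> Fil_plus A v (a + b)"
proof -
  have c: "x \<in> carrier A" "y \<in> carrier A" "ereal a < v x" "ereal b \<le> v y"
    using assms unfolding Fil_plus_def Fil_def by auto
  have "ereal (a + b) < v x + v y" by (rule ereal_add_strict) (use c in auto)
  also have "\<dots> \<le> v (x \<otimes> y)" by (rule vmul) (use c in auto)
  finally show ?thesis unfolding Fil_plus_def using c by simp
qed
lemma Fp_mul2: assumes "x \<in> Fil A v a" "y \<in> Fil_plus A v b" shows "x \<otimes> y \<in> Fil_plus A v (a + b)"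
proof -
  have c: "x \<in> carrier A" "y \<in> carrier A" "ereal a \<le> v x" "ereal b < v y"
    using assms unfolding Fil_plus_def Fil_def by auto
  have "ereal (b + a) < v y + v x" by (rule ereal_add_strict) (use c in auto)
  then have "ereal (a + b) < v x + v y" by (simp add: add.commute)
  also have "\<dots> \<le> v (x \<otimes> y)" by (rule vmul) (use c in auto)
  finally show ?thesis unfolding Fil_plus_def using c by simp
qed
lemma Fil_mul: assumes "x \<in> Fil A v a" "y \<in> Fil A v b" shows "x \<otimes> y \<in> Fil A v (a + b)"
proof -
  have c: "x \<in> carrier A" "y \<in> carrier A" "ereal a \<le> v x" "ereal b \<le> v y"
    using assms unfolding Fil_def by auto
  have "ereal a + ereal b \<le> v x + v y" by (rule add_mono) (use c in auto)
  then have "ereal (a + b) \<le> v x + v y" by simp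
  also have "\<dots> \<le> v (x \<otimes> y)" by (rule vmul) (use c in auto)
  finally show ?thesis unfolding Fil_def using c by simp
qed

lemma Fp_finsum: "finite I \<Longrightarrow> f \<in> I \<rightarrow> Fil_plus A v lam \<Longrightarrow> finsum A f I \<in> Fil_plus A v lam"
proof (induction I rule: finite_induct)
  case empty then show ?case by (simp add: Fp_zero)
next
  case (insert x I)
  have c: "f \<in> I \<rightarrow> carrier A" "f x \<in> carrier A" using insert.prems Fp_sub by auto
  show ?case using insert by (simp add: finsum_insert[OF insert(1,2) c] Fp_add)
qed

lemma Fil_finsum: "finite I \<Longrightarrow> f \<in> I \<rightarrow> Fil A v lam \<Longrightarrow> finsum A f I \<in> Fil A v lam"
proof (induction I rule: finite_induct)
  case empty then show ?case by (simp add: Fil_zero)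
next
  case (insert x I)
  have c: "f \<in> I \<rightarrow> carrier A" "f x \<in> carrier A" using insert.prems Fil_sub by auto
  show ?case using insert by (simp add: finsum_insert[OF insert(1,2) c] Fil_add)
qed

lemma cls_mem: "r \<in> carrier A \<Longrightarrow> x \<in> gr_cls A v lam r \<longleftrightarrow> x \<in> carrier A \<and> x \<ominus> r \<in> Fil_plus A v lam"
proof
  assume r: "r \<in> carrier A" and "x \<in> gr_cls A v lam r"
  then obtain y where y: "y \<in> Fil_plus A v lam" "x = r \<oplus> y" unfolding gr_cls_def by blast
  have yc: "y \<in> carrier A" using y Fp_sub by auto
  have "x \<ominus> r = y" unfolding y(2) using r yc by algebra
  then show "x \<in> carrier A \<and> x \<ominus> r \<in> Fil_plus A v lam" using y r yc by auto
next
  assume r: "r \<in> carrier A" and x: "x \<in> carrier A \<and> x \<ominus> r \<in> Fil_plus A v lam"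
  have "x = r \<oplus> (x \<ominus> r)" using r x by algebra
  then show "x \<in> gr_cls A v lam r" unfolding gr_cls_def using x by blast
qed

lemma cls_eq: assumes "r \<in> carrier A" "s \<in> carrier A"
  shows "gr_cls A v lam r = gr_cls A v lam s \<longleftrightarrow> r \<ominus> s \<in> Fil_plus A v lam"
proof
  assume e: "gr_cls A v lam r = gr_cls A v lam s"
  have "r \<ominus> r = \<zero>" using assms by (simp add: a_minus_def r_neg)
  then have "r \<in> gr_cls A v lam r" using assms cls_mem[of r] Fp_zero by simp
  then show "r \<ominus> s \<in> Fil_plus A v lam" using e cls_mem[OF assms(2)] by simp
next
  assume d: "r \<ominus> s \<in> Fil_plus A v lam"
  have dc: "r \<ominus> s \<in> carrier A" using assms by simp
  show "gr_cls A v lam r = gr_cls A v lam s"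
  proof (rule Set.set_eqI)
    fix x
    show "x \<in> gr_cls A v lam r \<longleftrightarrow> x \<in> gr_cls A v lam s"
    proof (cases "x \<in> carrier A")
      case True
      have e1: "x \<ominus> s = (x \<ominus> r) \<oplus> (r \<ominus> s)" using True assms by algebra
      have e2: "x \<ominus> r = (x \<ominus> s) \<ominus> (r \<ominus> s)" using True assms by algebra
      have "x \<ominus> r \<in> Fil_plus A v lam \<longleftrightarrow> x \<ominus> s \<in> Fil_plus A v lam"
      proof
        assume "x \<ominus> r \<in> Fil_plus A v lam"
        then show "x \<ominus> s \<in> Fil_plus A v lam" unfolding e1 using d by (rule Fp_add)
      next
        assume "x \<ominus> s \<in> Fil_plus A v lam"
        then show "x \<ominus> r \<in> Fil_plus A v lam" unfolding e2 using d by (rule Fp_diff)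
      qed
      then show ?thesis unfolding cls_mem[OF assms(1)] cls_mem[OF assms(2)] using True by simp
    next
      case False then show ?thesis using cls_mem assms by blast
    qed
  qed
qed

lemma rep_cls: assumes "r \<in> carrier A"
  shows "gr_rep (gr_cls A v lam r) \<in> carrier A" "gr_rep (gr_cls A v lam r) \<ominus> r \<in> Fil_plus A v lam"
proof -
  have "r \<ominus> r = \<zero>" using assms by (simp add: a_minus_def r_neg)
  then have "r \<in> gr_cls A v lam r" using assms cls_mem[of r] Fp_zero by simp
  then have "gr_rep (gr_cls A v lam r) \<in> gr_cls A v lam r" unfolding gr_rep_def by (rule someI)
  then show "gr_rep (gr_cls A v lam r) \<in> carrier A" "gr_rep (gr_cls A v lam r) \<ominus> r \<in> Fil_plus A v lam"
    using cls_mem[OF assms] by auto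
qed

lemma cls_zero: "gr_cls A v lam \<zero> = Fil_plus A v lam"
proof -
  have "(\<lambda>y. \<zero> \<oplus> y) ` Fil_plus A v lam = (\<lambda>y. y) ` Fil_plus A v lam"
    by (rule image_cong) (auto intro!: l_zero dest: subsetD[OF Fp_sub])
  then show ?thesis unfolding gr_cls_def by simp
qed

lemma cls_Fp_iff: assumes rc: "r \<in> carrier A"
  shows "gr_cls A v lam r = Fil_plus A v lam \<longleftrightarrow> r \<in> Fil_plus A v lam"
proof -
  have "r \<ominus> \<zero> = r" using rc by (simp add: a_minus_def)
  then show ?thesis using cls_eq[OF rc zero_closed, of lam] cls_zero by simp
qed

lemma cls_Fp: "r \<in> Fil_plus A v lam \<Longrightarrow> gr_cls A v lam r = Fil_plus A v lam"
  using cls_Fp_iff Fp_sub by blast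

lemma gr_carrier: "g \<in> carrier (gr A v) \<longleftrightarrow>
   (\<forall>lam. \<exists>r\<in>Fil A v lam. g lam = gr_cls A v lam r) \<and> finite (gr_supp A v g)"
  unfolding gr_def by simp

lemma carrier_rep: assumes "g \<in> carrier (gr A v)"
  shows "gr_rep (g lam) \<in> Fil A v lam" "g lam = gr_cls A v lam (gr_rep (g lam))"
proof -
  obtain r where r: "r \<in> Fil A v lam" "g lam = gr_cls A v lam r" using assms gr_carrier by blast
  have rc: "r \<in> carrier A" using r Fil_sub by auto
  have 1: "gr_rep (g lam) \<in> carrier A" "gr_rep (g lam) \<ominus> r \<in> Fil_plus A v lam"
    using rep_cls[OF rc] r by auto
  have eq: "gr_rep (g lam) = (gr_rep (g lam) \<ominus> r) \<oplus> r" using 1 rc by algebra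
  have a: "gr_rep (g lam) \<ominus> r \<in> Fil A v lam" using 1 Fp_Fil by blast
  show "gr_rep (g lam) \<in> Fil A v lam" by (subst eq) (rule Fil_add[OF a r(1)])
  have "gr_cls A v lam (gr_rep (g lam)) = gr_cls A v lam r" using cls_eq[OF 1(1) rc] 1(2) by blast
  then show "g lam = gr_cls A v lam (gr_rep (g lam))" using r(2) by simp
qed

lemma carrier_rep_c: "g \<in> carrier (gr A v) \<Longrightarrow> gr_rep (g lam) \<in> carrier A"
  using carrier_rep Fil_sub by blast

lemma supp_rep: assumes "g \<in> carrier (gr A v)" "lam \<notin> gr_supp A v g"
  shows "gr_rep (g lam) \<in> Fil_plus A v lam"
proof -
  have "g lam = Fil_plus A v lam" using assms(2) gr_supp_def by blast
  have e2: "g lam = gr_cls A v lam (gr_rep (g lam))" using carrier_rep(2)[OF assms(1)] .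
  from e2[symmetric] \<open>g lam = Fil_plus A v lam\<close>
  have "gr_cls A v lam (gr_rep (g lam)) = Fil_plus A v lam" by (rule trans)
  then show ?thesis using cls_Fp_iff carrier_rep_c[OF assms(1)] by blast
qed

lemma gr_zero: "\<zero>\<^bsub>gr A v\<^esub> = (\<lambda>lam. Fil_plus A v lam)" unfolding gr_def by simp
lemma gr_add: "x \<oplus>\<^bsub>gr A v\<^esub> y = (\<lambda>lam. gr_cls A v lam (gr_rep (x lam) \<oplus> gr_rep (y lam)))"
  unfolding gr_def by simp
lemma gr_one: "\<one>\<^bsub>gr A v\<^esub> = (\<lambda>lam. if lam = 0 then gr_cls A v 0 \<one> else Fil_plus A v lam)"
  unfolding gr_def by simp
lemma gr_mult: "x \<otimes>\<^bsub>gr A v\<^esub> y = (\<lambda>lam. gr_cls A v lam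
    (finsum A (\<lambda>mu. gr_rep (x mu) \<otimes> gr_rep (y (lam - mu))) (gr_supp A v x)))"
  unfolding gr_def by simp

lemma rep_cls_eq: "r \<in> carrier A \<Longrightarrow> gr_cls A v lam (gr_rep (gr_cls A v lam r)) = gr_cls A v lam r"
  using rep_cls[of r lam] cls_eq[of "gr_rep (gr_cls A v lam r)" r lam] by blast

lemma gr_add_closed: assumes "x \<in> carrier (gr A v)" "y \<in> carrier (gr A v)"
  shows "x \<oplus>\<^bsub>gr A v\<^esub> y \<in> carrier (gr A v)"
  unfolding gr_carrier
proof
  show "\<forall>lam. \<exists>r\<in>Fil A v lam. (x \<oplus>\<^bsub>gr A v\<^esub> y) lam = gr_cls A v lam r"
    unfolding gr_add using carrier_rep[OF assms(1)] carrier_rep[OF assms(2)] Fil_add by blast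
  have "gr_supp A v (x \<oplus>\<^bsub>gr A v\<^esub> y) \<subseteq> gr_supp A v x \<union> gr_supp A v y"
  proof
    fix lam assume a: "lam \<in> gr_supp A v (x \<oplus>\<^bsub>gr A v\<^esub> y)"
    show "lam \<in> gr_supp A v x \<union> gr_supp A v y"
    proof (rule ccontr)
      assume "lam \<notin> gr_supp A v x \<union> gr_supp A v y"
      then have "gr_rep (x lam) \<in> Fil_plus A v lam" "gr_rep (y lam) \<in> Fil_plus A v lam"
        using supp_rep assms by auto
      then have "(x \<oplus>\<^bsub>gr A v\<^esub> y) lam = Fil_plus A v lam" unfolding gr_add using Fp_add cls_Fp by simp
      then show False using a gr_supp_def by blast
    qed
  qed
  then show "finite (gr_supp A v (x \<oplus>\<^bsub>gr A v\<^esub> y))"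
    using assms gr_carrier by (meson finite_Un finite_subset)
qed

lemma gr_zero_closed: "\<zero>\<^bsub>gr A v\<^esub> \<in> carrier (gr A v)"
  unfolding gr_carrier gr_zero gr_supp_def using Fil_zero cls_zero by auto

lemma gr_abelian_monoid: "abelian_monoid (gr A v)"
proof (rule abelian_monoidI)
  fix x y assume "x \<in> carrier (gr A v)" "y \<in> carrier (gr A v)"
  then show "x \<oplus>\<^bsub>gr A v\<^esub> y \<in> carrier (gr A v)" by (rule gr_add_closed)
next
  show "\<zero>\<^bsub>gr A v\<^esub> \<in> carrier (gr A v)" by (rule gr_zero_closed)
next
  fix x y z assume c: "x \<in> carrier (gr A v)" "y \<in> carrier (gr A v)" "z \<in> carrier (gr A v)"
  show "x \<oplus>\<^bsub>gr A v\<^esub> y \<oplus>\<^bsub>gr A v\<^esub> z = x \<oplus>\<^bsub>gr A v\<^esub> (y \<oplus>\<^bsub>gr A v\<^esub> z)"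
  proof
    fix lam
    define a b c' where "a = gr_rep (x lam)" "b = gr_rep (y lam)" "c' = gr_rep (z lam)"
    have abc: "a \<in> carrier A" "b \<in> carrier A" "c' \<in> carrier A"
      using c carrier_rep_c a_b_c'_def by auto
    define p where "p = gr_rep (gr_cls A v lam (a \<oplus> b))"
    define q where "q = gr_rep (gr_cls A v lam (b \<oplus> c'))"
    have p: "p \<in> carrier A" "p \<ominus> (a \<oplus> b) \<in> Fil_plus A v lam" using rep_cls abc p_def by auto
    have q: "q \<in> carrier A" "q \<ominus> (b \<oplus> c') \<in> Fil_plus A v lam" using rep_cls abc q_def by auto
    have "(p \<oplus> c') \<ominus> (a \<oplus> q) = (p \<ominus> (a \<oplus> b)) \<ominus> (q \<ominus> (b \<oplus> c'))"
      using p q abc by algebra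
    then have "(p \<oplus> c') \<ominus> (a \<oplus> q) \<in> Fil_plus A v lam" using p q Fp_diff by simp
    then show "(x \<oplus>\<^bsub>gr A v\<^esub> y \<oplus>\<^bsub>gr A v\<^esub> z) lam = (x \<oplus>\<^bsub>gr A v\<^esub> (y \<oplus>\<^bsub>gr A v\<^esub> z)) lam"
      unfolding gr_add using cls_eq p q abc a_b_c'_def p_def q_def by simp
  qed
next
  fix x assume c: "x \<in> carrier (gr A v)"
  show "\<zero>\<^bsub>gr A v\<^esub> \<oplus>\<^bsub>gr A v\<^esub> x = x"
  proof
    fix lam
    have z: "gr_rep (Fil_plus A v lam) \<in> Fil_plus A v lam"
      using rep_cls[of \<zero> lam] cls_zero by (simp add: a_minus_def)
    have zc: "gr_rep (Fil_plus A v lam) \<in> carrier A" using z Fp_sub by auto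
    have xc: "gr_rep (x lam) \<in> carrier A" using carrier_rep_c[OF c] .
    have "(gr_rep (Fil_plus A v lam) \<oplus> gr_rep (x lam)) \<ominus> gr_rep (x lam) = gr_rep (Fil_plus A v lam)"
      using zc xc by algebra
    then have "gr_cls A v lam (gr_rep (Fil_plus A v lam) \<oplus> gr_rep (x lam)) = gr_cls A v lam (gr_rep (x lam))"
      using cls_eq zc xc z by simp
    then show "(\<zero>\<^bsub>gr A v\<^esub> \<oplus>\<^bsub>gr A v\<^esub> x) lam = x lam"
      unfolding gr_add gr_zero using carrier_rep(2)[OF c] by simp
  qed
next
  fix x y assume c: "x \<in> carrier (gr A v)" "y \<in> carrier (gr A v)"
  show "x \<oplus>\<^bsub>gr A v\<^esub> y = y \<oplus>\<^bsub>gr A v\<^esub> x"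
    unfolding gr_add using carrier_rep_c c by (simp add: a_comm)
qed

lemma gr_finsum: assumes "finite I" "f \<in> I \<rightarrow> carrier (gr A v)"
  shows "finsum (gr A v) f I = (\<lambda>lam. gr_cls A v lam (finsum A (\<lambda>i. gr_rep (f i lam)) I))"
  using assms
proof (induction I rule: finite_induct)
  case empty
  interpret G: abelian_monoid "gr A v" by (rule gr_abelian_monoid)
  show ?case by (simp add: gr_zero cls_zero)
next
  case (insert a I)
  interpret G: abelian_monoid "gr A v" by (rule gr_abelian_monoid)
  have fI: "f \<in> I \<rightarrow> carrier (gr A v)" "f a \<in> carrier (gr A v)" using insert.prems by auto
  have rc: "(\<lambda>i. gr_rep (f i lam)) \<in> I \<rightarrow> carrier A" "gr_rep (f a lam) \<in> carrier A" for lam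
    using fI carrier_rep_c by auto
  have "finsum (gr A v) f (insert a I) = f a \<oplus>\<^bsub>gr A v\<^esub> finsum (gr A v) f I"
    by (rule G.finsum_insert[OF insert(1,2) fI])
  also have "\<dots> = (\<lambda>lam. gr_cls A v lam (gr_rep (f a lam) \<oplus>
      gr_rep (gr_cls A v lam (finsum A (\<lambda>i. gr_rep (f i lam)) I))))"
    unfolding gr_add insert.IH[OF fI(1)] by simp
  also have "\<dots> = (\<lambda>lam. gr_cls A v lam (gr_rep (f a lam) \<oplus> finsum A (\<lambda>i. gr_rep (f i lam)) I))"
  proof
    fix lam
    define s where "s = finsum A (\<lambda>i. gr_rep (f i lam)) I"
    have sc: "s \<in> carrier A" unfolding s_def using rc by simp
    have p: "gr_rep (gr_cls A v lam s) \<in> carrier A" "gr_rep (gr_cls A v lam s) \<ominus> s \<in> Fil_plus A v lam"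
      using rep_cls[OF sc] by auto
    have "(gr_rep (f a lam) \<oplus> gr_rep (gr_cls A v lam s)) \<ominus> (gr_rep (f a lam) \<oplus> s) =
        gr_rep (gr_cls A v lam s) \<ominus> s" using p sc rc by algebra
    then show "gr_cls A v lam (gr_rep (f a lam) \<oplus> gr_rep (gr_cls A v lam s)) =
        gr_cls A v lam (gr_rep (f a lam) \<oplus> s)"
      using cls_eq p sc rc by simp
  qed
  also have "\<dots> = (\<lambda>lam. gr_cls A v lam (finsum A (\<lambda>i. gr_rep (f i lam)) (insert a I)))"
    using finsum_insert[OF insert(1,2) rc] by simp
  finally show ?case .
qed

lemma gr_mult_S: assumes g: "g \<in> carrier (gr A v)" and h: "h \<in> carrier (gr A v)"
  and S: "finite S" "gr_supp A v g \<subseteq> S"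
  shows "(g \<otimes>\<^bsub>gr A v\<^esub> h) lam = gr_cls A v lam
    (finsum A (\<lambda>mu. gr_rep (g mu) \<otimes> gr_rep (h (lam - mu))) S)"
proof -
  define f where "f mu = gr_rep (g mu) \<otimes> gr_rep (h (lam - mu))" for mu
  have fc: "f \<in> S' \<rightarrow> carrier A" for S' unfolding f_def using carrier_rep_c g h by auto
  have disj: "S = gr_supp A v g \<union> (S - gr_supp A v g)" using S by auto
  have "finsum A f S = finsum A f (gr_supp A v g) \<oplus> finsum A f (S - gr_supp A v g)"
    by (subst disj, rule finsum_Un_disjoint) (use S fc in \<open>auto intro: finite_subset\<close>)
  moreover have "finsum A f (S - gr_supp A v g) \<in> Fil_plus A v lam"
  proof (rule Fp_finsum)
    show "finite (S - gr_supp A v g)" using S by auto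
    show "f \<in> S - gr_supp A v g \<rightarrow> Fil_plus A v lam"
    proof
      fix mu assume "mu \<in> S - gr_supp A v g"
      then have "gr_rep (g mu) \<in> Fil_plus A v mu" using supp_rep g by auto
      from Fp_mul1[OF this carrier_rep(1)[OF h, of "lam - mu"]] show "f mu \<in> Fil_plus A v lam"
        unfolding f_def by simp
    qed
  qed
  moreover have "finsum A f (gr_supp A v g) \<oplus> finsum A f (S - gr_supp A v g) \<ominus> finsum A f (gr_supp A v g)
      = finsum A f (S - gr_supp A v g)"
  proof -
    have "finsum A f (gr_supp A v g) \<in> carrier A" "finsum A f (S - gr_supp A v g) \<in> carrier A"
      using fc by simp_all
    then show ?thesis by algebra
  qed
  ultimately have "finsum A f S \<ominus> finsum A f (gr_supp A v g) \<in> Fil_plus A v lam" by simp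
  then have "gr_cls A v lam (finsum A f S) = gr_cls A v lam (finsum A f (gr_supp A v g))"
    using cls_eq fc by simp
  then show ?thesis unfolding gr_mult f_def by simp
qed

end

lemma RR_simps[simp]: "carrier (RR::'a::ring_1 ring) = UNIV" "mult (RR::'a ring) = (*)"
  "add (RR::'a ring) = (+)" "zero (RR::'a ring) = 0" "one (RR::'a ring) = 1"
  by (simp_all add: ring_of_def)

lemma ring_RR: "ring (RR::'a::ring_1 ring)"
proof (rule ringI)
  show "abelian_group (RR::'a ring)"
    apply (rule abelian_groupI)
         apply (simp_all add: add.assoc add.commute)
    subgoal for x by (rule exI[of _ "- x"]) simp
    done
  show "monoid (RR::'a ring)"
    by (rule monoidI) (simp_all add: mult.assoc)
qed (simp_all add: algebra_simps)

lemma RR_ainv[simp]: "a_inv (RR::'a::ring_1 ring) x = - x"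
proof -
  interpret R: ring "RR::'a ring" by (rule ring_RR)
  show ?thesis by (rule R.minus_equality) simp_all
qed

lemma RR_aminus[simp]: "a_minus (RR::'a::ring_1 ring) x y = x - y"
  by (simp add: a_minus_def)

lemma RR_finsum: "finite S \<Longrightarrow> finsum (RR::'a::ring_1 ring) f S = sum f S"
proof (induction S rule: finite_induct)
  interpret R: ring "RR::'a ring" by (rule ring_RR)
  case empty show ?case by simp
next
  interpret R: ring "RR::'a ring" by (rule ring_RR)
  case (insert x S) then show ?case by (simp add: R.finsum_insert)
qed

lemma RR_Fil: "Fil (RR::'a::ring_1 ring) u lam = {x. ereal lam \<le> u x}" by (simp add: Fil_def)
lemma RR_Fp: "Fil_plus (RR::'a::ring_1 ring) u lam = {x. ereal lam < u x}" by (simp add: Fil_plus_def)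

lemma ereal_less_add_iff: "ereal r < x + ereal c \<longleftrightarrow> ereal (r - c) < x"
  by (cases x) auto

context skctx begin

lemma filt_RR: "is_filtration RR u"
  unfolding is_filtration_def by (simp add: u0 uadd umul uneg)

definition eqm :: "real \<Rightarrow> 'a \<Rightarrow> 'a \<Rightarrow> bool" where
  "eqm mu x y \<longleftrightarrow> ereal mu < u (x - y)"

lemma eqm_refl[simp]: "eqm mu x x" by (simp add: eqm_def u0)
lemma eqm_sym: "eqm mu x y \<Longrightarrow> eqm mu y x" unfolding eqm_def using uneg[of "x - y"] by simp
lemma eqm_trans: "eqm mu x y \<Longrightarrow> eqm mu y z \<Longrightarrow> eqm mu x z"
proof -
  assume a: "eqm mu x y" "eqm mu y z"
  have "ereal mu < min (u (x - y)) (u (y - z))" using a eqm_def by simp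
  also have "\<dots> \<le> u ((x - y) + (y - z))" by (rule uadd)
  finally show ?thesis unfolding eqm_def by simp
qed
lemma eqm_add: "eqm mu x y \<Longrightarrow> eqm mu x' y' \<Longrightarrow> eqm mu (x + x') (y + y')"
proof -
  assume a: "eqm mu x y" "eqm mu x' y'"
  have "ereal mu < min (u (x - y)) (u (x' - y'))" using a eqm_def by simp
  also have "\<dots> \<le> u ((x - y) + (x' - y'))" by (rule uadd)
  finally show ?thesis unfolding eqm_def by (simp add: algebra_simps)
qed
lemma eqm_neg: "eqm mu x y \<Longrightarrow> eqm mu (- x) (- y)"
  unfolding eqm_def using uneg[of "x - y"] by simp
lemma eqm_diff: "eqm mu x y \<Longrightarrow> eqm mu x' y' \<Longrightarrow> eqm mu (x - x') (y - y')"
  using eqm_add[of mu x y "- x'" "- y'"] eqm_neg by simp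
lemma eqm_sum: "finite S \<Longrightarrow> (\<And>s. s \<in> S \<Longrightarrow> eqm mu (f s) (g s)) \<Longrightarrow> eqm mu (sum f S) (sum g S)"
  by (induction S rule: finite_induct) (auto intro: eqm_add)
lemma eqm_0_iff: "eqm mu x 0 \<longleftrightarrow> ereal mu < u x" by (simp add: eqm_def)

lemma vgt_mul1: "ereal a < u x \<Longrightarrow> ereal b \<le> u y \<Longrightarrow> ereal (a + b) < u (x * y)"
  using ereal_add_strict umul less_le_trans by blast
lemma vgt_mul2: "ereal a \<le> u x \<Longrightarrow> ereal b < u y \<Longrightarrow> ereal (a + b) < u (x * y)"
proof -
  assume "ereal a \<le> u x" "ereal b < u y"
  then have "ereal (b + a) < u y + u x" by (rule ereal_add_strict[rotated])
  then have "ereal (a + b) < u x + u y" by (simp add: add.commute)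
  then show ?thesis using umul less_le_trans by blast
qed

lemma eqm_mul: assumes "eqm a x x'" "eqm b y y'" "ereal a \<le> u x'" "ereal b \<le> u y"
  shows "eqm (a + b) (x * y) (x' * y')"
proof -
  have "x * y - x' * y' = (x - x') * y + x' * (y - y')" by (simp add: algebra_simps)
  moreover have "ereal (a + b) < u ((x - x') * y)" using vgt_mul1 assms eqm_def by blast
  moreover have "ereal (a + b) < u (x' * (y - y'))" using vgt_mul2 assms eqm_def by blast
  ultimately show ?thesis unfolding eqm_def using eqm_add[of "a+b" "(x - x') * y" 0 "x' * (y - y')" 0]
    by (simp add: eqm_def)
qed

lemma clsR_eq: "gr_cls RR u mu x = gr_cls RR u mu y \<longleftrightarrow> eqm mu x y"
  using cls_eq[OF ring_RR filt_RR, of x y mu] by (simp add: RR_Fp eqm_def)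

lemma repR: "eqm mu (gr_rep (gr_cls RR u mu x)) x"
  using rep_cls(2)[OF ring_RR filt_RR, of x mu] by (simp add: RR_Fp eqm_def)

lemma clsR_zero_iff: "gr_cls RR u mu x = Fil_plus RR u mu \<longleftrightarrow> ereal mu < u x"
  using cls_Fp_iff[OF ring_RR filt_RR, of x mu] by (simp add: RR_Fp)

lemma f_u_gt: "ereal lam < f_u u F \<longleftrightarrow> (\<forall>i. ereal (lam - real i / 2) < u (F i))"
proof
  assume a: "ereal lam < f_u u F"
  show "\<forall>i. ereal (lam - real i / 2) < u (F i)"
  proof
    fix i
    have "f_u u F \<le> u (F i) + ereal (real i / 2)" unfolding f_u_def by (rule INF_lower) simp
    then have "ereal lam < u (F i) + ereal (real i / 2)" using a by (rule less_le_trans[rotated])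
    then show "ereal (lam - real i / 2) < u (F i)" by (simp add: ereal_less_add_iff)
  qed
next
  assume a: "\<forall>i. ereal (lam - real i / 2) < u (F i)"
  define c where "c = (real_of_int \<lfloor>2 * lam\<rfloor> + 1) / 2"
  have "sge F c" unfolding sge_def
  proof
    fix i
    define m where "m = \<lfloor>lam - real i / 2\<rfloor> + 1"
    have v: "vge (F i) (real_of_int m)" using a vgt_iff m_def by blast
    have m1: "real_of_int m > lam - real i / 2" unfolding m_def by linarith
    have "real_of_int (2 * m + int i) > real_of_int \<lfloor>2 * lam\<rfloor>" using m1 by linarith
    then have "2 * m + int i > \<lfloor>2 * lam\<rfloor>" by (simp only: of_int_less_iff)
    then have "2 * m + int i \<ge> \<lfloor>2 * lam\<rfloor> + 1" by linarith
    then have "real_of_int (2 * m + int i) \<ge> real_of_int (\<lfloor>2 * lam\<rfloor> + 1)" by (simp only: of_int_le_iff)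
    then have "c - real i / 2 \<le> real_of_int m" unfolding c_def of_int_add of_int_mult
      by (simp add: field_simps)
    then show "vge (F i) (c - real i / 2)" using v vge_mono by blast
  qed
  then have "ereal c \<le> f_u u F" using f_u_ge by blast
  moreover have "lam < c"
  proof -
    have "2 * lam < real_of_int \<lfloor>2 * lam\<rfloor> + 1" using floor_correct[of "2 * lam"] by simp
    then show ?thesis unfolding c_def by (simp add: field_simps)
  qed
  moreover have "ereal lam < ereal c" using \<open>lam < c\<close> by simp
  ultimately show "ereal lam < f_u u F" using less_le_trans by blast
qed

lemma Xo_err: assumes "sge Q b"
  shows "vge ((Xo^^i) Q n - (if i \<le> n then (\<sigma>^^i) (Q (n - i)) else 0)) (b - real n / 2 + real i / 2 + 1/2)"
  using assms
proof (induction i arbitrary: n)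
  case 0 then show ?case by simp
next
  case (Suc i)
  have XQ: "vge ((Xo^^i) Q n) (b + real i / 2 - real n / 2)" for n
    using sge_Xopow[OF Suc.prems, of i] unfolding sge_def by blast
  show ?case
  proof (cases n)
    case 0
    have d: "vge (\<delta> ((Xo^^i) Q 0)) (b + real i / 2 - real 0 / 2 + 1)" by (rule vge_d[OF XQ])
    have eq2: "(Xo^^Suc i) Q n - (if Suc i \<le> n then (\<sigma>^^Suc i) (Q (n - Suc i)) else 0) = \<delta> ((Xo^^i) Q 0)"
      using 0 by simp
    show ?thesis unfolding eq2 by (rule vge_mono[OF d]) (simp add: 0 field_simps)
  next
    case (Suc m)
    have e: "(Xo^^Suc i) Q n - (if Suc i \<le> n then (\<sigma>^^Suc i) (Q (n - Suc i)) else 0)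
        = \<sigma> ((Xo^^i) Q m - (if i \<le> m then (\<sigma>^^i) (Q (m - i)) else 0)) + \<delta> ((Xo^^i) Q n)"
      using Suc by (simp add: sdiff)
    have 1: "vge (\<sigma> ((Xo^^i) Q m - (if i \<le> m then (\<sigma>^^i) (Q (m - i)) else 0)))
        (b - real m / 2 + real i / 2 + 1/2)" by (rule vge_s[OF Suc.IH[OF Suc.prems]])
    have 2: "vge (\<delta> ((Xo^^i) Q n)) (b + real i / 2 - real n / 2 + 1)" by (rule vge_d[OF XQ])
    have s1: "vge (\<sigma> ((Xo^^i) Q m - (if i \<le> m then (\<sigma>^^i) (Q (m - i)) else 0)))
        (b - real n / 2 + real (Suc i) / 2 + 1/2)" by (rule vge_mono[OF 1]) (simp add: Suc field_simps)
    have s2: "vge (\<delta> ((Xo^^i) Q n)) (b - real n / 2 + real (Suc i) / 2 + 1/2)"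
      by (rule vge_mono[OF 2]) (simp add: field_simps)
    show ?thesis unfolding e by (rule vge_add[OF s1 s2])
  qed
qed

lemma K: assumes P: "bser P" "sge P a" and Q: "bser Q" "sge Q b"
  shows "eqm (a + b - real n / 2) (Lop P Q n) (\<Sum>i\<le>n. P i * Q (n - i))"
proof -
  define E where "E i = (Xo^^i) Q n - (if i \<le> n then (\<sigma>^^i) (Q (n - i)) else 0)" for i
  define W where "W i = (if i \<le> n then P i * (\<sigma>^^i) (Q (n - i)) else 0)" for i
  have t: "tends0 (\<lambda>i. P i * (Xo^^i) Q n)" by (rule Lop_tends0[OF P(1) Q(1)])
  have tW: "tends0 W" unfolding W_def by (rule tends0_fin[of "Suc n"]) simp
  have split: "(\<lambda>i. P i * (Xo^^i) Q n) = (\<lambda>i. P i * E i + W i)"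
    by (rule ext) (simp add: E_def W_def algebra_simps)
  have tE: "tends0 (\<lambda>i. P i * E i)"
  proof -
    have "tends0 (\<lambda>i. P i * (Xo^^i) Q n - W i)" by (rule tends0_diff[OF t tW])
    moreover have "(\<lambda>i. P i * (Xo^^i) Q n - W i) = (\<lambda>i. P i * E i)"
      by (rule ext) (simp add: E_def W_def algebra_simps)
    ultimately show ?thesis by simp
  qed
  have "Lop P Q n = rsum (\<lambda>i. P i * E i) + rsum W"
    unfolding Lop_def split by (rule rsum_add[OF tE tW])
  also have "rsum W = (\<Sum>i<Suc n. W i)" by (rule rsum_fin) (simp add: W_def)
  finally have L: "Lop P Q n = rsum (\<lambda>i. P i * E i) + (\<Sum>i\<le>n. P i * (\<sigma>^^i) (Q (n - i)))"
    by (simp add: W_def lessThan_Suc_atMost)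
  have 1: "vge (rsum (\<lambda>i. P i * E i)) (a + b - real n / 2 + 1/2)"
  proof (rule rsum_closed[OF tE])
    fix i
    have "vge (P i * E i) ((a - real i / 2) + (b - real n / 2 + real i / 2 + 1/2))"
      unfolding E_def by (rule vge_mul) (use P(2) sge_def Xo_err[OF Q(2)] in auto)
    then show "vge (P i * E i) (a + b - real n / 2 + 1/2)" by (simp add: algebra_simps)
  qed
  have 2: "vge (P i * ((\<sigma>^^i) (Q (n - i)) - Q (n - i))) (a + b - real n / 2 + 1/2)" if "i \<le> n" for i
  proof -
    have q: "vge (Q (n - i)) (b - real (n - i) / 2)" using Q(2) sge_def by blast
    have "vge (P i * ((\<sigma>^^i) (Q (n - i)) - Q (n - i))) ((a - real i / 2) + (b - real (n - i) / 2 + 1))"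
      by (rule vge_mul) (use P(2) sge_def vge_spow_diff[OF q] in auto)
    moreover have "(a - real i / 2) + (b - real (n - i) / 2 + 1) \<ge> a + b - real n / 2 + 1/2"
      using that by (simp add: of_nat_diff field_simps)
    ultimately show ?thesis using vge_mono by blast
  qed
  have "Lop P Q n - (\<Sum>i\<le>n. P i * Q (n - i)) =
      rsum (\<lambda>i. P i * E i) + (\<Sum>i\<le>n. P i * ((\<sigma>^^i) (Q (n - i)) - Q (n - i)))"
    unfolding L by (simp add: sum_subtractf right_diff_distrib algebra_simps)
  moreover have "vge (\<Sum>i\<le>n. P i * ((\<sigma>^^i) (Q (n - i)) - Q (n - i))) (a + b - real n / 2 + 1/2)"
    by (rule vge_sum) (use 2 in auto)
  ultimately have "vge (Lop P Q n - (\<Sum>i\<le>n. P i * Q (n - i))) (a + b - real n / 2 + 1/2)"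
    using vge_add 1 by simp
  then show ?thesis unfolding eqm_def by (rule vgt_vge)
qed

end

context skctx begin

lemma grR_rep: assumes "g \<in> carrier (gr RR u)"
  shows "ereal mu \<le> u (gr_rep (g mu))" "g mu = gr_cls RR u mu (gr_rep (g mu))"
  using carrier_rep[OF ring_RR filt_RR assms] by (auto simp: RR_Fil)

lemma grR_supp: assumes "g \<in> carrier (gr RR u)" "mu \<notin> gr_supp RR u g"
  shows "ereal mu < u (gr_rep (g mu))"
  using supp_rep[OF ring_RR filt_RR assms] by (simp add: RR_Fp)

definition phi :: "(real \<Rightarrow> (nat \<Rightarrow> 'a) set) \<Rightarrow> nat \<Rightarrow> real \<Rightarrow> 'a set" where
  "phi G = (\<lambda>i mu. gr_cls RR u mu (gr_rep (G (mu + real i / 2)) i))"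

context fixes mul assumes ok: "skew_mult_ok u \<sigma> \<delta> mul"
begin

lemma ringB: "ring (BRing u mul)" using ok skew_mult_ok_def by blast
lemma eqL: "bser F \<Longrightarrow> bser G \<Longrightarrow> mul F G = Lop F G" by (rule ok_eq_Lop[OF ok])
lemma filtB: "is_filtration (BRing u mul) (f_u u)" by (rule filt_B[OF ringB eqL])

lemma FilB: "Fil (BRing u mul) (f_u u) lam = {F. bser F \<and> sge F lam}"
  unfolding Fil_def by (auto simp: bseries_iff f_u_ge)
lemma FpB: "Fil_plus (BRing u mul) (f_u u) lam = {F. bser F \<and> (\<forall>i. ereal (lam - real i / 2) < u (F i))}"
  unfolding Fil_plus_def by (auto simp: bseries_iff f_u_gt)

lemma clsB_eq: assumes "bser X" "bser Y"
  shows "gr_cls (BRing u mul) (f_u u) lam X = gr_cls (BRing u mul) (f_u u) lam Y \<longleftrightarrow>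
     (\<forall>i. eqm (lam - real i / 2) (X i) (Y i))"
proof -
  have c: "X \<in> carrier (BRing u mul)" "Y \<in> carrier (BRing u mul)" using assms by (simp_all add: bseries_iff)
  show ?thesis using cls_eq[OF ringB filtB c, of lam]
    by (simp add: B_aminus[OF ringB assms] FpB bser_diff[OF assms] eqm_def)
qed

lemma repB: assumes "bser X"
  shows "bser (gr_rep (gr_cls (BRing u mul) (f_u u) lam X))"
    "eqm (lam - real i / 2) (gr_rep (gr_cls (BRing u mul) (f_u u) lam X) i) (X i)"
proof -
  have c: "X \<in> carrier (BRing u mul)" using assms by (simp add: bseries_iff)
  have r: "gr_rep (gr_cls (BRing u mul) (f_u u) lam X) \<in> carrier (BRing u mul)"
    "gr_rep (gr_cls (BRing u mul) (f_u u) lam X) \<ominus>\<^bsub>BRing u mul\<^esub> X \<in> Fil_plus (BRing u mul) (f_u u) lam"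
    using rep_cls[OF ringB filtB c] by auto
  show b: "bser (gr_rep (gr_cls (BRing u mul) (f_u u) lam X))" using r(1) by (simp add: bseries_iff)
  show "eqm (lam - real i / 2) (gr_rep (gr_cls (BRing u mul) (f_u u) lam X) i) (X i)"
    using r(2) by (simp add: B_aminus[OF ringB b assms] FpB eqm_def)
qed

lemma clsB_zero_iff: assumes "bser X"
  shows "gr_cls (BRing u mul) (f_u u) lam X = Fil_plus (BRing u mul) (f_u u) lam \<longleftrightarrow>
     (\<forall>i. ereal (lam - real i / 2) < u (X i))"
proof -
  have c: "X \<in> carrier (BRing u mul)" using assms by (simp add: bseries_iff)
  show ?thesis using cls_Fp_iff[OF ringB filtB c] by (simp add: FpB assms)
qed

lemma finsumB: "finite S \<Longrightarrow> (\<And>s. s \<in> S \<Longrightarrow> bser (f s)) \<Longrightarrow>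
    finsum (BRing u mul) f S = (\<lambda>k. \<Sum>s\<in>S. f s k)"
proof (induction S rule: finite_induct)
  interpret R: ring "BRing u mul" by (rule ringB)
  case empty show ?case by simp
next
  interpret R: ring "BRing u mul" by (rule ringB)
  case (insert x S)
  have c: "f \<in> S \<rightarrow> carrier (BRing u mul)" "f x \<in> carrier (BRing u mul)"
    using insert.prems by (auto simp: bseries_iff)
  show ?case using insert by (simp add: R.finsum_insert[OF insert(1,2) c] s_add_def)
qed

lemma grB_rep: assumes "G \<in> carrier (gr (BRing u mul) (f_u u))"
  shows "bser (gr_rep (G lam))" "sge (gr_rep (G lam)) lam"
    "G lam = gr_cls (BRing u mul) (f_u u) lam (gr_rep (G lam))"
  using carrier_rep[OF ringB filtB assms, of lam] by (auto simp: FilB)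

lemma grB_supp: assumes "G \<in> carrier (gr (BRing u mul) (f_u u))" "lam \<notin> gr_supp (BRing u mul) (f_u u) G"
  shows "ereal (lam - real i / 2) < u (gr_rep (G lam) i)"
  using supp_rep[OF ringB filtB assms] by (simp add: FpB)

lemma grB_fin: "G \<in> carrier (gr (BRing u mul) (f_u u)) \<Longrightarrow> finite (gr_supp (BRing u mul) (f_u u) G)"
  using gr_carrier[OF ringB filtB] by blast

lemma phi_coeff: assumes G: "G \<in> carrier (gr (BRing u mul) (f_u u))"
  shows "phi G i \<in> carrier (gr RR u)"
  unfolding gr_carrier[OF ring_RR filt_RR]
proof
  show "\<forall>mu. \<exists>r\<in>Fil RR u mu. phi G i mu = gr_cls RR u mu r"
  proof
    fix mu
    have "sge (gr_rep (G (mu + real i / 2))) (mu + real i / 2)" using grB_rep[OF G] by blast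
    then have "vge (gr_rep (G (mu + real i / 2)) i) (mu + real i / 2 - real i / 2)" unfolding sge_def by blast
    then have "vge (gr_rep (G (mu + real i / 2)) i) mu" by simp
    then show "\<exists>r\<in>Fil RR u mu. phi G i mu = gr_cls RR u mu r"
      unfolding phi_def RR_Fil vge_def by auto
  qed
  have "gr_supp RR u (phi G i) \<subseteq> (\<lambda>lam. lam - real i / 2) ` gr_supp (BRing u mul) (f_u u) G"
  proof
    fix mu assume a: "mu \<in> gr_supp RR u (phi G i)"
    show "mu \<in> (\<lambda>lam. lam - real i / 2) ` gr_supp (BRing u mul) (f_u u) G"
    proof (rule ccontr)
      assume "mu \<notin> (\<lambda>lam. lam - real i / 2) ` gr_supp (BRing u mul) (f_u u) G"
      then have "mu + real i / 2 \<notin> gr_supp (BRing u mul) (f_u u) G" by force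
      then have "ereal (mu + real i / 2 - real i / 2) < u (gr_rep (G (mu + real i / 2)) i)"
        by (rule grB_supp[OF G])
      then have "phi G i mu = Fil_plus RR u mu" unfolding phi_def clsR_zero_iff by simp
      then show False using a gr_supp_def by blast
    qed
  qed
  then show "finite (gr_supp RR u (phi G i))" by (rule finite_subset) (rule finite_imageI[OF grB_fin[OF G]])
qed

lemma phi_bound: assumes G: "G \<in> carrier (gr (BRing u mul) (f_u u))"
  shows "\<exists>n. \<forall>m>n. phi G m = (\<lambda>mu. Fil_plus RR u mu)"
proof -
  define S where "S = gr_supp (BRing u mul) (f_u u) G"
  have fS: "finite S" using grB_fin[OF G] S_def by simp
  have ex: "\<forall>lam. \<exists>N. tsge N (gr_rep (G lam)) (lam + 1)"
    using grB_rep(1)[OF G] unfolding bser_def by blast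
  obtain Nf where Nf: "\<forall>lam. tsge (Nf lam) (gr_rep (G lam)) (lam + 1)" using choice[OF ex] by blast
  obtain n where n: "\<forall>lam\<in>S. Nf lam \<le> n"
    using fS finite_nat_set_iff_bounded_le[of "Nf ` S"] by auto
  have "phi G m = (\<lambda>mu. Fil_plus RR u mu)" if m: "m > n" for m
  proof
    fix mu
    define lam where "lam = mu + real m / 2"
    have "ereal mu < u (gr_rep (G lam) m)"
    proof (cases "lam \<in> S")
      case True
      then have "m \<ge> Nf lam" using n m by force
      then have "vge (gr_rep (G lam) m) (lam + 1 - real m / 2)" using Nf unfolding tsge_def by blast
      then have "vge (gr_rep (G lam) m) (mu + 1)" unfolding lam_def by simp
      then have "vge (gr_rep (G lam) m) (mu + 1/2)" by (rule vge_mono) simp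
      then show ?thesis by (rule vgt_vge)
    next
      case False
      then have "ereal (lam - real m / 2) < u (gr_rep (G lam) m)" using grB_supp[OF G] S_def by blast
      then show ?thesis unfolding lam_def by simp
    qed
    then show "phi G m mu = Fil_plus RR u mu" unfolding phi_def clsR_zero_iff lam_def by simp
  qed
  then show ?thesis by blast
qed

lemma phi_carrier: assumes G: "G \<in> carrier (gr (BRing u mul) (f_u u))"
  shows "phi G \<in> carrier (UP (gr RR u))"
proof -
  obtain n where n: "\<forall>m>n. phi G m = (\<lambda>mu. Fil_plus RR u mu)" using phi_bound[OF G] by blast
  have "phi G \<in> up (gr RR u)"
  proof (rule mem_upI)
    fix m show "phi G m \<in> carrier (gr RR u)" by (rule phi_coeff[OF G])
  next
    have "bound \<zero>\<^bsub>gr RR u\<^esub> n (phi G)"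
      by (rule bound.intro) (simp add: n gr_zero[OF ring_RR filt_RR])
    then show "\<exists>n. bound \<zero>\<^bsub>gr RR u\<^esub> n (phi G)" by blast
  qed
  then show ?thesis by (simp add: UP_def)
qed

end
end

context
  fixes A :: "('a, 'm) ring_scheme" (structure) and v :: "'a \<Rightarrow> ereal"
  assumes R: "ring A" and Fv: "is_filtration A v"
begin
interpretation ring A by (rule R)

lemma gr_mult_closed: assumes g: "g \<in> carrier (gr A v)" and h: "h \<in> carrier (gr A v)"
  shows "g \<otimes>\<^bsub>gr A v\<^esub> h \<in> carrier (gr A v)"
  unfolding gr_carrier[OF R Fv]
proof
  have fg: "finite (gr_supp A v g)" "finite (gr_supp A v h)" using g h gr_carrier[OF R Fv] by auto
  have tm: "gr_rep (g mu) \<otimes> gr_rep (h (lam - mu)) \<in> Fil A v lam" for lam mu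
    using Fil_mul[OF R Fv carrier_rep(1)[OF R Fv g, of mu] carrier_rep(1)[OF R Fv h, of "lam - mu"]] by simp
  show "\<forall>lam. \<exists>r\<in>Fil A v lam. (g \<otimes>\<^bsub>gr A v\<^esub> h) lam = gr_cls A v lam r"
  proof
    fix lam
    have "finsum A (\<lambda>mu. gr_rep (g mu) \<otimes> gr_rep (h (lam - mu))) (gr_supp A v g) \<in> Fil A v lam"
      by (rule Fil_finsum[OF R Fv fg(1)]) (use tm in auto)
    then show "\<exists>r\<in>Fil A v lam. (g \<otimes>\<^bsub>gr A v\<^esub> h) lam = gr_cls A v lam r"
      unfolding gr_mult[OF R Fv] by blast
  qed
  have "gr_supp A v (g \<otimes>\<^bsub>gr A v\<^esub> h) \<subseteq> (\<lambda>(a, b). a + b) ` (gr_supp A v g \<times> gr_supp A v h)"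
  proof
    fix lam assume a: "lam \<in> gr_supp A v (g \<otimes>\<^bsub>gr A v\<^esub> h)"
    show "lam \<in> (\<lambda>(a, b). a + b) ` (gr_supp A v g \<times> gr_supp A v h)"
    proof (rule ccontr)
      assume na: "lam \<notin> (\<lambda>(a, b). a + b) ` (gr_supp A v g \<times> gr_supp A v h)"
      have "finsum A (\<lambda>mu. gr_rep (g mu) \<otimes> gr_rep (h (lam - mu))) (gr_supp A v g) \<in> Fil_plus A v lam"
      proof (rule Fp_finsum[OF R Fv fg(1)], rule Pi_I)
        fix mu assume mu: "mu \<in> gr_supp A v g"
        have "lam - mu \<notin> gr_supp A v h"
        proof
          assume "lam - mu \<in> gr_supp A v h"
          then have "(mu, lam - mu) \<in> gr_supp A v g \<times> gr_supp A v h" using mu by simp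
          then have "lam \<in> (\<lambda>(a, b). a + b) ` (gr_supp A v g \<times> gr_supp A v h)"
            by (metis (no_types, lifting) add_diff_cancel_left' diff_add_cancel case_prod_conv image_eqI)
          then show False using na by blast
        qed
        then have "gr_rep (h (lam - mu)) \<in> Fil_plus A v (lam - mu)" using supp_rep[OF R Fv h] by blast
        from Fp_mul2[OF R Fv carrier_rep(1)[OF R Fv g, of mu] this]
        show "gr_rep (g mu) \<otimes> gr_rep (h (lam - mu)) \<in> Fil_plus A v lam" by simp
      qed
      then have "(g \<otimes>\<^bsub>gr A v\<^esub> h) lam = Fil_plus A v lam"
        unfolding gr_mult[OF R Fv] by (rule cls_Fp[OF R Fv])
      then show False using a gr_supp_def by blast
    qed
  qed
  then show "finite (gr_supp A v (g \<otimes>\<^bsub>gr A v\<^esub> h))"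
    by (rule finite_subset) (use fg in auto)
qed

lemma gr_one_closed: assumes "\<one> \<in> Fil A v 0" shows "\<one>\<^bsub>gr A v\<^esub> \<in> carrier (gr A v)"
  unfolding gr_carrier[OF R Fv]
proof
  show "\<forall>lam. \<exists>r\<in>Fil A v lam. \<one>\<^bsub>gr A v\<^esub> lam = gr_cls A v lam r"
    unfolding gr_one[OF R Fv] using assms Fil_zero[OF R Fv] cls_zero[OF R Fv] by auto
  have "gr_supp A v \<one>\<^bsub>gr A v\<^esub> \<subseteq> {0}" unfolding gr_supp_def gr_one[OF R Fv] by auto
  then show "finite (gr_supp A v \<one>\<^bsub>gr A v\<^esub>)" by (rule finite_subset) simp
qed

end

lemma UP_mult_eq: "p \<in> carrier (UP R) \<Longrightarrow> q \<in> carrier (UP R) \<Longrightarrow>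
   p \<otimes>\<^bsub>UP R\<^esub> q = (\<lambda>n. \<Oplus>\<^bsub>R\<^esub>i \<in> {..n}. p i \<otimes>\<^bsub>R\<^esub> q (n - i))"
  by (simp add: UP_def)
lemma UP_add_eq: "p \<in> carrier (UP R) \<Longrightarrow> q \<in> carrier (UP R) \<Longrightarrow>
   p \<oplus>\<^bsub>UP R\<^esub> q = (\<lambda>i. p i \<oplus>\<^bsub>R\<^esub> q i)"
  by (simp add: UP_def)
lemma UP_one_eq: "\<one>\<^bsub>UP R\<^esub> = (\<lambda>i. if i = 0 then \<one>\<^bsub>R\<^esub> else \<zero>\<^bsub>R\<^esub>)"
  by (simp add: UP_def)

context skctx begin

lemma grR_one_closed: "\<one>\<^bsub>gr RR u\<^esub> \<in> carrier (gr RR u)"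
  by (rule gr_one_closed[OF ring_RR filt_RR]) (simp add: RR_Fil u1)

lemma grR_mult_closed: "g \<in> carrier (gr RR u) \<Longrightarrow> h \<in> carrier (gr RR u) \<Longrightarrow> g \<otimes>\<^bsub>gr RR u\<^esub> h \<in> carrier (gr RR u)"
  by (rule gr_mult_closed[OF ring_RR filt_RR])

lemma grR_add: "g \<oplus>\<^bsub>gr RR u\<^esub> h = (\<lambda>mu. gr_cls RR u mu (gr_rep (g mu) + gr_rep (h mu)))"
  using gr_add[OF ring_RR filt_RR] by simp

lemma grR_finsum: assumes "finite I" "f \<in> I \<rightarrow> carrier (gr RR u)"
  shows "finsum (gr RR u) f I = (\<lambda>mu. gr_cls RR u mu (\<Sum>i\<in>I. gr_rep (f i mu)))"
  using gr_finsum[OF ring_RR filt_RR assms] by (simp add: RR_finsum[OF assms(1)])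

lemma bser_sum: "finite S \<Longrightarrow> (\<And>s. s \<in> S \<Longrightarrow> bser (f s)) \<Longrightarrow> bser (\<lambda>k. \<Sum>s\<in>S. f s k)"
  by (induction S rule: finite_induct) (auto intro: bser_add)

lemma rep_clsR_zero: "eqm mu (gr_rep (Fil_plus RR u mu)) 0"
  using repR[of mu 0] cls_zero[OF ring_RR filt_RR, of mu] by simp

context fixes mul assumes ok: "skew_mult_ok u \<sigma> \<delta> mul"
begin

lemma phi_supp: assumes G: "G \<in> carrier (gr (BRing u mul) (f_u u))"
  shows "gr_supp RR u (phi G i) \<subseteq> (\<lambda>lam. lam - real i / 2) ` gr_supp (BRing u mul) (f_u u) G"
proof
  fix mu assume a: "mu \<in> gr_supp RR u (phi G i)"
  show "mu \<in> (\<lambda>lam. lam - real i / 2) ` gr_supp (BRing u mul) (f_u u) G"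
  proof (rule ccontr)
    assume "mu \<notin> (\<lambda>lam. lam - real i / 2) ` gr_supp (BRing u mul) (f_u u) G"
    then have "mu + real i / 2 \<notin> gr_supp (BRing u mul) (f_u u) G" by force
    then have "ereal (mu + real i / 2 - real i / 2) < u (gr_rep (G (mu + real i / 2)) i)"
      by (rule grB_supp[OF ok G])
    then have "phi G i mu = Fil_plus RR u mu" unfolding phi_def clsR_zero_iff by simp
    then show False using a gr_supp_def by blast
  qed
qed

lemma rep_FpB: "eqm (lam - real i / 2) (gr_rep (Fil_plus (BRing u mul) (f_u u) lam) i) 0"
proof -
  have "Fil_plus (BRing u mul) (f_u u) lam = gr_cls (BRing u mul) (f_u u) lam (\<lambda>n. 0)"
    using cls_zero[OF ringB[OF ok] filtB[OF ok], of lam] by simp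
  then show ?thesis using repB(2)[OF ok bser_zero, where lam=lam and i=i] by simp
qed

lemma phi_add: assumes G: "G \<in> carrier (gr (BRing u mul) (f_u u))" and H: "H \<in> carrier (gr (BRing u mul) (f_u u))"
  shows "phi (G \<oplus>\<^bsub>gr (BRing u mul) (f_u u)\<^esub> H) = phi G \<oplus>\<^bsub>UP (gr RR u)\<^esub> phi H"
proof (rule ext, rule ext)
  fix i mu
  define lam where "lam = mu + real i / 2"
  define P where "P = gr_rep (G lam)"
  define Q where "Q = gr_rep (H lam)"
  have bP: "bser P" using grB_rep[OF ok G] P_def by blast
  have bQ: "bser Q" using grB_rep[OF ok H] Q_def by blast
  have ml: "lam - real i / 2 = mu" unfolding lam_def by simp
  have GH: "(G \<oplus>\<^bsub>gr (BRing u mul) (f_u u)\<^esub> H) lam = gr_cls (BRing u mul) (f_u u) lam (\<lambda>n. P n + Q n)"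
    unfolding gr_add[OF ringB[OF ok] filtB[OF ok]] P_def Q_def by (simp add: s_add_def)
  have L: "phi (G \<oplus>\<^bsub>gr (BRing u mul) (f_u u)\<^esub> H) i mu = gr_cls RR u mu (P i + Q i)"
  proof -
    have "eqm mu (gr_rep (gr_cls (BRing u mul) (f_u u) lam (\<lambda>n. P n + Q n)) i) (P i + Q i)"
      using repB(2)[OF ok bser_add[OF bP bQ], where lam=lam and i=i] ml by simp
    then show ?thesis unfolding phi_def lam_def[symmetric] GH clsR_eq by simp
  qed
  have R: "(phi G \<oplus>\<^bsub>UP (gr RR u)\<^esub> phi H) i mu =
      gr_cls RR u mu (gr_rep (phi G i mu) + gr_rep (phi H i mu))"
    by (simp add: UP_add_eq[OF phi_carrier[OF ok G] phi_carrier[OF ok H]] grR_add)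
  have e1: "eqm mu (gr_rep (phi G i mu)) (P i)" unfolding phi_def lam_def[symmetric] P_def by (rule repR)
  have e2: "eqm mu (gr_rep (phi H i mu)) (Q i)" unfolding phi_def lam_def[symmetric] Q_def by (rule repR)
  show "phi (G \<oplus>\<^bsub>gr (BRing u mul) (f_u u)\<^esub> H) i mu = (phi G \<oplus>\<^bsub>UP (gr RR u)\<^esub> phi H) i mu"
    unfolding L R clsR_eq by (rule eqm_sym, rule eqm_add[OF e1 e2])
qed

lemma phi_one: "phi \<one>\<^bsub>gr (BRing u mul) (f_u u)\<^esub> = \<one>\<^bsub>UP (gr RR u)\<^esub>"
proof (rule ext, rule ext)
  fix i mu
  define lam where "lam = mu + real i / 2"
  have ml: "lam - real i / 2 = mu" unfolding lam_def by simp
  have lhs: "phi \<one>\<^bsub>gr (BRing u mul) (f_u u)\<^esub> i mu =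
    gr_cls RR u mu (gr_rep (if lam = 0 then gr_cls (BRing u mul) (f_u u) 0 (const_s 1)
       else Fil_plus (BRing u mul) (f_u u) lam) i)"
    unfolding phi_def gr_one[OF ringB[OF ok] filtB[OF ok]] lam_def by simp
  have rhs: "\<one>\<^bsub>UP (gr RR u)\<^esub> i mu = (if i = 0 then (if mu = 0 then gr_cls RR u 0 1 else Fil_plus RR u mu)
      else Fil_plus RR u mu)"
    by (simp add: UP_one_eq gr_one[OF ring_RR filt_RR] gr_zero[OF ring_RR filt_RR])
  show "phi \<one>\<^bsub>gr (BRing u mul) (f_u u)\<^esub> i mu = \<one>\<^bsub>UP (gr RR u)\<^esub> i mu"
  proof (cases "lam = 0")
    case True
    have e: "eqm mu (gr_rep (gr_cls (BRing u mul) (f_u u) 0 (const_s 1)) i) (const_s 1 i)"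
      using repB(2)[OF ok bser_const[of 1], where lam=0 and i=i] ml True by simp
    have "phi \<one>\<^bsub>gr (BRing u mul) (f_u u)\<^esub> i mu = gr_cls RR u mu (const_s 1 i)"
      unfolding lhs using True e clsR_eq by simp
    then show ?thesis unfolding rhs using True lam_def
      by (auto simp: const_s_def clsR_zero_iff u0)
  next
    case False
    have e: "eqm mu (gr_rep (Fil_plus (BRing u mul) (f_u u) lam) i) 0"
      using rep_FpB[of lam i] ml by simp
    have "phi \<one>\<^bsub>gr (BRing u mul) (f_u u)\<^esub> i mu = gr_cls RR u mu 0"
      unfolding lhs using False e clsR_eq by simp
    then show ?thesis unfolding rhs using False lam_def cls_zero[OF ring_RR filt_RR] by auto
  qed
qed

end
end

context skctx begin
context fixes mul assumes ok: "skew_mult_ok u \<sigma> \<delta> mul"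
begin

lemma phi_mult: assumes G: "G \<in> carrier (gr (BRing u mul) (f_u u))" and H: "H \<in> carrier (gr (BRing u mul) (f_u u))"
  shows "phi (G \<otimes>\<^bsub>gr (BRing u mul) (f_u u)\<^esub> H) = phi G \<otimes>\<^bsub>UP (gr RR u)\<^esub> phi H"
proof (rule ext, rule ext)
  fix n mu
  define lam where "lam = mu + real n / 2"
  define SG where "SG = gr_supp (BRing u mul) (f_u u) G"
  define P where "P \<nu> = gr_rep (G \<nu>)" for \<nu>
  define Q where "Q \<kappa> = gr_rep (H \<kappa>)" for \<kappa>
  have fSG: "finite SG" using grB_fin[OF ok G] SG_def by simp
  have bP: "bser (P \<nu>)" "sge (P \<nu>) \<nu>" for \<nu> using grB_rep[OF ok G] P_def by auto
  have bQ: "bser (Q \<nu>)" "sge (Q \<nu>) \<nu>" for \<nu> using grB_rep[OF ok H] Q_def by auto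
  have ml: "lam - real n / 2 = mu" unfolding lam_def by simp
  define SMM where "SMM = (\<lambda>k. \<Sum>\<nu>\<in>SG. Lop (P \<nu>) (Q (lam - \<nu>)) k)"
  have bSMM: "bser SMM" unfolding SMM_def by (rule bser_sum[OF fSG]) (use bser_Lop bP bQ in blast)
  have GH: "(G \<otimes>\<^bsub>gr (BRing u mul) (f_u u)\<^esub> H) lam = gr_cls (BRing u mul) (f_u u) lam SMM"
  proof -
    have "(G \<otimes>\<^bsub>gr (BRing u mul) (f_u u)\<^esub> H) lam = gr_cls (BRing u mul) (f_u u) lam
        (finsum (BRing u mul) (\<lambda>\<nu>. mul (P \<nu>) (Q (lam - \<nu>))) SG)"
      unfolding gr_mult[OF ringB[OF ok] filtB[OF ok]] SG_def P_def Q_def by simp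
    also have "finsum (BRing u mul) (\<lambda>\<nu>. mul (P \<nu>) (Q (lam - \<nu>))) SG =
        (\<lambda>k. \<Sum>\<nu>\<in>SG. mul (P \<nu>) (Q (lam - \<nu>)) k)"
      by (rule finsumB[OF ok fSG]) (simp add: eqL[OF ok] bP bQ bser_Lop)
    also have "\<dots> = SMM" unfolding SMM_def by (simp add: eqL[OF ok] bP bQ)
    finally show ?thesis .
  qed
  have L: "phi (G \<otimes>\<^bsub>gr (BRing u mul) (f_u u)\<^esub> H) n mu = gr_cls RR u mu (SMM n)"
  proof -
    have "eqm mu (gr_rep (gr_cls (BRing u mul) (f_u u) lam SMM) n) (SMM n)"
      using repB(2)[OF ok bSMM, where lam=lam and i=n] ml by simp
    then show ?thesis unfolding phi_def lam_def[symmetric] GH clsR_eq by simp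
  qed
  define T where "T = (\<Sum>\<nu>\<in>SG. \<Sum>i\<le>n. P \<nu> i * Q (lam - \<nu>) (n - i))"
  have ST: "eqm mu (SMM n) T" unfolding SMM_def T_def
  proof (rule eqm_sum[OF fSG])
    fix \<nu> assume "\<nu> \<in> SG"
    have "eqm (\<nu> + (lam - \<nu>) - real n / 2) (Lop (P \<nu>) (Q (lam - \<nu>)) n) (\<Sum>i\<le>n. P \<nu> i * Q (lam - \<nu>) (n - i))"
      by (rule K[OF bP bQ])
    then show "eqm mu (Lop (P \<nu>) (Q (lam - \<nu>)) n) (\<Sum>i\<le>n. P \<nu> i * Q (lam - \<nu>) (n - i))"
      using ml by simp
  qed
  have pcG: "phi G \<in> carrier (UP (gr RR u))" by (rule phi_carrier[OF ok G])
  have pcH: "phi H \<in> carrier (UP (gr RR u))" by (rule phi_carrier[OF ok H])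
  have prc: "(\<lambda>i. phi G i \<otimes>\<^bsub>gr RR u\<^esub> phi H (n - i)) \<in> {..n} \<rightarrow> carrier (gr RR u)"
    using grR_mult_closed phi_coeff[OF ok G] phi_coeff[OF ok H] by blast
  have R: "(phi G \<otimes>\<^bsub>UP (gr RR u)\<^esub> phi H) n mu =
      gr_cls RR u mu (\<Sum>i\<le>n. gr_rep ((phi G i \<otimes>\<^bsub>gr RR u\<^esub> phi H (n - i)) mu))"
    unfolding UP_mult_eq[OF pcG pcH] grR_finsum[OF finite_atMost prc] by simp
  have EI: "eqm mu (gr_rep ((phi G i \<otimes>\<^bsub>gr RR u\<^esub> phi H (n - i)) mu)) (\<Sum>\<nu>\<in>SG. P \<nu> i * Q (lam - \<nu>) (n - i))"
    if i: "i \<le> n" for i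
  proof -
    define Si where "Si = (\<lambda>\<nu>. \<nu> - real i / 2) ` SG"
    have fSi: "finite Si" unfolding Si_def using fSG by simp
    have M: "(phi G i \<otimes>\<^bsub>gr RR u\<^esub> phi H (n - i)) mu = gr_cls RR u mu
        (\<Sum>\<nu>'\<in>Si. gr_rep (phi G i \<nu>') * gr_rep (phi H (n - i) (mu - \<nu>')))"
      using gr_mult_S[OF ring_RR filt_RR phi_coeff[OF ok G, of i] phi_coeff[OF ok H, of "n - i"]
          fSi[unfolded Si_def SG_def] phi_supp[OF ok G, of i]]
      by (simp add: RR_finsum[OF fSi[unfolded Si_def SG_def]] Si_def SG_def)
    have e1: "eqm mu (gr_rep ((phi G i \<otimes>\<^bsub>gr RR u\<^esub> phi H (n - i)) mu))
        (\<Sum>\<nu>'\<in>Si. gr_rep (phi G i \<nu>') * gr_rep (phi H (n - i) (mu - \<nu>')))"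
      unfolding M by (rule repR)
    have inj: "inj_on (\<lambda>\<nu>. \<nu> - real i / 2) SG" by (rule inj_onI) simp
    have e2: "(\<Sum>\<nu>'\<in>Si. gr_rep (phi G i \<nu>') * gr_rep (phi H (n - i) (mu - \<nu>'))) =
        (\<Sum>\<nu>\<in>SG. gr_rep (phi G i (\<nu> - real i / 2)) * gr_rep (phi H (n - i) (mu - (\<nu> - real i / 2))))"
      unfolding Si_def by (simp add: sum.reindex[OF inj])
    have e3: "eqm mu (gr_rep (phi G i (\<nu> - real i / 2)) * gr_rep (phi H (n - i) (mu - (\<nu> - real i / 2))))
        (P \<nu> i * Q (lam - \<nu>) (n - i))" for \<nu>
    proof -
      define a where "a = \<nu> - real i / 2"
      define b where "b = mu - \<nu> + real i / 2"
      have x: "eqm a (gr_rep (phi G i a)) (P \<nu> i)"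
      proof -
        have "phi G i a = gr_cls RR u a (P \<nu> i)" unfolding phi_def a_def P_def by simp
        then show ?thesis using repR by simp
      qed
      have y: "eqm b (gr_rep (phi H (n - i) b)) (Q (lam - \<nu>) (n - i))"
      proof -
        have "b + real (n - i) / 2 = lam - \<nu>" unfolding b_def lam_def using i by (simp add: of_nat_diff field_simps)
        then have "phi H (n - i) b = gr_cls RR u b (Q (lam - \<nu>) (n - i))" unfolding phi_def Q_def by simp
        then show ?thesis using repR by simp
      qed
      have ua: "ereal a \<le> u (P \<nu> i)" using bP(2)[of \<nu>] unfolding sge_def vge_def a_def by blast
      have ub: "ereal b \<le> u (gr_rep (phi H (n - i) b))" by (rule grR_rep(1)[OF phi_coeff[OF ok H]])
      have "eqm (a + b) (gr_rep (phi G i a) * gr_rep (phi H (n - i) b)) (P \<nu> i * Q (lam - \<nu>) (n - i))"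
        by (rule eqm_mul[OF x y ua ub])
      moreover have "a + b = mu" "b = mu - (\<nu> - real i / 2)" unfolding a_def b_def by simp_all
      ultimately show ?thesis unfolding a_def by simp
    qed
    have "eqm mu (\<Sum>\<nu>'\<in>Si. gr_rep (phi G i \<nu>') * gr_rep (phi H (n - i) (mu - \<nu>')))
        (\<Sum>\<nu>\<in>SG. P \<nu> i * Q (lam - \<nu>) (n - i))"
      unfolding e2 by (rule eqm_sum[OF fSG e3])
    then show ?thesis using e1 eqm_trans by blast
  qed
  have "eqm mu (\<Sum>i\<le>n. gr_rep ((phi G i \<otimes>\<^bsub>gr RR u\<^esub> phi H (n - i)) mu))
      (\<Sum>i\<le>n. \<Sum>\<nu>\<in>SG. P \<nu> i * Q (lam - \<nu>) (n - i))"
    by (rule eqm_sum) (use EI in auto)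
  also have "(\<Sum>i\<le>n. \<Sum>\<nu>\<in>SG. P \<nu> i * Q (lam - \<nu>) (n - i)) = T"
    unfolding T_def by (rule sum.swap)
  finally have RT: "eqm mu (\<Sum>i\<le>n. gr_rep ((phi G i \<otimes>\<^bsub>gr RR u\<^esub> phi H (n - i)) mu)) T" .
  show "phi (G \<otimes>\<^bsub>gr (BRing u mul) (f_u u)\<^esub> H) n mu = (phi G \<otimes>\<^bsub>UP (gr RR u)\<^esub> phi H) n mu"
    unfolding L R clsR_eq using ST RT eqm_sym eqm_trans by blast
qed

end
end

lemma UP_monom_eq: "a \<in> carrier R \<Longrightarrow> monom (UP R) a n = (\<lambda>i. if i = n then a else \<zero>\<^bsub>R\<^esub>)"
  by (simp add: UP_def)

lemma UP_carrier_iff: "p \<in> carrier (UP R) \<longleftrightarrow> (\<forall>i. p i \<in> carrier R) \<and> (\<exists>n. \<forall>m>n. p m = \<zero>\<^bsub>R\<^esub>)"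
  by (auto simp: UP_def up_def bound_def)

context skctx begin

definition Pl :: "(nat \<Rightarrow> real \<Rightarrow> 'a set) \<Rightarrow> real \<Rightarrow> nat \<Rightarrow> 'a" where
  "Pl p lam = (\<lambda>i. if p i (lam - real i / 2) = Fil_plus RR u (lam - real i / 2) then 0
      else gr_rep (p i (lam - real i / 2)))"

lemma clsR_zero: "gr_cls RR u mu 0 = Fil_plus RR u mu"
  using cls_zero[OF ring_RR filt_RR, of mu] by simp

lemma Pl_props: assumes p: "p \<in> carrier (UP (gr RR u))"
  shows "bser (Pl p lam)" "sge (Pl p lam) lam"
    "gr_cls RR u (lam - real i / 2) (Pl p lam i) = p i (lam - real i / 2)"
proof -
  have pc: "p i \<in> carrier (gr RR u)" for i using p UP_carrier_iff by blast
  obtain n where n0: "\<forall>m>n. p m = \<zero>\<^bsub>gr RR u\<^esub>" using p UP_carrier_iff by blast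
  have n: "\<forall>m>n. p m = (\<lambda>mu. Fil_plus RR u mu)" using n0 gr_zero[OF ring_RR filt_RR] by simp
  show "bser (Pl p lam)" by (rule bser_fin[of "Suc n"]) (auto simp: Pl_def n)
  show "sge (Pl p lam) lam" unfolding sge_def
  proof
    fix i show "vge (Pl p lam i) (lam - real i / 2)"
      unfolding Pl_def vge_def using grR_rep(1)[OF pc] by (auto simp: u0)
  qed
  show "gr_cls RR u (lam - real i / 2) (Pl p lam i) = p i (lam - real i / 2)"
  proof (cases "p i (lam - real i / 2) = Fil_plus RR u (lam - real i / 2)")
    case True then show ?thesis unfolding Pl_def using clsR_zero by simp
  next
    case False then show ?thesis unfolding Pl_def using grR_rep(2)[OF pc] by simp
  qed
qed

context fixes mul assumes ok: "skew_mult_ok u \<sigma> \<delta> mul"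
begin

definition psi :: "(nat \<Rightarrow> real \<Rightarrow> 'a set) \<Rightarrow> real \<Rightarrow> (nat \<Rightarrow> 'a) set" where
  "psi p = (\<lambda>lam. gr_cls (BRing u mul) (f_u u) lam (Pl p lam))"

lemma clsB_zero: "gr_cls (BRing u mul) (f_u u) lam (\<lambda>n. 0) = Fil_plus (BRing u mul) (f_u u) lam"
  using cls_zero[OF ringB[OF ok] filtB[OF ok], of lam] by simp

lemma psi_carrier: assumes p: "p \<in> carrier (UP (gr RR u))"
  shows "psi p \<in> carrier (gr (BRing u mul) (f_u u))"
  unfolding gr_carrier[OF ringB[OF ok] filtB[OF ok]]
proof
  show "\<forall>lam. \<exists>r\<in>Fil (BRing u mul) (f_u u) lam. psi p lam = gr_cls (BRing u mul) (f_u u) lam r"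
    unfolding psi_def FilB[OF ok] using Pl_props[OF p] by blast
  have pc: "p i \<in> carrier (gr RR u)" for i using p UP_carrier_iff by blast
  obtain n where n0: "\<forall>m>n. p m = \<zero>\<^bsub>gr RR u\<^esub>" using p UP_carrier_iff by blast
  have n: "\<forall>m>n. p m = (\<lambda>mu. Fil_plus RR u mu)" using n0 gr_zero[OF ring_RR filt_RR] by simp
  have fin: "finite (gr_supp RR u (p i))" for i using pc gr_carrier[OF ring_RR filt_RR] by blast
  have "gr_supp (BRing u mul) (f_u u) (psi p) \<subseteq> (\<Union>i\<in>{..n}. (\<lambda>mu. mu + real i / 2) ` gr_supp RR u (p i))"
  proof
    fix lam assume a: "lam \<in> gr_supp (BRing u mul) (f_u u) (psi p)"
    show "lam \<in> (\<Union>i\<in>{..n}. (\<lambda>mu. mu + real i / 2) ` gr_supp RR u (p i))"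
    proof (rule ccontr)
      assume na: "lam \<notin> (\<Union>i\<in>{..n}. (\<lambda>mu. mu + real i / 2) ` gr_supp RR u (p i))"
      have "Pl p lam i = 0" for i
      proof (cases "i \<le> n")
        case True
        have "lam - real i / 2 \<notin> gr_supp RR u (p i)"
        proof
          assume "lam - real i / 2 \<in> gr_supp RR u (p i)"
          then have "lam \<in> (\<lambda>mu. mu + real i / 2) ` gr_supp RR u (p i)" by force
          then show False using na True by blast
        qed
        then show ?thesis unfolding Pl_def gr_supp_def by simp
      next
        case False then show ?thesis unfolding Pl_def using n by simp
      qed
      then have "Pl p lam = (\<lambda>n. 0)" by auto
      then have "psi p lam = Fil_plus (BRing u mul) (f_u u) lam" unfolding psi_def by (simp add: clsB_zero)
      then show False using a gr_supp_def by blast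
    qed
  qed
  then show "finite (gr_supp (BRing u mul) (f_u u) (psi p))"
    by (rule finite_subset) (use fin in auto)
qed

lemma phi_psi: assumes p: "p \<in> carrier (UP (gr RR u))" shows "phi (psi p) = p"
proof (rule ext, rule ext)
  fix i mu
  define lam where "lam = mu + real i / 2"
  have ml: "lam - real i / 2 = mu" unfolding lam_def by simp
  have "eqm mu (gr_rep (psi p lam) i) (Pl p lam i)"
    unfolding psi_def using repB(2)[OF ok Pl_props(1)[OF p], where lam=lam and i=i] ml by simp
  then have "phi (psi p) i mu = gr_cls RR u mu (Pl p lam i)" unfolding phi_def lam_def[symmetric] clsR_eq .
  also have "\<dots> = p i mu" using Pl_props(3)[OF p, of lam i] ml by simp
  finally show "phi (psi p) i mu = p i mu" .
qed

lemma phi_inj: "inj_on phi (carrier (gr (BRing u mul) (f_u u)))"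
proof (rule inj_onI)
  fix G H assume G: "G \<in> carrier (gr (BRing u mul) (f_u u))" and H: "H \<in> carrier (gr (BRing u mul) (f_u u))"
    and e: "phi G = phi H"
  show "G = H"
  proof
    fix lam
    have "eqm (lam - real i / 2) (gr_rep (G lam) i) (gr_rep (H lam) i)" for i
    proof -
      have "phi G i (lam - real i / 2) = phi H i (lam - real i / 2)" using e by simp
      then show ?thesis unfolding phi_def clsR_eq by simp
    qed
    then have "gr_cls (BRing u mul) (f_u u) lam (gr_rep (G lam)) = gr_cls (BRing u mul) (f_u u) lam (gr_rep (H lam))"
      using clsB_eq[OF ok grB_rep(1)[OF ok G] grB_rep(1)[OF ok H]] by blast
    then show "G lam = H lam" using grB_rep(3)[OF ok G] grB_rep(3)[OF ok H] by simp
  qed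
qed

lemma phi_iso: "phi \<in> ring_iso (gr (BRing u mul) (f_u u)) (UP (gr RR u))"
  unfolding ring_iso_def ring_hom_def bij_betw_def
proof (intro CollectI conjI allI impI Pi_I)
  fix G assume "G \<in> carrier (gr (BRing u mul) (f_u u))"
  then show "phi G \<in> carrier (UP (gr RR u))" by (rule phi_carrier[OF ok])
next
  fix G H assume "G \<in> carrier (gr (BRing u mul) (f_u u)) \<and> H \<in> carrier (gr (BRing u mul) (f_u u))"
  then show "phi (G \<otimes>\<^bsub>gr (BRing u mul) (f_u u)\<^esub> H) = phi G \<otimes>\<^bsub>UP (gr RR u)\<^esub> phi H"
    "phi (G \<oplus>\<^bsub>gr (BRing u mul) (f_u u)\<^esub> H) = phi G \<oplus>\<^bsub>UP (gr RR u)\<^esub> phi H"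
    using phi_mult[OF ok] phi_add[OF ok] by auto
next
  show "phi \<one>\<^bsub>gr (BRing u mul) (f_u u)\<^esub> = \<one>\<^bsub>UP (gr RR u)\<^esub>" by (rule phi_one[OF ok])
next
  show "inj_on phi (carrier (gr (BRing u mul) (f_u u)))" by (rule phi_inj)
next
  show "phi ` carrier (gr (BRing u mul) (f_u u)) = carrier (UP (gr RR u))"
  proof
    show "phi ` carrier (gr (BRing u mul) (f_u u)) \<subseteq> carrier (UP (gr RR u))"
      using phi_carrier[OF ok] by blast
    show "carrier (UP (gr RR u)) \<subseteq> phi ` carrier (gr (BRing u mul) (f_u u))"
    proof
      fix p assume p: "p \<in> carrier (UP (gr RR u))"
      then have "phi (psi p) = p" "psi p \<in> carrier (gr (BRing u mul) (f_u u))"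
        using phi_psi psi_carrier by auto
      then show "p \<in> phi ` carrier (gr (BRing u mul) (f_u u))" by force
    qed
  qed
qed

lemma phi_hom: "phi ` gr_hom (BRing u mul) (f_u u) lam = grpoly_hom RR u lam"
proof
  show "phi ` gr_hom (BRing u mul) (f_u u) lam \<subseteq> grpoly_hom RR u lam"
  proof
    fix p assume "p \<in> phi ` gr_hom (BRing u mul) (f_u u) lam"
    then obtain G where G: "G \<in> carrier (gr (BRing u mul) (f_u u))"
      "\<forall>mu. mu \<noteq> lam \<longrightarrow> G mu = Fil_plus (BRing u mul) (f_u u) mu" and p: "p = phi G"
      unfolding gr_hom_def by blast
    have "phi G i \<in> gr_hom RR u (lam - real i / 2)" for i
      unfolding gr_hom_def
    proof (intro CollectI conjI allI impI)
      show "phi G i \<in> carrier (gr RR u)" by (rule phi_coeff[OF ok G(1)])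
      fix mu assume mu: "mu \<noteq> lam - real i / 2"
      then have "mu + real i / 2 \<noteq> lam" by linarith
      then have g: "G (mu + real i / 2) = Fil_plus (BRing u mul) (f_u u) (mu + real i / 2)" using G(2) by blast
      have "eqm mu (gr_rep (G (mu + real i / 2)) i) 0"
        using rep_FpB[OF ok, of "mu + real i / 2" i] g by simp
      then show "phi G i mu = Fil_plus RR u mu"
        unfolding phi_def clsR_zero_iff eqm_0_iff by simp
    qed
    then show "p \<in> grpoly_hom RR u lam" unfolding grpoly_hom_def p using phi_carrier[OF ok G(1)] by blast
  qed
  show "grpoly_hom RR u lam \<subseteq> phi ` gr_hom (BRing u mul) (f_u u) lam"
  proof
    fix p assume "p \<in> grpoly_hom RR u lam"
    then have p: "p \<in> carrier (UP (gr RR u))" "\<forall>i. p i \<in> gr_hom RR u (lam - real i / 2)"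
      unfolding grpoly_hom_def by auto
    have "psi p \<in> gr_hom (BRing u mul) (f_u u) lam"
      unfolding gr_hom_def
    proof (intro CollectI conjI allI impI)
      show "psi p \<in> carrier (gr (BRing u mul) (f_u u))" by (rule psi_carrier[OF p(1)])
      fix lam' assume l: "lam' \<noteq> lam"
      have "Pl p lam' i = 0" for i
      proof -
        have "lam' - real i / 2 \<noteq> lam - real i / 2" using l by simp
        then have "p i (lam' - real i / 2) = Fil_plus RR u (lam' - real i / 2)"
          using p(2) unfolding gr_hom_def by blast
        then show ?thesis unfolding Pl_def by simp
      qed
      then have "Pl p lam' = (\<lambda>n. 0)" by auto
      then show "psi p lam' = Fil_plus (BRing u mul) (f_u u) lam'" unfolding psi_def by (simp add: clsB_zero)
    qed
    then show "p \<in> phi ` gr_hom (BRing u mul) (f_u u) lam" using phi_psi[OF p(1)] by force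
  qed
qed

lemma phi_incl: assumes g: "g \<in> carrier (gr RR u)"
  shows "phi (gr_incl u mul g) = monom (UP (gr RR u)) g 0"
proof (rule ext, rule ext)
  fix i mu
  define lam where "lam = mu + real i / 2"
  have ml: "lam - real i / 2 = mu" unfolding lam_def by simp
  have "eqm mu (gr_rep (gr_incl u mul g lam) i) (const_s (gr_rep (g lam)) i)"
    unfolding gr_incl_def using repB(2)[OF ok bser_const[of "gr_rep (g lam)"], where lam=lam and i=i] ml by simp
  then have e: "phi (gr_incl u mul g) i mu = gr_cls RR u mu (const_s (gr_rep (g lam)) i)"
    unfolding phi_def lam_def[symmetric] clsR_eq .
  show "phi (gr_incl u mul g) i mu = monom (UP (gr RR u)) g 0 i mu"
  proof (cases "i = 0")
    case True
    then have "lam = mu" unfolding lam_def by simp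
    then show ?thesis unfolding e UP_monom_eq[OF g] using True grR_rep(2)[OF g] by (simp add: const_s_def)
  next
    case False
    then show ?thesis unfolding e UP_monom_eq[OF g]
      by (simp add: const_s_def gr_zero[OF ring_RR filt_RR] clsR_zero)
  qed
qed

lemma phi_sym: "phi (gr_sym (BRing u mul) (f_u u) (1/2) (xpow 1)) = monom (UP (gr RR u)) \<one>\<^bsub>gr RR u\<^esub> 1"
proof (rule ext, rule ext)
  fix i mu
  define lam where "lam = mu + real i / 2"
  have ml: "lam - real i / 2 = mu" unfolding lam_def by simp
  have rhs: "monom (UP (gr RR u)) \<one>\<^bsub>gr RR u\<^esub> 1 i mu =
      (if i = 1 then (if mu = 0 then gr_cls RR u 0 1 else Fil_plus RR u mu) else Fil_plus RR u mu)"
    unfolding UP_monom_eq[OF grR_one_closed] by (simp add: gr_one[OF ring_RR filt_RR] gr_zero[OF ring_RR filt_RR])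
  show "phi (gr_sym (BRing u mul) (f_u u) (1/2) (xpow 1)) i mu = monom (UP (gr RR u)) \<one>\<^bsub>gr RR u\<^esub> 1 i mu"
  proof (cases "lam = 1/2")
    case True
    have "eqm mu (gr_rep (gr_cls (BRing u mul) (f_u u) (1/2) (xpow 1)) i) (xpow 1 i)"
      using repB(2)[OF ok bser_xpow[of 1], where lam="1/2" and i=i] ml True by simp
    then have e: "phi (gr_sym (BRing u mul) (f_u u) (1/2) (xpow 1)) i mu = gr_cls RR u mu (xpow 1 i)"
      unfolding phi_def lam_def[symmetric] gr_sym_def using True clsR_eq by simp
    show ?thesis
    proof (cases "i = 1")
      case True
      then have "mu = 0" using \<open>lam = 1/2\<close> lam_def by simp
      then show ?thesis unfolding e rhs using True by (simp add: xpow_def)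
    next
      case False
      then show ?thesis unfolding e rhs using clsR_zero by (simp add: xpow_def)
    qed
  next
    case False
    have "eqm mu (gr_rep (Fil_plus (BRing u mul) (f_u u) lam) i) 0"
      using rep_FpB[OF ok, of lam i] ml by simp
    then have e: "phi (gr_sym (BRing u mul) (f_u u) (1/2) (xpow 1)) i mu = Fil_plus RR u mu"
      unfolding phi_def lam_def[symmetric] gr_sym_def using False clsR_zero_iff eqm_0_iff by simp
    have "i = 1 \<Longrightarrow> mu \<noteq> 0" using False lam_def by auto
    then show ?thesis unfolding e rhs by auto
  qed
qed

end
end

lemma compat_step:
  fixes u :: "'a::ring_1 \<Rightarrow> ereal" and d :: "'a \<Rightarrow> 'a"
  assumes dpos: "0 < deg_u u d" and d0: "d 0 = 0" and u0: "u 0 = \<infinity>"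
    and uint: "\<forall>x. u x = \<infinity> \<or> (\<exists>k::int. u x = ereal (of_int k))"
    and usep: "\<And>x. u x = \<infinity> \<Longrightarrow> x = 0"
    and r: "ereal r \<le> u x"
  shows "ereal (r + 1) \<le> u (d x)"
proof (cases "x = 0")
  case True then show ?thesis using d0 u0 by simp
next
  case False
  then obtain k :: int where k: "u x = ereal (of_int k)" using uint usep by blast
  have "deg_u u d \<le> u (d x) - u x" unfolding deg_u_def by (rule INF_lower) (simp add: False)
  then have gt: "0 < u (d x) - ereal (of_int k)" using dpos k by simp
  show ?thesis
  proof (cases "u (d x) = \<infinity>")
    case True then show ?thesis by simp
  next
    case False
    then obtain m :: int where m: "u (d x) = ereal (of_int m)" using uint by blast
    have "k < m" using gt m by simp
    then have "real_of_int k + 1 \<le> real_of_int m" by linarith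
    moreover have "r \<le> real_of_int k" using r k by simp
    ultimately show ?thesis using m by simp
  qed
qed

theorem proposition1p4p1:
  fixes u :: "'a::ring_1 \<Rightarrow> ereal" and \<sigma> \<delta> :: "'a \<Rightarrow> 'a"
  assumes filt: "is_filtration RR u"
    and int_valued: "\<forall>x. u x = \<infinity> \<or> (\<exists>k::int. u x = ereal (of_int k))"
    and unit: "u 1 = 0"
    and sep: "separated RR u"
    and compl: "filt_complete RR u"
    and skew: "skew_derivation \<sigma> \<delta>"
    and compat: "compatible u \<sigma> \<delta>"
  shows
    \<comment> \<open>(i) existence and uniqueness of the multiplication\<close>
    "(\<exists>mul. skew_mult_ok u \<sigma> \<delta> mul) \<and>
     (\<forall>mul1 mul2. skew_mult_ok u \<sigma> \<delta> mul1 \<longrightarrow> skew_mult_ok u \<sigma> \<delta> mul2 \<longrightarrow>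
        (\<forall>F\<in>bseries u. \<forall>G\<in>bseries u. mul1 F G = mul2 F G)) \<and>
     \<comment> \<open>(ii)\<close>
     (\<forall>mul. skew_mult_ok u \<sigma> \<delta> mul \<longrightarrow>
        (\<forall>F\<in>bseries u. f_u u F = \<infinity> \<or> (\<exists>k::int. f_u u F = ereal (of_int k / 2))) \<and>
        is_filtration (BRing u mul) (f_u u) \<and>
        (\<forall>a. f_u u (const_s a) = u a) \<and>
        filt_complete (BRing u mul) (f_u u) \<and>
        (\<exists>\<phi>. \<phi> \<in> ring_iso (gr (BRing u mul) (f_u u)) (UP (gr RR u)) \<and>
             (\<forall>lam. \<phi> ` gr_hom (BRing u mul) (f_u u) lam = grpoly_hom RR u lam) \<and>
             (\<forall>g\<in>carrier (gr RR u). \<phi> (gr_incl u mul g) = monom (UP (gr RR u)) g 0) \<and>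
             \<phi> (gr_sym (BRing u mul) (f_u u) (1/2) (xpow 1)) = monom (UP (gr RR u)) \<one>\<^bsub>gr RR u\<^esub> 1))"
proof -
  have u0: "u 0 = \<infinity>" using filt unfolding is_filtration_def by simp
  have uadd: "\<And>x y. min (u x) (u y) \<le> u (x + y)" using filt unfolding is_filtration_def by simp
  have umul: "\<And>x y. u x + u y \<le> u (x * y)" using filt unfolding is_filtration_def by simp
  have uneg: "\<And>x. u (- x) = u x" using filt unfolding is_filtration_def by simp
  have usep: "\<And>x. u x = \<infinity> \<Longrightarrow> x = 0" using sep unfolding separated_def by simp
  have sk: "bij \<sigma>" "\<And>a b. \<sigma> (a + b) = \<sigma> a + \<sigma> b" "\<And>a b. \<sigma> (a * b) = \<sigma> a * \<sigma> b" "\<sigma> 1 = 1"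
    "\<And>a b. \<delta> (a + b) = \<delta> a + \<delta> b" "\<And>a b. \<delta> (a * b) = \<delta> a * b + \<sigma> a * \<delta> b"
    using skew unfolding skew_derivation_def by auto
  have s0: "\<sigma> 0 = 0" using sk(2)[of 0 0] by simp
  have d0: "\<delta> 0 = 0" using sk(5)[of 0 0] by simp
  have ucompl: "\<exists>l. \<forall>r::real. \<exists>N. \<forall>n\<ge>N. ereal r \<le> u (s n - l)"
    if c: "\<forall>r::real. \<exists>N. \<forall>m\<ge>N. \<forall>n\<ge>N. ereal r \<le> u (s m - s n)" for s :: "nat \<Rightarrow> 'a"
  proof -
    have "filt_cauchy RR u s" unfolding filt_cauchy_def using c by simp
    then obtain l where "filt_converges RR u s l" using compl unfolding filt_complete_def by auto
    then have l: "\<forall>r. \<exists>N. \<forall>n\<ge>N. ereal r < u (s n - l)"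
      unfolding filt_converges_def tendsto_PInfty eventually_sequentially by simp
    have "\<forall>r::real. \<exists>N. \<forall>n\<ge>N. ereal r \<le> u (s n - l)"
    proof
      fix r obtain N where "\<forall>n\<ge>N. ereal r < u (s n - l)" using l by blast
      then have "\<forall>n\<ge>N. ereal r \<le> u (s n - l)" by (simp add: less_imp_le)
      then show "\<exists>N. \<forall>n\<ge>N. ereal r \<le> u (s n - l)" by blast
    qed
    then show ?thesis by blast
  qed
  have dp1: "0 < deg_u u (\<lambda>x. \<sigma> x - x)" and dp2: "0 < deg_u u \<delta>"
    using compat unfolding compatible_def by auto
  have sc: "\<And>r x. ereal r \<le> u x \<Longrightarrow> ereal (r + 1) \<le> u (\<sigma> x - x)"
    by (rule compat_step[OF dp1 _ u0 int_valued usep]) (simp_all add: s0)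
  have dc: "\<And>r x. ereal r \<le> u x \<Longrightarrow> ereal (r + 1) \<le> u (\<delta> x)"
    by (rule compat_step[OF dp2 d0 u0 int_valued usep])
  have iv: "\<And>x. u x = \<infinity> \<or> (\<exists>k::int. u x = ereal (of_int k))" using int_valued by blast
  have S: "skctx u \<sigma> \<delta>"
    by (rule skctx.intro[OF u0 uadd umul uneg iv unit usep ucompl sk(2) sk(3) sk(4) sk(5) sk(6) sc dc])
  interpret S: skctx u \<sigma> \<delta> by (rule S)
  show ?thesis
  proof (intro conjI allI impI ballI)
    show "\<exists>mul. skew_mult_ok u \<sigma> \<delta> mul" using S.Lop_ok by blast
  next
    fix mul1 mul2 F G assume ok1: "skew_mult_ok u \<sigma> \<delta> mul1" and ok2: "skew_mult_ok u \<sigma> \<delta> mul2"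
      and F: "F \<in> bseries u" and G: "G \<in> bseries u"
    have b: "S.bser F" "S.bser G" using F G S.bseries_iff by auto
    show "mul1 F G = mul2 F G" using S.ok_eq_Lop[OF ok1 b] S.ok_eq_Lop[OF ok2 b] by simp
  next
    fix mul F assume ok: "skew_mult_ok u \<sigma> \<delta> mul" and F: "F \<in> bseries u"
    show "f_u u F = \<infinity> \<or> (\<exists>k::int. f_u u F = ereal (of_int k / 2))"
      using S.f_u_values F S.bseries_iff by blast
  next
    fix mul assume ok: "skew_mult_ok u \<sigma> \<delta> mul"
    show "is_filtration (BRing u mul) (f_u u)" by (rule S.filtB[OF ok])
  next
    fix mul a assume ok: "skew_mult_ok u \<sigma> \<delta> mul"
    show "f_u u (const_s a) = u a" by (rule S.f_u_const)
  next
    fix mul assume ok: "skew_mult_ok u \<sigma> \<delta> mul"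
    show "filt_complete (BRing u mul) (f_u u)" by (rule S.compl_B[OF S.ringB[OF ok]])
  next
    fix mul assume ok: "skew_mult_ok u \<sigma> \<delta> mul"
    show "\<exists>\<phi>. \<phi> \<in> ring_iso (gr (BRing u mul) (f_u u)) (UP (gr RR u)) \<and>
             (\<forall>lam. \<phi> ` gr_hom (BRing u mul) (f_u u) lam = grpoly_hom RR u lam) \<and>
             (\<forall>g\<in>carrier (gr RR u). \<phi> (gr_incl u mul g) = monom (UP (gr RR u)) g 0) \<and>
             \<phi> (gr_sym (BRing u mul) (f_u u) (1/2) (xpow 1)) = monom (UP (gr RR u)) \<one>\<^bsub>gr RR u\<^esub> 1"
      using S.phi_iso[OF ok] S.phi_hom[OF ok] S.phi_incl[OF ok] S.phi_sym[OF ok] by blast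
  qed
qed

end
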